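(* In the setting of the FedSLoP algorithm (see context), under Assumptions A1 and A2, suppose the stepsize satisfies $$\eta\le\min\Big\{\sqrt{\tfrac{1-\mu^2}{6L^2\tau^3}},\ \tfrac{1}{LS_\tau},\ \sqrt{\tfrac{\underline{\delta}(1-\mu)(1-\mu^2)S_\tau}{48L^2\tau^4}}\Big\}.$$ Then for every integer $T\ge1$, $$\frac1T\sum_{t=0}^{T-1}\mathbb{E}\big[\|\nabla f(\theta^t)\|^2\big]\le\frac{4\,(f(\theta^0)-f_* )}{\underline{\delta}\,\eta S_\tau T}+\frac{4\eta S_\tau L\sigma_L^2}{\underline{\delta}N}+\frac{48\eta^2\tau^4L^2}{\underline{\delta}^2(1-\mu)(1-\mu^2)S_\tau}(\sigma_L^2+\sigma_G^2).$$
   Context: Setting. Let $d,N,\tau$ be positive integers, $r$ an integer with $1\le r\le d$, $\underline{\delta}:=r/d\in(0,1]$, $\mu\in[0,1)$, $\eta>0$, $L>0$. Let $F_1,\dots,F_N:\mathbb{R}^d\to\mathbb{R}$ be differentiable and $f(\theta):=\frac1N\sum_{i=1}^N F_i(\theta)$. Assumption A1: $f$ is bounded below by $f_*>-\infty$, and $f$ and every $F_i$ are $L$-smooth (gradients $L$-Lipschitz). Assumption A2: each stochastic gradient $g_{i,s}=\nabla F_i(\theta_{i,s};\xi_{i,s})$ computed by the algorithm satisfies, conditionally on all randomness generated before it (including $\Pi_t$ and $\theta_{i,s}$), $\mathbb{E}[g_{i,s}]=\nabla F_i(\theta_{i,s})$ and $\mathbb{E}\|g_{i,s}-\nabla F_i(\theta_{i,s})\|^2\le\sigma_L^2$,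 the minibatch samples of different clients are conditionally independent; and $\|\nabla F_i(\theta)-\nabla f(\theta)\|^2\le\sigma_G^2$ for all $i$ and all $\theta\in\mathbb{R}^d$. Algorithm (FedSLoP, full participation). Start from a deterministic $\theta^0\in\mathbb{R}^d$. In each round $t=0,1,\dots$: sample $P_t$ from the Haar (uniform, $O(d)$-invariant) distribution on $\mathrm{St}(d,r)=\{P\in\mathbb{R}^{d\times r}:P^\top P=I_r\}$, independently of all past randomness and of data sampling, and set $\Pi_t=P_tP_t^\top$. Each client $i=1,\dots,N$ sets $\theta_{i,0}=\theta^t$, $v_{i,0}=0$, and for $s=0,\dots,\tau-1$: $v_{i,s+1}=\mu v_{i,s}+\Pi_t g_{i,s}$, $\theta_{i,s+1}=\theta_{i,s}-\eta v_{i,s+1}$. The server sets $\theta^{t+1}=\theta^t+\frac1N\sum_{i=1}^N(\theta_{i,\tau}-\theta^t)$. Notation. The momentum weights are $\alpha_{\tau,q}:=(1-\mu^{\tau-q})/(1-\mu)$ for $q=0,\dots,\tau-1$, and $S_\tau:=\sum_{q=0}^{\tau-1}\alpha_{\tau,q}$. $\mathbb{E}$ denotes full expectation over all randomness of the algorithm. *)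

theory Defs
  imports "HOL-Analysis.Analysis" "HOL-Probability.Probability"
begin

definition stiefel :: "(real^'r^'d) set" where
  "stiefel = {P. transpose P ** P = mat 1}"

definition haar_stiefel :: "(real^'r^'d) measure \<Rightarrow> bool" where
  "haar_stiefel \<mu> \<longleftrightarrow> prob_space \<mu> \<and> sets \<mu> = sets borel \<and> emeasure \<mu> stiefel = 1 \<and>
     (\<forall>Q::real^'d^'d. orthogonal_matrix Q \<longrightarrow> distr \<mu> borel (\<lambda>P. Q ** P) = \<mu>)"

fun local_iter :: "real \<Rightarrow> real \<Rightarrow> real^'d^'d \<Rightarrow> (nat \<Rightarrow> real^'d) \<Rightarrow> real^'d \<Rightarrow> nat
                   \<Rightarrow> (real^'d) \<times> (real^'d)" where
  "local_iter \<mu> \<eta> Proj gs th0 0 = (th0, 0)"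
| "local_iter \<mu> \<eta> Proj gs th0 (Suc s) =
     (let (th, v) = local_iter \<mu> \<eta> Proj gs th0 s;
          v' = \<mu> *\<^sub>R v + Proj *v gs s
      in (th - \<eta> *\<^sub>R v', v'))"

definition proj_of :: "real^'r^'d \<Rightarrow> real^'d^'d" where
  "proj_of P = P ** transpose P"

text \<open>Server iterate theta^t of FedSLoP (clients indexed 0..N-1), given the sampled
  matrices P t and the stochastic gradients g t i s (round t, client i, local step s).\<close>
fun server_iter :: "real \<Rightarrow> real \<Rightarrow> nat \<Rightarrow> nat \<Rightarrow> real^'d \<Rightarrow> (nat \<Rightarrow> real^'r^'d)
                    \<Rightarrow> (nat \<Rightarrow> nat \<Rightarrow> nat \<Rightarrow> real^'d) \<Rightarrow> nat \<Rightarrow> real^'d" where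
  "server_iter \<mu> \<eta> N \<tau> th0 P g 0 = th0"
| "server_iter \<mu> \<eta> N \<tau> th0 P g (Suc t) =
     (let th = server_iter \<mu> \<eta> N \<tau> th0 P g t
      in th + (1 / real N) *\<^sub>R
           (\<Sum>i<N. fst (local_iter \<mu> \<eta> (proj_of (P t)) (g t i) th \<tau>) - th))"

definition client_iter :: "real \<Rightarrow> real \<Rightarrow> nat \<Rightarrow> nat \<Rightarrow> real^'d \<Rightarrow> (nat \<Rightarrow> real^'r^'d)
                    \<Rightarrow> (nat \<Rightarrow> nat \<Rightarrow> nat \<Rightarrow> real^'d) \<Rightarrow> nat \<Rightarrow> nat \<Rightarrow> nat \<Rightarrow> real^'d" where
  "client_iter \<mu> \<eta> N \<tau> th0 P g t i s =
     fst (local_iter \<mu> \<eta> (proj_of (P t)) (g t i) (server_iter \<mu> \<eta> N \<tau> th0 P g t) s)"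

text \<open>sigma-algebra of all randomness generated before the stochastic gradients of local
  step s of round t: P_0..P_t, all stochastic gradients of earlier rounds, and the stochastic
  gradients of all clients at local steps < s of round t.\<close>
definition past_alg :: "'w measure \<Rightarrow> nat \<Rightarrow> nat
   \<Rightarrow> (nat \<Rightarrow> 'w \<Rightarrow> 'p::topological_space) \<Rightarrow> (nat \<Rightarrow> nat \<Rightarrow> nat \<Rightarrow> 'w \<Rightarrow> 'q::topological_space) \<Rightarrow> nat \<Rightarrow> nat
   \<Rightarrow> 'w measure" where
  "past_alg M N \<tau> P g t s = sigma (space M)
     ({P t' -` A \<inter> space M | t' A. t' \<le> t \<and> A \<in> sets borel} \<union>
      {g t' i s' -` A \<inter> space M | t' i s' A. i < N \<and> A \<in> sets borel \<and>
          ((t' < t \<and> s' < \<tau>) \<or> (t' = t \<and> s' < s))})"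

text \<open>sigma-algebra of all randomness generated before round t (before sampling P_t).\<close>
definition pre_round_alg :: "'w measure \<Rightarrow> nat \<Rightarrow> nat
   \<Rightarrow> (nat \<Rightarrow> 'w \<Rightarrow> 'p::topological_space) \<Rightarrow> (nat \<Rightarrow> nat \<Rightarrow> nat \<Rightarrow> 'w \<Rightarrow> 'q::topological_space) \<Rightarrow> nat
   \<Rightarrow> 'w measure" where
  "pre_round_alg M N \<tau> P g t = sigma (space M)
     ({P t' -` A \<inter> space M | t' A. t' < t \<and> A \<in> sets borel} \<union>
      {g t' i s' -` A \<inter> space M | t' i s' A. i < N \<and> A \<in> sets borel \<and> t' < t \<and> s' < \<tau>})"

text \<open>Conditional independence of the random variables X i (i in I) given the sigma-algebra F:
  P(X_i in B_i for all i | F) = prod_i P(X_i in B_i | F) a.s., expressed by integrating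
  against indicators of F-events.\<close>
definition cond_indep_vars :: "'w measure \<Rightarrow> 'w measure \<Rightarrow> ('i \<Rightarrow> 'w \<Rightarrow> 'b::topological_space)
   \<Rightarrow> 'i set \<Rightarrow> bool" where
  "cond_indep_vars M F X I \<longleftrightarrow>
     (\<forall>A \<in> sets F. \<forall>B. (\<forall>i\<in>I. B i \<in> sets borel) \<longrightarrow>
        (\<integral>\<omega>. indicator A \<omega> * (\<Prod>i\<in>I. indicator (B i) (X i \<omega>)) \<partial>M) =
        (\<integral>\<omega>. indicator A \<omega> * (\<Prod>i\<in>I. real_cond_exp M F (\<lambda>\<omega>'. indicator (B i) (X i \<omega>')) \<omega>) \<partial>M))"

definition S_tau :: "real \<Rightarrow> nat \<Rightarrow> real" where
  "S_tau \<mu> \<tau> = (\<Sum>q<\<tau>. (1 - \<mu> ^ (\<tau> - q)) / (1 - \<mu>))"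

end

theory Submission
  imports Defs
begin

definition acoef :: "real \<Rightarrow> nat \<Rightarrow> nat \<Rightarrow> real" where
  "acoef m s k = (\<Sum>j<s-k. m ^ j)"

lemma acoef_Suc: "k \<le> s \<Longrightarrow> acoef m (Suc s) k = acoef m s k + m ^ (s - k)"
  unfolding acoef_def by (simp add: Suc_diff_le)

lemma acoef_self[simp]: "acoef m s s = 0"
  unfolding acoef_def by simp

lemma local_iter_closed:
  "local_iter m e Pr gs th0 s =
     (th0 - e *\<^sub>R (\<Sum>k<s. acoef m s k *\<^sub>R (Pr *v gs k)),
      (\<Sum>k<s. m ^ (s - 1 - k) *\<^sub>R (Pr *v gs k)))"
proof (induction s)
  case 0
  then show ?case by simp
next
  case (Suc s)
  have v: "m *\<^sub>R (\<Sum>k<s. m ^ (s - 1 - k) *\<^sub>R (Pr *v gs k)) + Pr *v gs s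
        = (\<Sum>k<Suc s. m ^ (s - k) *\<^sub>R (Pr *v gs k))"
  proof -
    have "m *\<^sub>R (\<Sum>k<s. m ^ (s - 1 - k) *\<^sub>R (Pr *v gs k)) = (\<Sum>k<s. m ^ (s - k) *\<^sub>R (Pr *v gs k))"
      unfolding scaleR_sum_right
    proof (rule sum.cong)
      fix k assume "k \<in> {..<s}"
      then have "s - k = Suc (s - 1 - k)" by auto
      then show "m *\<^sub>R m ^ (s - 1 - k) *\<^sub>R (Pr *v gs k) = m ^ (s - k) *\<^sub>R (Pr *v gs k)"
        by simp
    qed simp
    then show ?thesis by simp
  qed
  have a: "(\<Sum>k<s. acoef m s k *\<^sub>R (Pr *v gs k)) + (\<Sum>k<Suc s. m ^ (s - k) *\<^sub>R (Pr *v gs k))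
        = (\<Sum>k<Suc s. acoef m (Suc s) k *\<^sub>R (Pr *v gs k))"
    by (simp add: acoef_Suc scaleR_add_left sum.distrib)
  define A where "A = (\<Sum>k<s. acoef m s k *\<^sub>R (Pr *v gs k))"
  define V where "V = (\<Sum>k<Suc s. m ^ (s - k) *\<^sub>R (Pr *v gs k))"
  have "local_iter m e Pr gs th0 (Suc s) = (th0 - e *\<^sub>R A - e *\<^sub>R V, V)"
    using Suc.IH v by (simp add: A_def V_def Let_def)
  also have "th0 - e *\<^sub>R A - e *\<^sub>R V = th0 - e *\<^sub>R (A + V)"
    by (simp add: algebra_simps)
  finally show ?case
    using a by (simp add: A_def V_def)
qed

lemma local_iter_fst:
  "fst (local_iter m e Pr gs th0 s) = th0 - e *\<^sub>R (\<Sum>k<s. acoef m s k *\<^sub>R (Pr *v gs k))"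
  by (simp add: local_iter_closed)

lemma acoef_nonneg: "0 \<le> m \<Longrightarrow> 0 \<le> acoef m s k"
  unfolding acoef_def by (simp add: sum_nonneg)

lemma acoef_ge1: "0 \<le> m \<Longrightarrow> k < s \<Longrightarrow> 1 \<le> acoef m s k"
proof -
  assume m: "0 \<le> m" and k: "k < s"
  have "(\<Sum>j\<in>{0}. m ^ j) \<le> (\<Sum>j<s-k. m ^ j)"
    by (rule sum_mono2) (use k m in auto)
  then show ?thesis unfolding acoef_def by simp
qed

lemma acoef_eq: "m \<noteq> 1 \<Longrightarrow> acoef m s k = (1 - m ^ (s - k)) / (1 - m)"
  unfolding acoef_def by (simp add: sum_gp_strict)

lemma acoef_le: "0 \<le> m \<Longrightarrow> m < 1 \<Longrightarrow> acoef m s k \<le> 1 / (1 - m)"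
  using acoef_eq[of m s k] by (simp add: divide_right_mono)

lemma acoef_sq_le: "0 \<le> m \<Longrightarrow> m < 1 \<Longrightarrow> (acoef m s k)\<^sup>2 \<le> real (s - k) / (1 - m\<^sup>2)"
proof -
  assume m: "0 \<le> m" "m < 1"
  have "m * m \<le> m" using m by (simp add: mult_left_le_one_le)
  then have mm: "m\<^sup>2 < 1" using m by (simp add: power2_eq_square)
  have "(acoef m s k)\<^sup>2 = (\<Sum>j<s-k. 1 * m ^ j)\<^sup>2" unfolding acoef_def by simp
  also have "\<dots> \<le> (\<Sum>j<s-k. 1\<^sup>2) * (\<Sum>j<s-k. (m ^ j)\<^sup>2)"
    by (rule Cauchy_Schwarz_ineq_sum)
  finally have 1: "(acoef m s k)\<^sup>2 \<le> real (s - k) * (\<Sum>j<s-k. (m ^ j)\<^sup>2)" by simp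
  have "(\<Sum>j<s-k. (m ^ j)\<^sup>2) = (\<Sum>j<s-k. (m\<^sup>2) ^ j)"
    by (simp add: power_mult[symmetric] mult.commute)
  also have "\<dots> = (1 - (m\<^sup>2) ^ (s - k)) / (1 - m\<^sup>2)"
    using mm by (simp add: sum_gp_strict)
  also have "\<dots> \<le> 1 / (1 - m\<^sup>2)"
    using m mm by (intro divide_right_mono) auto
  finally have 2: "(\<Sum>j<s-k. (m ^ j)\<^sup>2) \<le> 1 / (1 - m\<^sup>2)" .
  have "(acoef m s k)\<^sup>2 \<le> real (s - k) * (1 / (1 - m\<^sup>2))"
    using 1 mult_left_mono[OF 2, of "real (s - k)"] by linarith
  then show ?thesis by simp
qed

lemma S_tau_acoef: "m \<noteq> 1 \<Longrightarrow> S_tau m n = (\<Sum>q<n. acoef m n q)"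
  unfolding S_tau_def by (simp add: acoef_eq)

lemma norm_sum_sq_card:
  fixes v :: "'i \<Rightarrow> 'a::real_normed_vector"
  shows "(norm (\<Sum>j\<in>J. v j))\<^sup>2 \<le> real (card J) * (\<Sum>j\<in>J. (norm (v j))\<^sup>2)"
proof -
  have "(norm (\<Sum>j\<in>J. v j))\<^sup>2 \<le> (\<Sum>j\<in>J. norm (v j))\<^sup>2"
    by (intro power_mono norm_sum) auto
  also have "\<dots> \<le> (\<Sum>j\<in>J. (norm (v j))\<^sup>2) * real (card J)"
    by (rule sum_squared_le_sum_of_squares)
  finally show ?thesis by (simp add: mult.commute)
qed

lemma norm_sum_sq_weighted:
  fixes v :: "'i \<Rightarrow> 'a::real_normed_vector"
  assumes "\<And>j. j \<in> J \<Longrightarrow> 0 \<le> a j"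
  shows "(norm (\<Sum>j\<in>J. a j *\<^sub>R v j))\<^sup>2 \<le> (\<Sum>j\<in>J. a j) * (\<Sum>j\<in>J. a j * (norm (v j))\<^sup>2)"
proof -
  have "(norm (\<Sum>j\<in>J. a j *\<^sub>R v j))\<^sup>2 \<le> (\<Sum>j\<in>J. a j * norm (v j))\<^sup>2"
    using assms by (intro power_mono order.trans[OF norm_sum] sum_mono) auto
  also have "(\<Sum>j\<in>J. a j * norm (v j)) = (\<Sum>j\<in>J. sqrt (a j) * (sqrt (a j) * norm (v j)))"
    using assms by (intro sum.cong) (auto simp: mult.assoc[symmetric])
  also have "(\<dots>)\<^sup>2 \<le> (\<Sum>j\<in>J. (sqrt (a j))\<^sup>2) * (\<Sum>j\<in>J. (sqrt (a j) * norm (v j))\<^sup>2)"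
    by (rule Cauchy_Schwarz_ineq_sum)
  also have "\<dots> = (\<Sum>j\<in>J. a j) * (\<Sum>j\<in>J. a j * (norm (v j))\<^sup>2)"
    using assms by (intro arg_cong2[where f="(*)"] sum.cong) (auto simp: power_mult_distrib)
  finally show ?thesis .
qed

lemma avg_sq_decomp:
  fixes a :: "nat \<Rightarrow> 'a::real_inner"
  assumes N: "N \<ge> 1"
  defines "ab \<equiv> (1 / real N) *\<^sub>R (\<Sum>i<N. a i)"
  shows "(1 / real N) * (\<Sum>i<N. (norm (a i))\<^sup>2)
       = (norm ab)\<^sup>2 + (1 / real N) * (\<Sum>i<N. (norm (a i - ab))\<^sup>2)"
proof -
  have sa: "(\<Sum>i<N. a i) = real N *\<^sub>R ab" using N by (simp add: ab_def)
  have "(\<Sum>i<N. (norm (a i - ab))\<^sup>2) = (\<Sum>i<N. (norm (a i))\<^sup>2 - 2 * (a i \<bullet> ab) + (norm ab)\<^sup>2)"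
    by (intro sum.cong refl) (simp add: power2_norm_eq_inner inner_diff_left inner_diff_right inner_commute)
  also have "\<dots> = (\<Sum>i<N. (norm (a i))\<^sup>2) - 2 * ((\<Sum>i<N. a i) \<bullet> ab) + real N * (norm ab)\<^sup>2"
    by (simp add: sum.distrib sum_subtractf sum_distrib_left inner_sum_left)
  also have "\<dots> = (\<Sum>i<N. (norm (a i))\<^sup>2) - real N * (norm ab)\<^sup>2"
    by (simp add: sa power2_norm_eq_inner)
  finally show ?thesis using N by (simp add: field_simps)
qed

lemma proj_transpose:
  fixes P :: "real^'r^'d"
  shows "transpose (proj_of P) = proj_of P"
  unfolding proj_of_def by (simp add: matrix_transpose_mul)

lemma proj_idem:
  fixes P :: "real^'r^'d"
  assumes "P \<in> stiefel"
  shows "proj_of P ** proj_of P = proj_of P"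
proof -
  have "proj_of P ** proj_of P = P ** (transpose P ** P) ** transpose P"
    unfolding proj_of_def by (simp add: matrix_mul_assoc)
  also have "\<dots> = proj_of P" using assms unfolding stiefel_def proj_of_def by simp
  finally show ?thesis .
qed

lemma sym_inner:
  fixes A :: "real^'d^'d"
  assumes "transpose A = A"
  shows "(A *v x) \<bullet> y = x \<bullet> (A *v y)"
proof -
  have "(A *v x) \<bullet> y = (x v* transpose A) \<bullet> y" by simp
  also have "\<dots> = x \<bullet> (transpose A *v y)" by (rule dot_lmul_matrix)
  finally show ?thesis using assms by simp
qed

lemma proj_inner:
  fixes P :: "real^'r^'d"
  assumes "P \<in> stiefel"
  shows "(proj_of P *v x) \<bullet> (proj_of P *v y) = x \<bullet> (proj_of P *v y)"
proof -
  have "(proj_of P *v x) \<bullet> (proj_of P *v y) = x \<bullet> (proj_of P *v (proj_of P *v y))"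
    by (rule sym_inner[OF proj_transpose])
  also have "\<dots> = x \<bullet> (proj_of P *v y)"
    by (simp add: matrix_vector_mul_assoc proj_idem[OF assms])
  finally show ?thesis .
qed

lemma proj_inner':
  fixes P :: "real^'r^'d"
  assumes "P \<in> stiefel"
  shows "(proj_of P *v x) \<bullet> (proj_of P *v y) = (proj_of P *v x) \<bullet> y"
  using proj_inner[OF assms, of y x] by (simp add: inner_commute)

lemma proj_norm_sq:
  fixes P :: "real^'r^'d"
  assumes "P \<in> stiefel"
  shows "(norm (proj_of P *v x))\<^sup>2 = x \<bullet> (proj_of P *v x)"
  using proj_inner[OF assms, of x x] by (simp add: power2_norm_eq_inner)

lemma proj_norm_le:
  fixes P :: "real^'r^'d"
  assumes "P \<in> stiefel"
  shows "norm (proj_of P *v x) \<le> norm x"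
proof -
  have "(norm (proj_of P *v x))\<^sup>2 \<le> norm x * norm (proj_of P *v x)"
    unfolding proj_norm_sq[OF assms] by (rule norm_cauchy_schwarz)
  then show ?thesis
    by (cases "norm (proj_of P *v x) = 0") (auto simp: power2_eq_square)
qed

lemma descent_lemma:
  fixes f :: "'a::real_inner \<Rightarrow> real"
  assumes der: "\<And>x. (f has_derivative (\<lambda>h. gf x \<bullet> h)) (at x)"
    and lip: "\<And>x y. norm (gf x - gf y) \<le> L * norm (x - y)"
  shows "f y \<le> f x + gf x \<bullet> (y - x) + L / 2 * (norm (y - x))\<^sup>2"
proof -
  define h where "h = y - x"
  define K where "K = L / 2 * (norm h)\<^sup>2"
  define \<psi> where "\<psi> t = f (x + t *\<^sub>R h) - t * (gf x \<bullet> h) - K * t\<^sup>2" for t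
  have D: "DERIV \<psi> t :> gf (x + t *\<^sub>R h) \<bullet> h - gf x \<bullet> h - L * t * (norm h)\<^sup>2" for t
  proof -
    have d1: "((\<lambda>t. x + t *\<^sub>R h) has_derivative (\<lambda>s. s *\<^sub>R h)) (at t)"
      by (auto intro!: derivative_eq_intros)
    have d2: "((\<lambda>t. f (x + t *\<^sub>R h)) has_derivative (\<lambda>s. gf (x + t *\<^sub>R h) \<bullet> (s *\<^sub>R h))) (at t)"
      using has_derivative_compose[OF d1 der] by simp
    have d3: "((\<lambda>t. f (x + t *\<^sub>R h)) has_real_derivative (gf (x + t *\<^sub>R h) \<bullet> h)) (at t)"
    proof -
      have "(\<lambda>s. gf (x + t *\<^sub>R h) \<bullet> (s *\<^sub>R h)) = (*) (gf (x + t *\<^sub>R h) \<bullet> h)"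
        by (rule ext) simp
      then show ?thesis using d2 by (simp add: has_field_derivative_def)
    qed
    have d4: "DERIV (\<lambda>t. t * (gf x \<bullet> h)) t :> gf x \<bullet> h"
      by (auto intro!: derivative_eq_intros)
    have d5: "DERIV (\<lambda>t. K * t\<^sup>2) t :> K * (2 * t)"
      using DERIV_cmult[OF DERIV_pow[of 2 t], of K] by simp
    have "DERIV \<psi> t :> gf (x + t *\<^sub>R h) \<bullet> h - gf x \<bullet> h - K * (2 * t)"
      unfolding \<psi>_def by (intro DERIV_diff d3 d4 d5)
    moreover have "K * (2 * t) = L * t * (norm h)\<^sup>2" by (simp add: K_def)
    ultimately show ?thesis by simp
  qed
  have "\<psi> 1 \<le> \<psi> 0"
  proof (rule DERIV_nonpos_imp_nonincreasing[of 0 1 \<psi>])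
    fix t :: real assume t: "0 \<le> t" "t \<le> 1"
    have "gf (x + t *\<^sub>R h) \<bullet> h - gf x \<bullet> h = (gf (x + t *\<^sub>R h) - gf x) \<bullet> h"
      by (simp add: inner_diff_left)
    also have "\<dots> \<le> norm (gf (x + t *\<^sub>R h) - gf x) * norm h"
      by (rule norm_cauchy_schwarz)
    also have "\<dots> \<le> (L * norm (t *\<^sub>R h)) * norm h"
      using lip[of "x + t *\<^sub>R h" x] by (intro mult_right_mono) auto
    also have "\<dots> = L * t * (norm h)\<^sup>2" using t by (simp add: power2_eq_square)
    finally show "\<exists>y. DERIV \<psi> t :> y \<and> y \<le> 0" using D[of t] by (intro exI[of _ "gf (x + t *\<^sub>R h) \<bullet> h - gf x \<bullet> h - L * t * (norm h)\<^sup>2"]) auto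
  qed simp
  then show ?thesis unfolding \<psi>_def h_def K_def by simp
qed


lemma vec_meas_iff:
  fixes X :: "'w \<Rightarrow> 'a::euclidean_space ^'n"
  shows "X \<in> borel_measurable M \<longleftrightarrow> (\<forall>i. (\<lambda>\<omega>. X \<omega> $ i) \<in> borel_measurable M)"
proof
  assume X: "X \<in> borel_measurable M"
  show "\<forall>i. (\<lambda>\<omega>. X \<omega> $ i) \<in> borel_measurable M"
  proof
    fix i
    have "(\<lambda>x::'a^'n. x $ i) \<in> borel_measurable borel"
      by (intro borel_measurable_continuous_onI linear_continuous_on bounded_linear_vec_nth)
    then show "(\<lambda>\<omega>. X \<omega> $ i) \<in> borel_measurable M"
      using measurable_compose[OF X] by blast
  qed
next
  assume c: "\<forall>i. (\<lambda>\<omega>. X \<omega> $ i) \<in> borel_measurable M"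
  show "X \<in> borel_measurable M"
    unfolding borel_measurable_euclidean_space[where f=X]
  proof
    fix b :: "'a^'n" assume "b \<in> Basis"
    then obtain i u where b: "b = axis i u" "u \<in> Basis" unfolding Basis_vec_def by auto
    have "(\<lambda>\<omega>. X \<omega> $ i \<bullet> u) \<in> borel_measurable M"
      using c by (intro borel_measurable_inner) auto
    then show "(\<lambda>x. X x \<bullet> b) \<in> borel_measurable M"
      by (simp add: b inner_axis)
  qed
qed

lemma vec_measI:
  fixes X :: "'w \<Rightarrow> 'a::euclidean_space ^'n"
  shows "(\<And>i. (\<lambda>\<omega>. X \<omega> $ i) \<in> borel_measurable M) \<Longrightarrow> X \<in> borel_measurable M"
  using vec_meas_iff by blast

lemma vec_measD:
  fixes X :: "'w \<Rightarrow> 'a::euclidean_space ^'n"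
  shows "X \<in> borel_measurable M \<Longrightarrow> (\<lambda>\<omega>. X \<omega> $ i) \<in> borel_measurable M"
  using vec_meas_iff by blast

lemma mat_measD:
  fixes X :: "'w \<Rightarrow> real ^'m^'n"
  shows "X \<in> borel_measurable M \<Longrightarrow> (\<lambda>\<omega>. X \<omega> $ i $ j) \<in> borel_measurable M"
  using vec_measD[OF vec_measD[of X]] by blast

lemma mv_meas [measurable (raw)]:
  fixes A :: "'w \<Rightarrow> real^'n^'m" and X :: "'w \<Rightarrow> real^'n"
  assumes "A \<in> borel_measurable M" "X \<in> borel_measurable M"
  shows "(\<lambda>\<omega>. A \<omega> *v X \<omega>) \<in> borel_measurable M"
proof (rule vec_measI)
  fix i
  have [measurable]: "\<And>j. (\<lambda>\<omega>. A \<omega> $ i $ j) \<in> borel_measurable M" "\<And>j. (\<lambda>\<omega>. X \<omega> $ j) \<in> borel_measurable M"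
    using mat_measD[OF assms(1)] vec_measD[OF assms(2)] by auto
  show "(\<lambda>\<omega>. (A \<omega> *v X \<omega>) $ i) \<in> borel_measurable M"
    unfolding matrix_vector_mult_def by simp
qed

lemma mm_meas [measurable (raw)]:
  fixes A :: "'w \<Rightarrow> real^'n^'m" and B :: "'w \<Rightarrow> real^'k^'n"
  assumes "A \<in> borel_measurable M" "B \<in> borel_measurable M"
  shows "(\<lambda>\<omega>. A \<omega> ** B \<omega>) \<in> borel_measurable M"
proof (rule vec_measI, rule vec_measI)
  fix i j
  have [measurable]: "\<And>k. (\<lambda>\<omega>. A \<omega> $ i $ k) \<in> borel_measurable M" "\<And>k. (\<lambda>\<omega>. B \<omega> $ k $ j) \<in> borel_measurable M"
    using mat_measD[OF assms(1)] mat_measD[OF assms(2)] by auto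
  show "(\<lambda>\<omega>. (A \<omega> ** B \<omega>) $ i $ j) \<in> borel_measurable M"
    unfolding matrix_matrix_mult_def by simp
qed

lemma transpose_meas [measurable (raw)]:
  fixes A :: "'w \<Rightarrow> real^'n^'m"
  assumes "A \<in> borel_measurable M"
  shows "(\<lambda>\<omega>. transpose (A \<omega>)) \<in> borel_measurable M"
proof (rule vec_measI, rule vec_measI)
  fix i j
  show "(\<lambda>\<omega>. transpose (A \<omega>) $ i $ j) \<in> borel_measurable M"
    unfolding transpose_def using mat_measD[OF assms] by simp
qed

lemma proj_meas [measurable (raw)]:
  fixes A :: "'w \<Rightarrow> real^'r^'d"
  assumes "A \<in> borel_measurable M"
  shows "(\<lambda>\<omega>. proj_of (A \<omega>)) \<in> borel_measurable M"
  unfolding proj_of_def using assms by measurable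

lemma local_iter_meas:
  fixes Pr :: "'w \<Rightarrow> real^'d^'d"
  assumes "Pr \<in> borel_measurable M" "th \<in> borel_measurable M"
    "\<And>k. k < s \<Longrightarrow> gs k \<in> borel_measurable M"
  shows "(\<lambda>\<omega>. fst (local_iter m e (Pr \<omega>) (\<lambda>k. gs k \<omega>) (th \<omega>) s)) \<in> borel_measurable M"
proof -
  have "(\<lambda>\<omega>. \<Sum>k<s. acoef m s k *\<^sub>R (Pr \<omega> *v gs k \<omega>)) \<in> borel_measurable M"
  proof (rule borel_measurable_sum)
    fix k assume "k \<in> {..<s}"
    then have [measurable]: "gs k \<in> borel_measurable M" using assms by auto
    show "(\<lambda>\<omega>. acoef m s k *\<^sub>R (Pr \<omega> *v gs k \<omega>)) \<in> borel_measurable M"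
      using assms by measurable
  qed
  then show ?thesis unfolding local_iter_fst using assms by measurable
qed


lemma sigma_gen_meas:
  assumes "G \<subseteq> Pow \<Omega>" "\<And>A. A \<in> sets borel \<Longrightarrow> X -` A \<inter> \<Omega> \<in> G"
  shows "X \<in> borel_measurable (sigma \<Omega> G)"
proof (rule measurableI)
  fix x assume "x \<in> space (sigma \<Omega> G)"
  show "X x \<in> space borel" by simp
next
  fix A :: "'b set" assume "A \<in> sets borel"
  then have "X -` A \<inter> \<Omega> \<in> G" using assms by auto
  then show "X -` A \<inter> space (sigma \<Omega> G) \<in> sets (sigma \<Omega> G)"
    using assms(1) by (simp add: space_measure_of_conv sets_measure_of_conv sigma_sets.Basic)
qed

lemma meas_mono_sets:
  assumes "space F1 = space F2" "sets F1 \<subseteq> sets F2" "X \<in> measurable F1 N"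
  shows "X \<in> measurable F2 N"
  using assms unfolding measurable_def by auto

lemma coll2_mono: "(\<And>x y. Q x y \<Longrightarrow> R x y) \<Longrightarrow> {f x y | x y. Q x y} \<subseteq> {f x y | x y. R x y}"
  by blast

lemma coll4_mono: "(\<And>x y z w. Q x y z w \<Longrightarrow> R x y z w) \<Longrightarrow>
    {f x y z w | x y z w. Q x y z w} \<subseteq> {f x y z w | x y z w. R x y z w}"
  by blast

locale fed =
  fixes M :: "'w measure"
    and P :: "nat \<Rightarrow> 'w \<Rightarrow> real^'r^'d"
    and g :: "nat \<Rightarrow> nat \<Rightarrow> nat \<Rightarrow> 'w \<Rightarrow> real^'d"
    and F :: "nat \<Rightarrow> real^'d \<Rightarrow> real"
    and gradF :: "nat \<Rightarrow> real^'d \<Rightarrow> real^'d"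
    and th0 :: "real^'d"
    and \<mu> \<eta> L \<sigma>L \<sigma>G fstar :: real
    and N \<tau> :: nat
    and f :: "real^'d \<Rightarrow> real" and gradf :: "real^'d \<Rightarrow> real^'d"
    and \<delta> S :: real
    and \<theta> :: "nat \<Rightarrow> 'w \<Rightarrow> real^'d"
    and \<theta>loc :: "nat \<Rightarrow> nat \<Rightarrow> nat \<Rightarrow> 'w \<Rightarrow> real^'d"
    and Fpast :: "nat \<Rightarrow> nat \<Rightarrow> 'w measure"
  assumes f_def: "f = (\<lambda>x. (1 / real N) * (\<Sum>i<N. F i x))"
    and gradf_def: "gradf = (\<lambda>x. (1 / real N) *\<^sub>R (\<Sum>i<N. gradF i x))"
    and \<delta>_def: "\<delta> = real CARD('r) / real CARD('d)"
    and S_def: "S = S_tau \<mu> \<tau>"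
    and \<theta>_def: "\<theta> = (\<lambda>t \<omega>. server_iter \<mu> \<eta> N \<tau> th0 (\<lambda>t. P t \<omega>) (\<lambda>t i s. g t i s \<omega>) t)"
    and \<theta>loc_def: "\<theta>loc = (\<lambda>t i s \<omega>. client_iter \<mu> \<eta> N \<tau> th0 (\<lambda>t. P t \<omega>) (\<lambda>t i s. g t i s \<omega>) t i s)"
    and Fpast_def: "Fpast = (\<lambda>t s. past_alg M N \<tau> P g t s)"
    and N_pos: "N \<ge> 1" and tau_pos: "\<tau> \<ge> 1"
    and r_le_d: "CARD('r) \<le> CARD('d)"
    and mu: "0 \<le> \<mu>" "\<mu> < 1" and eta_pos: "\<eta> > 0" and L_pos: "L > 0"
    and F_diff: "\<forall>i<N. \<forall>x. (F i has_derivative (\<lambda>h. gradF i x \<bullet> h)) (at x)"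
    and f_lower: "\<forall>x. fstar \<le> f x"
    and f_smooth: "\<forall>x y. norm (gradf x - gradf y) \<le> L * norm (x - y)"
    and F_smooth: "\<forall>i<N. \<forall>x y. norm (gradF i x - gradF i y) \<le> L * norm (x - y)"
    and hetero: "\<forall>i<N. \<forall>x. (norm (gradF i x - gradf x))\<^sup>2 \<le> \<sigma>G\<^sup>2"
    and prob: "prob_space M"
    and P_meas: "\<forall>t. P t \<in> borel_measurable M"
    and g_meas: "\<forall>t i s. g t i s \<in> borel_measurable M"
    and P_haar: "\<forall>t. haar_stiefel (distr M borel (P t))"
    and P_indep: "\<forall>t. \<forall>A \<in> sets (pre_round_alg M N \<tau> P g t). \<forall>B \<in> sets borel.
         measure M (A \<inter> (P t -` B \<inter> space M)) = measure M A * measure M (P t -` B \<inter> space M)"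
    and g_unbiased: "\<forall>t. \<forall>i<N. \<forall>s<\<tau>. (\<forall>j. integrable M (\<lambda>\<omega>. g t i s \<omega> $ j)) \<and>
         (AE \<omega> in M. \<forall>j. real_cond_exp M (Fpast t s) (\<lambda>\<omega>. g t i s \<omega> $ j) \<omega> = gradF i (\<theta>loc t i s \<omega>) $ j)"
    and g_var: "\<forall>t. \<forall>i<N. \<forall>s<\<tau>. AE \<omega> in M.
         nn_cond_exp M (Fpast t s) (\<lambda>\<omega>. ennreal ((norm (g t i s \<omega> - gradF i (\<theta>loc t i s \<omega>)))\<^sup>2)) \<omega>
           \<le> ennreal (\<sigma>L\<^sup>2)"
    and g_cindep: "\<forall>t. \<forall>s<\<tau>. cond_indep_vars M (Fpast t s) (\<lambda>i. g t i s) {..<N}"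
    and eta_le: "\<eta> \<le> min (sqrt ((1 - \<mu>\<^sup>2) / (6 * L\<^sup>2 * real \<tau> ^ 3)))
                   (min (1 / (L * S))
                        (sqrt (\<delta> * (1 - \<mu>) * (1 - \<mu>\<^sup>2) * S / (48 * L\<^sup>2 * real \<tau> ^ 4))))"
begin

sublocale prob_space M by (rule prob)

abbreviation "Pre t \<equiv> pre_round_alg M N \<tau> P g t"

definition "Gpast t s = ({P t' -` A \<inter> space M | t' A. t' \<le> t \<and> A \<in> sets borel} \<union>
      {g t' i s' -` A \<inter> space M | t' i s' A. i < N \<and> A \<in> sets borel \<and>
          ((t' < t \<and> s' < \<tau>) \<or> (t' = t \<and> s' < s))})"

definition "Gpre t = ({P t' -` A \<inter> space M | t' A. t' < t \<and> A \<in> sets borel} \<union>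
      {g t' i s' -` A \<inter> space M | t' i s' A. i < N \<and> A \<in> sets borel \<and> t' < t \<and> s' < \<tau>})"

lemma Fpast_eq: "Fpast t s = sigma (space M) (Gpast t s)"
  by (simp add: Fpast_def past_alg_def Gpast_def)

lemma Pre_eq: "Pre t = sigma (space M) (Gpre t)"
  by (simp add: pre_round_alg_def Gpre_def)

lemma Gpast_Pow: "Gpast t s \<subseteq> Pow (space M)"
  unfolding Gpast_def by auto

lemma Gpre_Pow: "Gpre t \<subseteq> Pow (space M)"
  unfolding Gpre_def by auto

lemma Gpast_sets: "Gpast t s \<subseteq> sets M"
  unfolding Gpast_def
  by (intro Un_least subsetI; elim CollectE exE conjE; simp only:;
      rule measurable_sets[OF P_meas[rule_format]] measurable_sets[OF g_meas[rule_format]]; simp)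

lemma Gpre_sets: "Gpre t \<subseteq> sets M"
  unfolding Gpre_def
  by (intro Un_least subsetI; elim CollectE exE conjE; simp only:;
      rule measurable_sets[OF P_meas[rule_format]] measurable_sets[OF g_meas[rule_format]]; simp)

lemma space_Fpast [simp]: "space (Fpast t s) = space M"
  unfolding Fpast_eq using Gpast_Pow by (simp add: space_measure_of_conv)

lemma space_Pre [simp]: "space (Pre t) = space M"
  unfolding Pre_eq using Gpre_Pow by (simp add: space_measure_of_conv)

lemma sets_Fpast: "sets (Fpast t s) = sigma_sets (space M) (Gpast t s)"
  unfolding Fpast_eq using Gpast_Pow by (simp add: sets_measure_of_conv)

lemma sets_Pre: "sets (Pre t) = sigma_sets (space M) (Gpre t)"
  unfolding Pre_eq using Gpre_Pow by (simp add: sets_measure_of_conv)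

lemma subalg_Fpast: "subalgebra M (Fpast t s)"
  unfolding subalgebra_def sets_Fpast
  using Gpast_sets by (simp add: sets.sigma_sets_subset)

lemma subalg_Pre: "subalgebra M (Pre t)"
  unfolding subalgebra_def sets_Pre
  using Gpre_sets by (simp add: sets.sigma_sets_subset)

lemma sfs_Fpast: "sigma_finite_subalgebra M (Fpast t s)"
proof -
  have "finite_measure_subalgebra M (Fpast t s)"
    unfolding finite_measure_subalgebra_def finite_measure_subalgebra_axioms_def
    using finite_measure_axioms subalg_Fpast by blast
  then show ?thesis by (rule finite_measure_subalgebra_is_sigma_finite)
qed

lemma Pre_sub_Fpast: "sets (Pre t) \<subseteq> sets (Fpast t s)"
  unfolding sets_Pre sets_Fpast
proof (rule sigma_sets_mono')
  show "Gpre t \<subseteq> Gpast t s"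
    unfolding Gpre_def Gpast_def
    by (intro Un_mono coll2_mono coll4_mono) auto
qed

lemma Fpast_mono: "s \<le> s' \<Longrightarrow> sets (Fpast t s) \<subseteq> sets (Fpast t s')"
  unfolding sets_Fpast
proof (rule sigma_sets_mono')
  assume "s \<le> s'"
  then show "Gpast t s \<subseteq> Gpast t s'"
    unfolding Gpast_def
    by (intro Un_mono coll2_mono coll4_mono) auto
qed

lemma Fpast_sub_Pre: "s \<le> \<tau> \<Longrightarrow> sets (Fpast t s) \<subseteq> sets (Pre (Suc t))"
  unfolding sets_Pre sets_Fpast
proof (rule sigma_sets_mono')
  assume "s \<le> \<tau>"
  then show "Gpast t s \<subseteq> Gpre (Suc t)"
    unfolding Gpast_def Gpre_def
    by (intro Un_mono coll2_mono coll4_mono) auto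
qed

lemma P_meas_Fpast: "t' \<le> t \<Longrightarrow> P t' \<in> borel_measurable (Fpast t s)"
  unfolding Fpast_eq by (rule sigma_gen_meas[OF Gpast_Pow]) (auto simp: Gpast_def)

lemma g_meas_Fpast: "i < N \<Longrightarrow> (t' < t \<and> s' < \<tau>) \<or> (t' = t \<and> s' < s) \<Longrightarrow>
    g t' i s' \<in> borel_measurable (Fpast t s)"
  unfolding Fpast_eq by (rule sigma_gen_meas[OF Gpast_Pow]) (auto simp: Gpast_def)

lemma P_meas_Pre: "t' < t \<Longrightarrow> P t' \<in> borel_measurable (Pre t)"
  unfolding Pre_eq by (rule sigma_gen_meas[OF Gpre_Pow]) (auto simp: Gpre_def)

lemma g_meas_Pre: "i < N \<Longrightarrow> t' < t \<Longrightarrow> s' < \<tau> \<Longrightarrow> g t' i s' \<in> borel_measurable (Pre t)"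
  unfolding Pre_eq by (rule sigma_gen_meas[OF Gpre_Pow]) (auto simp: Gpre_def)

lemma Pre_mono: "sets (Pre t) \<subseteq> sets (Pre (Suc t))"
  unfolding sets_Pre
proof (rule sigma_sets_mono')
  show "Gpre t \<subseteq> Gpre (Suc t)"
    unfolding Gpre_def
    by (intro Un_mono coll2_mono coll4_mono) auto
qed

lemma \<theta>_Suc: "\<theta> (Suc t) \<omega> = \<theta> t \<omega> + (1 / real N) *\<^sub>R
           (\<Sum>i<N. fst (local_iter \<mu> \<eta> (proj_of (P t \<omega>)) (\<lambda>s. g t i s \<omega>) (\<theta> t \<omega>) \<tau>) - \<theta> t \<omega>)"
  unfolding \<theta>_def by (simp add: Let_def)

lemma \<theta>loc_eq: "\<theta>loc t i s \<omega> = fst (local_iter \<mu> \<eta> (proj_of (P t \<omega>)) (\<lambda>s. g t i s \<omega>) (\<theta> t \<omega>) s)"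
  unfolding \<theta>loc_def \<theta>_def client_iter_def by simp

lemma \<theta>_0: "\<theta> 0 \<omega> = th0"
  unfolding \<theta>_def by simp

lemma \<theta>_meas_Pre: "\<theta> t \<in> borel_measurable (Pre t)"
proof (induction t)
  case 0
  then show ?case by (simp add: \<theta>_0)
next
  case (Suc t)
  have th: "\<theta> t \<in> borel_measurable (Pre (Suc t))"
    by (rule meas_mono_sets[OF _ Pre_mono Suc]) simp
  have [measurable]: "P t \<in> borel_measurable (Pre (Suc t))" by (rule P_meas_Pre) simp
  have "(\<lambda>\<omega>. fst (local_iter \<mu> \<eta> (proj_of (P t \<omega>)) (\<lambda>s. g t i s \<omega>) (\<theta> t \<omega>) \<tau>)) \<in> borel_measurable (Pre (Suc t))"
    if "i < N" for i
    by (rule local_iter_meas) (use th g_meas_Pre that in auto)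
  then show ?case
    unfolding \<theta>_Suc[abs_def] using th by (intro borel_measurable_add borel_measurable_scaleR borel_measurable_sum borel_measurable_diff) auto
qed

lemma \<theta>_meas_Fpast: "\<theta> t \<in> borel_measurable (Fpast t s)"
  by (rule meas_mono_sets[OF _ Pre_sub_Fpast \<theta>_meas_Pre]) simp

lemma \<theta>loc_meas_Fpast: "i < N \<Longrightarrow> \<theta>loc t i s \<in> borel_measurable (Fpast t s)"
  unfolding \<theta>loc_eq[abs_def]
  by (rule local_iter_meas) (auto intro!: proj_meas P_meas_Fpast \<theta>_meas_Fpast g_meas_Fpast)

lemma meas_M: "X \<in> borel_measurable (Fpast t s) \<Longrightarrow> X \<in> borel_measurable M"
  by (rule measurable_from_subalg[OF subalg_Fpast])

lemma meas_M_Pre: "X \<in> borel_measurable (Pre t) \<Longrightarrow> X \<in> borel_measurable M"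
  by (rule measurable_from_subalg[OF subalg_Pre])

end


lemma lipschitz_meas:
  fixes G :: "'a::metric_space \<Rightarrow> 'b::euclidean_space"
  assumes "\<And>x y. norm (G x - G y) \<le> L * dist x y"
  shows "G \<in> borel_measurable borel"
proof (rule borel_measurable_continuous_onI)
  show "continuous_on UNIV G"
  proof (rule continuous_on_iff[THEN iffD2], intro ballI allI impI)
    fix x :: 'a and e :: real assume e: "0 < e"
    show "\<exists>d>0. \<forall>x'\<in>UNIV. dist x' x < d \<longrightarrow> dist (G x') (G x) < e"
    proof (cases "L > 0")
      case True
      show ?thesis
      proof (intro exI[of _ "e / L"] conjI ballI impI)
        show "0 < e / L" using e True by simp
        fix x' assume "dist x' x < e / L"
        then have "L * dist x' x < e" using True by (simp add: field_simps)
        moreover have "dist (G x') (G x) \<le> L * dist x' x"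
          using assms[of x' x] by (simp add: dist_norm)
        ultimately show "dist (G x') (G x) < e" by linarith
      qed
    next
      case False
      show ?thesis
      proof (intro exI[of _ 1] conjI ballI impI)
        fix x' assume "dist x' x < 1"
        have "dist (G x') (G x) \<le> L * dist x' x"
          using assms[of x' x] by (simp add: dist_norm)
        also have "\<dots> \<le> 0" using False by (simp add: mult_nonpos_nonneg)
        finally show "dist (G x') (G x) < e" using e by simp
      qed simp
    qed
  qed
qed

lemma sq_sum_le: "(x + y)\<^sup>2 \<le> 2 * x\<^sup>2 + 2 * (y::real)\<^sup>2"
proof -
  have "0 \<le> (x - y)\<^sup>2" by simp
  then show ?thesis by (simp add: power2_eq_square algebra_simps)
qed

lemma prod_le_sq: "\<bar>x * y\<bar> \<le> x\<^sup>2 + (y::real)\<^sup>2"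
proof -
  have "0 \<le> (\<bar>x\<bar> - \<bar>y\<bar>)\<^sup>2" by simp
  then have "2 * (\<bar>x\<bar> * \<bar>y\<bar>) \<le> x\<^sup>2 + y\<^sup>2" by (simp add: power2_eq_square algebra_simps)
  moreover have "0 \<le> \<bar>x\<bar> * \<bar>y\<bar>" by simp
  ultimately have "\<bar>x\<bar> * \<bar>y\<bar> \<le> x\<^sup>2 + y\<^sup>2" by linarith
  then show ?thesis by (simp add: abs_mult)
qed

context fed
begin

definition "sqi X \<longleftrightarrow> X \<in> borel_measurable M \<and> integrable M (\<lambda>\<omega>. (norm (X \<omega>))\<^sup>2)"

definition "sqr (h :: 'w \<Rightarrow> real) \<longleftrightarrow> h \<in> borel_measurable M \<and> integrable M (\<lambda>\<omega>. (h \<omega>)\<^sup>2)"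

lemma sqiD: "sqi X \<Longrightarrow> X \<in> borel_measurable M" "sqi X \<Longrightarrow> integrable M (\<lambda>\<omega>. (norm (X \<omega>))\<^sup>2)"
  unfolding sqi_def by auto

lemma sqi_bound:
  fixes X :: "'w \<Rightarrow> 'a::euclidean_space" and Y :: "'w \<Rightarrow> 'b::euclidean_space"
  assumes "sqi X" "Y \<in> borel_measurable M" "AE \<omega> in M. norm (Y \<omega>) \<le> a * norm (X \<omega>) + b" "0 \<le> a" "0 \<le> b"
  shows "sqi Y"
  unfolding sqi_def
proof
  show "Y \<in> borel_measurable M" by fact
  have i: "integrable M (\<lambda>\<omega>. 2 * a\<^sup>2 * (norm (X \<omega>))\<^sup>2 + 2 * b\<^sup>2)"
    using assms(1) unfolding sqi_def by auto
  show "integrable M (\<lambda>\<omega>. (norm (Y \<omega>))\<^sup>2)"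
  proof (rule Bochner_Integration.integrable_bound[OF i])
    show "(\<lambda>\<omega>. (norm (Y \<omega>))\<^sup>2) \<in> borel_measurable M" using assms(2) by measurable
    show "AE \<omega> in M. norm ((norm (Y \<omega>))\<^sup>2) \<le> norm (2 * a\<^sup>2 * (norm (X \<omega>))\<^sup>2 + 2 * b\<^sup>2)"
      using assms(3)
    proof eventually_elim
      case (elim \<omega>)
      have "(norm (Y \<omega>))\<^sup>2 \<le> (a * norm (X \<omega>) + b)\<^sup>2"
        using elim by (intro power_mono) auto
      also have "\<dots> \<le> 2 * (a * norm (X \<omega>))\<^sup>2 + 2 * b\<^sup>2"
        by (rule sq_sum_le)
      also have "\<dots> = 2 * a\<^sup>2 * (norm (X \<omega>))\<^sup>2 + 2 * b\<^sup>2"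
        by (simp add: power_mult_distrib)
      finally show ?case by simp
    qed
  qed
qed

lemma sqi_add:
  fixes X Y :: "'w \<Rightarrow> 'a::euclidean_space"
  assumes "sqi X" "sqi Y"
  shows "sqi (\<lambda>\<omega>. X \<omega> + Y \<omega>)"
  unfolding sqi_def
proof
  show "(\<lambda>\<omega>. X \<omega> + Y \<omega>) \<in> borel_measurable M"
    using sqiD(1)[OF assms(1)] sqiD(1)[OF assms(2)] by (rule borel_measurable_add)
  have i: "integrable M (\<lambda>\<omega>. 2 * (norm (X \<omega>))\<^sup>2 + 2 * (norm (Y \<omega>))\<^sup>2)"
    using assms unfolding sqi_def by auto
  show "integrable M (\<lambda>\<omega>. (norm (X \<omega> + Y \<omega>))\<^sup>2)"
  proof (rule Bochner_Integration.integrable_bound[OF i])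
    have [measurable]: "X \<in> borel_measurable M" "Y \<in> borel_measurable M"
      using sqiD(1)[OF assms(1)] sqiD(1)[OF assms(2)] by auto
    show "(\<lambda>\<omega>. (norm (X \<omega> + Y \<omega>))\<^sup>2) \<in> borel_measurable M"
      by measurable
    show "AE \<omega> in M. norm ((norm (X \<omega> + Y \<omega>))\<^sup>2) \<le> norm (2 * (norm (X \<omega>))\<^sup>2 + 2 * (norm (Y \<omega>))\<^sup>2)"
    proof (intro AE_I2)
      fix \<omega>
      have "(norm (X \<omega> + Y \<omega>))\<^sup>2 \<le> (norm (X \<omega>) + norm (Y \<omega>))\<^sup>2"
        by (intro power_mono norm_triangle_ineq) auto
      also have "\<dots> \<le> 2 * (norm (X \<omega>))\<^sup>2 + 2 * (norm (Y \<omega>))\<^sup>2"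
        by (rule sq_sum_le)
      finally show "norm ((norm (X \<omega> + Y \<omega>))\<^sup>2) \<le> norm (2 * (norm (X \<omega>))\<^sup>2 + 2 * (norm (Y \<omega>))\<^sup>2)" by simp
    qed
  qed
qed

lemma sqi_scaleR:
  fixes X :: "'w \<Rightarrow> 'a::euclidean_space"
  assumes "sqi X"
  shows "sqi (\<lambda>\<omega>. c *\<^sub>R X \<omega>)"
  by (rule sqi_bound[OF assms, of _ "\<bar>c\<bar>" 0]) (use assms in \<open>auto simp: sqi_def\<close>)

lemma sqi_uminus:
  fixes X :: "'w \<Rightarrow> 'a::euclidean_space"
  assumes "sqi X"
  shows "sqi (\<lambda>\<omega>. - X \<omega>)"
  by (rule sqi_bound[OF assms, of _ 1 0]) (use assms in \<open>auto simp: sqi_def intro: borel_measurable_uminus\<close>)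

lemma sqi_diff:
  fixes X Y :: "'w \<Rightarrow> 'a::euclidean_space"
  assumes "sqi X" "sqi Y"
  shows "sqi (\<lambda>\<omega>. X \<omega> - Y \<omega>)"
  using sqi_add[OF assms(1) sqi_uminus[OF assms(2)]] by simp

lemma sqi_const: "sqi (\<lambda>\<omega>. c)"
  unfolding sqi_def by auto

lemma sqi_sum:
  fixes X :: "'i \<Rightarrow> 'w \<Rightarrow> 'a::euclidean_space"
  assumes "\<And>k. k \<in> K \<Longrightarrow> sqi (X k)"
  shows "sqi (\<lambda>\<omega>. \<Sum>k\<in>K. X k \<omega>)"
  using assms
proof (induction K rule: infinite_finite_induct)
  case (infinite A)
  then show ?case by (simp add: sqi_const)
next
  case empty
  then show ?case by (simp add: sqi_const)
next
  case (insert x F)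
  then show ?case by (simp add: sqi_add)
qed

lemma sqi_inner:
  fixes X Y :: "'w \<Rightarrow> 'a::euclidean_space"
  assumes "sqi X" "sqi Y"
  shows "integrable M (\<lambda>\<omega>. X \<omega> \<bullet> Y \<omega>)"
proof -
  have i: "integrable M (\<lambda>\<omega>. (norm (X \<omega>))\<^sup>2 + (norm (Y \<omega>))\<^sup>2)"
    using assms unfolding sqi_def by auto
  show ?thesis
  proof (rule Bochner_Integration.integrable_bound[OF i])
    show "(\<lambda>\<omega>. X \<omega> \<bullet> Y \<omega>) \<in> borel_measurable M" using assms unfolding sqi_def by (intro borel_measurable_inner) auto
    show "AE \<omega> in M. norm (X \<omega> \<bullet> Y \<omega>) \<le> norm ((norm (X \<omega>))\<^sup>2 + (norm (Y \<omega>))\<^sup>2)"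
    proof (intro AE_I2)
      fix \<omega>
      have "norm (X \<omega> \<bullet> Y \<omega>) \<le> norm (X \<omega>) * norm (Y \<omega>)"
        using Cauchy_Schwarz_ineq2 by simp
      also have "\<dots> \<le> (norm (X \<omega>))\<^sup>2 + (norm (Y \<omega>))\<^sup>2"
        using prod_le_sq[of "norm (X \<omega>)" "norm (Y \<omega>)"] by simp
      finally show "norm (X \<omega> \<bullet> Y \<omega>) \<le> norm ((norm (X \<omega>))\<^sup>2 + (norm (Y \<omega>))\<^sup>2)" by simp
    qed
  qed
qed

lemma sqi_norm_sq: "sqi X \<Longrightarrow> integrable M (\<lambda>\<omega>. (norm (X \<omega>))\<^sup>2)"
  unfolding sqi_def by auto

lemma sqi_comp: "sqi X \<Longrightarrow> sqr (\<lambda>\<omega>. X \<omega> $ j)"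
  unfolding sqr_def
proof
  assume X: "sqi X"
  show "(\<lambda>\<omega>. X \<omega> $ j) \<in> borel_measurable M" using X unfolding sqi_def by (intro vec_measD) auto
  show "integrable M (\<lambda>\<omega>. (X \<omega> $ j)\<^sup>2)"
  proof (rule Bochner_Integration.integrable_bound[OF sqi_norm_sq[OF X]])
    show "(\<lambda>\<omega>. (X \<omega> $ j)\<^sup>2) \<in> borel_measurable M" using X unfolding sqi_def by (intro borel_measurable_power vec_measD) auto
    show "AE \<omega> in M. norm ((X \<omega> $ j)\<^sup>2) \<le> norm ((norm (X \<omega>))\<^sup>2)"
      by (intro AE_I2) (simp add: abs_le_square_iff[symmetric] component_le_norm_cart)
  qed
qed

lemma sqr_mult:
  assumes "sqr h" "sqr k"
  shows "integrable M (\<lambda>\<omega>. h \<omega> * k \<omega>)"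
proof -
  have i: "integrable M (\<lambda>\<omega>. (h \<omega>)\<^sup>2 + (k \<omega>)\<^sup>2)"
    using assms unfolding sqr_def by auto
  show ?thesis
  proof (rule Bochner_Integration.integrable_bound[OF i])
    show "(\<lambda>\<omega>. h \<omega> * k \<omega>) \<in> borel_measurable M" using assms unfolding sqr_def by (intro borel_measurable_times) auto
    show "AE \<omega> in M. norm (h \<omega> * k \<omega>) \<le> norm ((h \<omega>)\<^sup>2 + (k \<omega>)\<^sup>2)"
      by (intro AE_I2) (use prod_le_sq in simp)
  qed
qed

lemma sqr_integrable:
  assumes "sqr h"
  shows "integrable M h"
proof -
  have i: "integrable M (\<lambda>\<omega>. (h \<omega>)\<^sup>2 + 1)"
    using assms unfolding sqr_def by auto
  show ?thesis
  proof (rule Bochner_Integration.integrable_bound[OF i])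
    show "h \<in> borel_measurable M" using assms unfolding sqr_def by auto
    show "AE \<omega> in M. norm (h \<omega>) \<le> norm ((h \<omega>)\<^sup>2 + 1)"
    proof (intro AE_I2)
      fix \<omega>
      have "\<bar>h \<omega>\<bar> \<le> (h \<omega>)\<^sup>2 + 1"
      proof (cases "\<bar>h \<omega>\<bar> \<le> 1")
        case True
        moreover have "0 \<le> (h \<omega>)\<^sup>2" by simp
        ultimately show ?thesis by linarith
      next
        case False
        then have "\<bar>h \<omega>\<bar> * 1 \<le> \<bar>h \<omega>\<bar> * \<bar>h \<omega>\<bar>" by (intro mult_left_mono) auto
        also have "\<dots> = (h \<omega>)\<^sup>2" by (simp add: power2_eq_square)
        finally show ?thesis by simp
      qed
      then show "norm (h \<omega>) \<le> norm ((h \<omega>)\<^sup>2 + 1)" by simp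
    qed
  qed
qed

end


lemma stiefel_borel: "(stiefel :: (real^'r^'d) set) \<in> sets borel"
proof -
  have m: "(\<lambda>P::real^'r^'d. transpose P ** P) \<in> borel_measurable borel"
    by (intro mm_meas transpose_meas) auto
  have "(\<lambda>P::real^'r^'d. transpose P ** P) -` {mat 1} \<inter> space borel \<in> sets borel"
    by (rule measurable_sets[OF m]) simp
  moreover have "(\<lambda>P::real^'r^'d. transpose P ** P) -` {mat 1} \<inter> space borel = stiefel"
    unfolding stiefel_def by auto
  ultimately show ?thesis by simp
qed

context fed
begin

abbreviation "Pj t \<omega> \<equiv> proj_of (P t \<omega>)"

definition "xi t i s \<omega> = g t i s \<omega> - gradF i (\<theta>loc t i s \<omega>)"

lemma AE_stiefel: "AE \<omega> in M. P t \<omega> \<in> stiefel"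
proof -
  have h: "emeasure (distr M borel (P t)) stiefel = 1"
    using P_haar unfolding haar_stiefel_def by auto
  have "emeasure M (P t -` stiefel \<inter> space M) = 1"
    using h by (subst (asm) emeasure_distr) (use P_meas stiefel_borel in auto)
  moreover have ev: "P t -` stiefel \<inter> space M \<in> events"
    using P_meas stiefel_borel by (auto intro!: measurable_sets)
  ultimately have "AE \<omega> in M. \<omega> \<in> P t -` stiefel \<inter> space M"
    by (subst AE_in_set_eq_1[OF ev]) (simp add: emeasure_eq_measure)
  then show ?thesis by auto
qed

lemma gradF_meas: "i < N \<Longrightarrow> gradF i \<in> borel_measurable borel"
  by (rule lipschitz_meas[of _ L]) (use F_smooth in \<open>auto simp: dist_norm\<close>)

lemma gradf_meas: "gradf \<in> borel_measurable borel"
  by (rule lipschitz_meas[of _ L]) (use f_smooth in \<open>auto simp: dist_norm\<close>)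

lemma P_measM: "P t \<in> borel_measurable M"
  using P_meas by auto

lemma Pj_measM: "(\<lambda>\<omega>. Pj t \<omega>) \<in> borel_measurable M"
  by (intro proj_meas P_measM)

lemma g_measM: "g t i s \<in> borel_measurable M"
  using g_meas by auto

lemma \<theta>_measM: "\<theta> t \<in> borel_measurable M"
  by (rule meas_M_Pre[OF \<theta>_meas_Pre])

lemma \<theta>loc_measM: "i < N \<Longrightarrow> \<theta>loc t i s \<in> borel_measurable M"
  by (rule meas_M[OF \<theta>loc_meas_Fpast])

lemma xi_meas_Fpast: "i < N \<Longrightarrow> s \<le> s' \<Longrightarrow> (\<lambda>\<omega>. gradF i (\<theta>loc t i s \<omega>)) \<in> borel_measurable (Fpast t s')"
  using measurable_compose[OF meas_mono_sets[OF _ Fpast_mono \<theta>loc_meas_Fpast] gradF_meas] by auto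

lemma xi_meas_Fpast2: "i < N \<Longrightarrow> s < s' \<Longrightarrow> xi t i s \<in> borel_measurable (Fpast t s')"
  unfolding xi_def[abs_def]
  by (intro borel_measurable_diff g_meas_Fpast xi_meas_Fpast) auto

lemma gradF\<theta>loc_measM: "i < N \<Longrightarrow> (\<lambda>\<omega>. gradF i (\<theta>loc t i s \<omega>)) \<in> borel_measurable M"
  using meas_M[OF xi_meas_Fpast[of i s s t]] by auto

lemma xi_measM: "i < N \<Longrightarrow> xi t i s \<in> borel_measurable M"
  unfolding xi_def[abs_def] by (intro borel_measurable_diff g_measM gradF\<theta>loc_measM)

lemma xi_sq:
  assumes i: "i < N" and s: "s < \<tau>"
  shows "integrable M (\<lambda>\<omega>. (norm (xi t i s \<omega>))\<^sup>2)" "(\<integral>\<omega>. (norm (xi t i s \<omega>))\<^sup>2 \<partial>M) \<le> \<sigma>L\<^sup>2"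
proof -
  interpret sigma_finite_subalgebra M "Fpast t s" by (rule sfs_Fpast)
  define h where "h \<omega> = ennreal ((norm (xi t i s \<omega>))\<^sup>2)" for \<omega>
  have hm: "h \<in> borel_measurable M" unfolding h_def using xi_measM[OF i] by measurable
  have AEb: "AE \<omega> in M. nn_cond_exp M (Fpast t s) h \<omega> \<le> ennreal (\<sigma>L\<^sup>2)"
    using g_var i s unfolding h_def xi_def by auto
  have "(\<integral>\<^sup>+ \<omega>. h \<omega> \<partial>M) = (\<integral>\<^sup>+ \<omega>. (\<lambda>_. 1) \<omega> * h \<omega> \<partial>M)" by simp
  also have "\<dots> = (\<integral>\<^sup>+ \<omega>. (\<lambda>_. 1) \<omega> * nn_cond_exp M (Fpast t s) h \<omega> \<partial>M)"
    by (rule nn_cond_exp_intg[symmetric]) (use hm in auto)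
  also have "\<dots> \<le> (\<integral>\<^sup>+ \<omega>. ennreal (\<sigma>L\<^sup>2) \<partial>M)"
    using AEb by (intro nn_integral_mono_AE) auto
  also have "\<dots> = ennreal (\<sigma>L\<^sup>2)" by (simp add: emeasure_space_1)
  finally have le: "(\<integral>\<^sup>+ \<omega>. h \<omega> \<partial>M) \<le> ennreal (\<sigma>L\<^sup>2)" .
  show int: "integrable M (\<lambda>\<omega>. (norm (xi t i s \<omega>))\<^sup>2)"
  proof (rule integrableI_nonneg)
    show "(\<lambda>\<omega>. (norm (xi t i s \<omega>))\<^sup>2) \<in> borel_measurable M" using xi_measM[OF i] by measurable
    show "AE x in M. 0 \<le> (norm (xi t i s x))\<^sup>2" by simp
    show "(\<integral>\<^sup>+ x. ennreal ((norm (xi t i s x))\<^sup>2) \<partial>M) < \<infinity>"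
      using le unfolding h_def by (simp add: le_less_trans)
  qed
  have "ennreal (\<integral>\<omega>. (norm (xi t i s \<omega>))\<^sup>2 \<partial>M) = (\<integral>\<^sup>+ \<omega>. h \<omega> \<partial>M)"
    unfolding h_def by (rule nn_integral_eq_integral[OF int, symmetric]) simp
  with le have "ennreal (\<integral>\<omega>. (norm (xi t i s \<omega>))\<^sup>2 \<partial>M) \<le> ennreal (\<sigma>L\<^sup>2)" by simp
  then show "(\<integral>\<omega>. (norm (xi t i s \<omega>))\<^sup>2 \<partial>M) \<le> \<sigma>L\<^sup>2"
    by (subst (asm) ennreal_le_iff) auto
qed

lemma sqi_xi: "i < N \<Longrightarrow> s < \<tau> \<Longrightarrow> sqi (xi t i s)"
  unfolding sqi_def using xi_measM xi_sq by auto

lemma sqi_proj: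
  assumes "sqi X"
  shows "sqi (\<lambda>\<omega>. Pj t \<omega> *v X \<omega>)"
proof (rule sqi_bound[OF assms, of _ 1 0])
  show "(\<lambda>\<omega>. Pj t \<omega> *v X \<omega>) \<in> borel_measurable M"
    by (intro mv_meas Pj_measM sqiD(1)[OF assms])
  show "AE \<omega> in M. norm (Pj t \<omega> *v X \<omega>) \<le> 1 * norm (X \<omega>) + 0"
    using AE_stiefel[of t] by eventually_elim (simp add: proj_norm_le)
qed auto

lemma sqi_gradF:
  assumes "sqi X" "i < N"
  shows "sqi (\<lambda>\<omega>. gradF i (X \<omega>))"
proof (rule sqi_bound[OF assms(1), of _ L "norm (gradF i 0)"])
  show "(\<lambda>\<omega>. gradF i (X \<omega>)) \<in> borel_measurable M"
    using measurable_compose[OF sqiD(1)[OF assms(1)] gradF_meas[OF assms(2)]] .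
  show "AE \<omega> in M. norm (gradF i (X \<omega>)) \<le> L * norm (X \<omega>) + norm (gradF i 0)"
  proof (intro AE_I2)
    fix \<omega>
    have "norm (gradF i (X \<omega>)) \<le> norm (gradF i (X \<omega>) - gradF i 0) + norm (gradF i 0)"
      using norm_triangle_sub[of "gradF i (X \<omega>)" "gradF i 0"] by linarith
    also have "\<dots> \<le> L * norm (X \<omega>) + norm (gradF i 0)"
      using F_smooth assms(2) by (metis add_right_mono diff_zero)
    finally show "norm (gradF i (X \<omega>)) \<le> L * norm (X \<omega>) + norm (gradF i 0)" .
  qed
qed (use L_pos in auto)

lemma \<theta>loc_closed: "\<theta>loc t i s \<omega> = \<theta> t \<omega> - \<eta> *\<^sub>R (\<Sum>k<s. acoef \<mu> s k *\<^sub>R (Pj t \<omega> *v g t i k \<omega>))"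
  unfolding \<theta>loc_eq local_iter_fst by simp

lemma \<theta>_Suc': "\<theta> (Suc t) \<omega> = \<theta> t \<omega> + (1 / real N) *\<^sub>R (\<Sum>i<N. \<theta>loc t i \<tau> \<omega> - \<theta> t \<omega>)"
  unfolding \<theta>_Suc \<theta>loc_eq by simp

lemma g_split: "g t i s \<omega> = gradF i (\<theta>loc t i s \<omega>) + xi t i s \<omega>"
  unfolding xi_def by simp

lemma sqi_local:
  assumes th: "sqi (\<theta> t)" and i: "i < N"
  shows "s \<le> \<tau> \<Longrightarrow> sqi (\<theta>loc t i s) \<and> (\<forall>k<s. sqi (g t i k))"
proof (induction s)
  case 0
  have "\<theta>loc t i 0 = \<theta> t" by (rule ext) (simp add: \<theta>loc_closed)
  then show ?case using th by simp
next
  case (Suc s)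
  then have IH: "sqi (\<theta>loc t i s)" "\<forall>k<s. sqi (g t i k)" by auto
  have gs: "sqi (g t i s)"
  proof -
    have "sqi (\<lambda>\<omega>. gradF i (\<theta>loc t i s \<omega>) + xi t i s \<omega>)"
      by (intro sqi_add sqi_gradF IH(1) i sqi_xi) (use Suc.prems in auto)
    moreover have "g t i s = (\<lambda>\<omega>. gradF i (\<theta>loc t i s \<omega>) + xi t i s \<omega>)"
      by (rule ext) (rule g_split)
    ultimately show ?thesis by (simp only:)
  qed
  have G: "\<forall>k<Suc s. sqi (g t i k)" using IH(2) gs less_Suc_eq by auto
  have "sqi (\<lambda>\<omega>. \<theta> t \<omega> - \<eta> *\<^sub>R (\<Sum>k<Suc s. acoef \<mu> (Suc s) k *\<^sub>R (Pj t \<omega> *v g t i k \<omega>)))"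
    using G by (intro sqi_diff th sqi_scaleR sqi_sum sqi_proj) auto
  then have "sqi (\<theta>loc t i (Suc s))" by (simp add: \<theta>loc_closed[abs_def])
  with G show ?case by simp
qed

lemma sqi_all: "sqi (\<theta> t) \<and> (\<forall>i<N. \<forall>s\<le>\<tau>. sqi (\<theta>loc t i s)) \<and> (\<forall>i<N. \<forall>s<\<tau>. sqi (g t i s))"
proof (induction t)
  case 0
  have "sqi (\<theta> 0)" by (simp add: \<theta>_0[abs_def] sqi_const)
  then show ?case using sqi_local[of 0] by (meson less_imp_le_nat order_refl)
next
  case (Suc t)
  have "sqi (\<lambda>\<omega>. \<theta> t \<omega> + (1 / real N) *\<^sub>R (\<Sum>i<N. \<theta>loc t i \<tau> \<omega> - \<theta> t \<omega>))"
    using Suc.IH by (intro sqi_add sqi_scaleR sqi_sum sqi_diff) auto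
  then have th: "sqi (\<theta> (Suc t))" by (simp add: \<theta>_Suc'[abs_def])
  then show ?case using sqi_local[of "Suc t"] by (meson less_imp_le_nat order_refl)
qed

lemma sqi_\<theta>: "sqi (\<theta> t)" using sqi_all by auto
lemma sqi_\<theta>loc: "i < N \<Longrightarrow> s \<le> \<tau> \<Longrightarrow> sqi (\<theta>loc t i s)" using sqi_all by auto
lemma sqi_g: "i < N \<Longrightarrow> s < \<tau> \<Longrightarrow> sqi (g t i s)" using sqi_all by auto

end


lemma ext_indicator_zero:
  fixes Y :: "'w \<Rightarrow> 'a::euclidean_space" and W :: "'w \<Rightarrow> real" and \<phi> :: "'a \<Rightarrow> real"
  assumes Ym[measurable]: "Y \<in> borel_measurable M" and Wi: "integrable M W"
    and Z: "\<And>C. C \<in> sets borel \<Longrightarrow> (\<integral>\<omega>. indicator C (Y \<omega>) * W \<omega> \<partial>M) = 0"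
    and \<phi>m[measurable]: "\<phi> \<in> borel_measurable borel"
    and \<phi>i: "integrable M (\<lambda>\<omega>. \<phi> (Y \<omega>) * W \<omega>)"
  shows "(\<integral>\<omega>. \<phi> (Y \<omega>) * W \<omega> \<partial>M) = 0"
proof -
  have Wm[measurable]: "W \<in> borel_measurable M" using Wi by auto
  define Wp where "Wp \<omega> = max (W \<omega>) 0" for \<omega>
  define Wn where "Wn \<omega> = max (- W \<omega>) 0" for \<omega>
  have W_eq: "W \<omega> = Wp \<omega> - Wn \<omega>" for \<omega> unfolding Wp_def Wn_def by auto
  have [measurable]: "Wp \<in> borel_measurable M" "Wn \<in> borel_measurable M"
    unfolding Wp_def[abs_def] Wn_def[abs_def] by measurable
  have Wp0: "0 \<le> Wp \<omega>" "0 \<le> Wn \<omega>" for \<omega> unfolding Wp_def Wn_def by auto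
  have Wpb: "\<bar>Wp \<omega>\<bar> \<le> \<bar>W \<omega>\<bar>" "\<bar>Wn \<omega>\<bar> \<le> \<bar>W \<omega>\<bar>" for \<omega> unfolding Wp_def Wn_def by auto
  have ind_int: "integrable M (\<lambda>\<omega>. indicator C (Y \<omega>) * V \<omega>)"
    if "V \<in> borel_measurable M" "\<And>\<omega>. \<bar>V \<omega>\<bar> \<le> \<bar>W \<omega>\<bar>" "C \<in> sets borel" for V C
  proof (rule Bochner_Integration.integrable_bound[OF Wi])
    show "(\<lambda>\<omega>. indicator C (Y \<omega>) * V \<omega>) \<in> borel_measurable M" using that by measurable
    show "AE \<omega> in M. norm (indicator C (Y \<omega>) * V \<omega>) \<le> norm (W \<omega>)"
      using that by (intro AE_I2) (auto simp: indicator_def)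
  qed
  define Mp where "Mp = distr (density M Wp) borel Y"
  define Mn where "Mn = distr (density M Wn) borel Y"
  have em: "emeasure (distr (density M V) borel Y) C = ennreal (\<integral>\<omega>. indicator C (Y \<omega>) * V \<omega> \<partial>M)"
    if V: "V \<in> borel_measurable M" "\<And>\<omega>. 0 \<le> V \<omega>" "\<And>\<omega>. \<bar>V \<omega>\<bar> \<le> \<bar>W \<omega>\<bar>" and C: "C \<in> sets borel" for V C
  proof -
    have [measurable]: "V \<in> borel_measurable M" "C \<in> sets borel" using V C by auto
    have "emeasure (distr (density M V) borel Y) C = emeasure (density M V) (Y -` C \<inter> space (density M V))"
      by (rule emeasure_distr) auto
    also have "\<dots> = (\<integral>\<^sup>+ \<omega>. ennreal (V \<omega>) * indicator (Y -` C \<inter> space M) \<omega> \<partial>M)"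
      by (simp add: emeasure_density)
    also have "\<dots> = (\<integral>\<^sup>+ \<omega>. ennreal (indicator C (Y \<omega>) * V \<omega>) \<partial>M)"
      by (intro nn_integral_cong) (auto simp: indicator_def)
    also have "\<dots> = ennreal (\<integral>\<omega>. indicator C (Y \<omega>) * V \<omega> \<partial>M)"
      by (rule nn_integral_eq_integral) (use ind_int[OF V(1) V(3) C] V(2) in auto)
    finally show ?thesis .
  qed
  have eqm: "Mp = Mn"
  proof (rule measure_eqI)
    show "sets Mp = sets Mn" unfolding Mp_def Mn_def by simp
    fix C assume "C \<in> sets Mp"
    then have C: "C \<in> sets borel" unfolding Mp_def by simp
    have "(\<integral>\<omega>. indicator C (Y \<omega>) * Wp \<omega> \<partial>M) - (\<integral>\<omega>. indicator C (Y \<omega>) * Wn \<omega> \<partial>M)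
        = (\<integral>\<omega>. indicator C (Y \<omega>) * Wp \<omega> - indicator C (Y \<omega>) * Wn \<omega> \<partial>M)"
    proof -
      have "integrable M (\<lambda>\<omega>. indicator C (Y \<omega>) * Wp \<omega>)" "integrable M (\<lambda>\<omega>. indicator C (Y \<omega>) * Wn \<omega>)"
        using C Wpb by (auto intro!: ind_int)
      then show ?thesis by (simp add: Bochner_Integration.integral_diff)
    qed
    also have "\<dots> = (\<integral>\<omega>. indicator C (Y \<omega>) * W \<omega> \<partial>M)"
      by (simp add: W_eq right_diff_distrib)
    also have "\<dots> = 0" by (rule Z[OF C])
    finally have "(\<integral>\<omega>. indicator C (Y \<omega>) * Wp \<omega> \<partial>M) = (\<integral>\<omega>. indicator C (Y \<omega>) * Wn \<omega> \<partial>M)" by simp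
    then show "emeasure Mp C = emeasure Mn C"
      unfolding Mp_def Mn_def using em[of Wp C] em[of Wn C] Wp0 Wpb C by auto
  qed
  have ie: "(\<integral>\<omega>. \<phi> (Y \<omega>) * V \<omega> \<partial>M) = integral\<^sup>L (distr (density M V) borel Y) \<phi>"
    if V: "V \<in> borel_measurable M" "\<And>\<omega>. 0 \<le> V \<omega>" for V
  proof -
    have [measurable]: "V \<in> borel_measurable M" using V by auto
    have "integral\<^sup>L (distr (density M V) borel Y) \<phi> = integral\<^sup>L (density M V) (\<lambda>\<omega>. \<phi> (Y \<omega>))"
      by (rule integral_distr) auto
    also have "\<dots> = (\<integral>\<omega>. V \<omega> *\<^sub>R \<phi> (Y \<omega>) \<partial>M)"
      by (rule integral_density) (use V in auto)
    finally show ?thesis by (simp add: mult.commute)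
  qed
  have "(\<integral>\<omega>. \<phi> (Y \<omega>) * Wp \<omega> \<partial>M) = (\<integral>\<omega>. \<phi> (Y \<omega>) * Wn \<omega> \<partial>M)"
    using ie[of Wp] ie[of Wn] eqm Wp0 unfolding Mp_def Mn_def by auto
  moreover have ip: "integrable M (\<lambda>\<omega>. \<phi> (Y \<omega>) * V \<omega>)"
    if "V \<in> borel_measurable M" "\<And>\<omega>. \<bar>V \<omega>\<bar> \<le> \<bar>W \<omega>\<bar>" for V
  proof (rule Bochner_Integration.integrable_bound[OF \<phi>i])
    show "(\<lambda>\<omega>. \<phi> (Y \<omega>) * V \<omega>) \<in> borel_measurable M" using that by measurable
    show "AE \<omega> in M. norm (\<phi> (Y \<omega>) * V \<omega>) \<le> norm (\<phi> (Y \<omega>) * W \<omega>)"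
      using that by (intro AE_I2) (simp add: abs_mult mult_left_mono)
  qed
  ultimately have "(\<integral>\<omega>. \<phi> (Y \<omega>) * Wp \<omega> - \<phi> (Y \<omega>) * Wn \<omega> \<partial>M) = 0"
    by (subst Bochner_Integration.integral_diff) (auto intro!: ip Wpb)
  then show ?thesis by (simp add: W_eq right_diff_distrib)
qed


lemma prod_two:
  assumes "finite A" "i \<in> A" "i' \<in> A" "i \<noteq> i'"
  shows "prod f A = f i * f i' * prod f (A - {i, i'})"
proof -
  have "prod f A = f i * prod f (A - {i})" using assms by (simp add: prod.remove)
  also have "prod f (A - {i}) = f i' * prod f (A - {i} - {i'})"
    using assms by (intro prod.remove) auto
  also have "A - {i} - {i'} = A - {i, i'}" by auto
  finally show ?thesis by (simp add: mult.assoc)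
qed

lemma inner_vec_sum: "(x::real^'n) \<bullet> y = (\<Sum>j\<in>UNIV. x $ j * y $ j)"
  by (simp add: inner_vec_def)

context fed
begin

lemma sqi_gradf:
  assumes "sqi X"
  shows "sqi (\<lambda>\<omega>. gradf (X \<omega>))"
proof (rule sqi_bound[OF assms(1), of _ L "norm (gradf 0)"])
  show "(\<lambda>\<omega>. gradf (X \<omega>)) \<in> borel_measurable M"
    using measurable_compose[OF sqiD(1)[OF assms(1)] gradf_meas] .
  show "AE \<omega> in M. norm (gradf (X \<omega>)) \<le> L * norm (X \<omega>) + norm (gradf 0)"
  proof (intro AE_I2)
    fix \<omega>
    have "norm (gradf (X \<omega>)) \<le> norm (gradf (X \<omega>) - gradf 0) + norm (gradf 0)"
      using norm_triangle_sub[of "gradf (X \<omega>)" "gradf 0"] by linarith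
    also have "\<dots> \<le> L * norm (X \<omega>) + norm (gradf 0)"
      using f_smooth by (metis add_right_mono diff_zero)
    finally show "norm (gradf (X \<omega>)) \<le> L * norm (X \<omega>) + norm (gradf 0)" .
  qed
qed (use L_pos in auto)

lemma noise_orth_real:
  assumes i: "i < N" and s: "s < \<tau>" and hF: "h \<in> borel_measurable (Fpast t s)" and hs: "sqr h"
  shows "integrable M (\<lambda>\<omega>. h \<omega> * (xi t i s \<omega> $ j))" "(\<integral>\<omega>. h \<omega> * (xi t i s \<omega> $ j) \<partial>M) = 0"
proof -
  interpret sigma_finite_subalgebra M "Fpast t s" by (rule sfs_Fpast)
  define gj where "gj \<omega> = g t i s \<omega> $ j" for \<omega>
  define mj where "mj \<omega> = gradF i (\<theta>loc t i s \<omega>) $ j" for \<omega>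
  have sg: "sqr gj" unfolding gj_def[abs_def] by (rule sqi_comp[OF sqi_g[OF i s]])
  have sm: "sqr mj" unfolding mj_def[abs_def] using s by (intro sqi_comp sqi_gradF sqi_\<theta>loc i) auto
  have i1: "integrable M (\<lambda>\<omega>. h \<omega> * gj \<omega>)" by (rule sqr_mult[OF hs sg])
  have i2: "integrable M (\<lambda>\<omega>. h \<omega> * mj \<omega>)" by (rule sqr_mult[OF hs sm])
  have gjm: "gj \<in> borel_measurable M" using sg unfolding sqr_def by auto
  have hm: "h \<in> borel_measurable M" using hs unfolding sqr_def by auto
  have mjm: "mj \<in> borel_measurable M" using sm unfolding sqr_def by auto
  have "(\<integral>\<omega>. h \<omega> * gj \<omega> \<partial>M) = (\<integral>\<omega>. h \<omega> * real_cond_exp M (Fpast t s) gj \<omega> \<partial>M)"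
    by (rule real_cond_exp_intg(2)[symmetric, OF i1 hF gjm])
  also have "\<dots> = (\<integral>\<omega>. h \<omega> * mj \<omega> \<partial>M)"
  proof (rule integral_cong_AE)
    show "(\<lambda>\<omega>. h \<omega> * real_cond_exp M (Fpast t s) gj \<omega>) \<in> borel_measurable M"
      using hm by (intro borel_measurable_times borel_measurable_cond_exp2) auto
    show "(\<lambda>\<omega>. h \<omega> * mj \<omega>) \<in> borel_measurable M" using hm mjm by (intro borel_measurable_times)
    have "AE \<omega> in M. \<forall>j. real_cond_exp M (Fpast t s) (\<lambda>\<omega>. g t i s \<omega> $ j) \<omega> = gradF i (\<theta>loc t i s \<omega>) $ j"
      using g_unbiased i s by auto
    then show "AE \<omega> in M. h \<omega> * real_cond_exp M (Fpast t s) gj \<omega> = h \<omega> * mj \<omega>"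
      unfolding gj_def[abs_def] mj_def by eventually_elim auto
  qed
  finally have eq: "(\<integral>\<omega>. h \<omega> * gj \<omega> \<partial>M) = (\<integral>\<omega>. h \<omega> * mj \<omega> \<partial>M)" .
  have xe: "h \<omega> * (xi t i s \<omega> $ j) = h \<omega> * gj \<omega> - h \<omega> * mj \<omega>" for \<omega>
    unfolding xi_def gj_def mj_def by (simp add: right_diff_distrib)
  show "integrable M (\<lambda>\<omega>. h \<omega> * (xi t i s \<omega> $ j))" unfolding xe using i1 i2 by auto
  show "(\<integral>\<omega>. h \<omega> * (xi t i s \<omega> $ j) \<partial>M) = 0"
    unfolding xe using eq i1 i2 by (simp add: Bochner_Integration.integral_diff)
qed

lemma noise_orth_vec:
  assumes i: "i < N" and s: "s < \<tau>" and HF: "H \<in> borel_measurable (Fpast t s)" and Hs: "sqi H"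
  shows "(\<integral>\<omega>. H \<omega> \<bullet> xi t i s \<omega> \<partial>M) = 0"
proof -
  have c: "(\<lambda>\<omega>. H \<omega> $ j) \<in> borel_measurable (Fpast t s)" "sqr (\<lambda>\<omega>. H \<omega> $ j)" for j
    using vec_measD[OF HF] sqi_comp[OF Hs] by auto
  have "(\<integral>\<omega>. H \<omega> \<bullet> xi t i s \<omega> \<partial>M) = (\<integral>\<omega>. (\<Sum>j\<in>UNIV. H \<omega> $ j * xi t i s \<omega> $ j) \<partial>M)"
    by (simp add: inner_vec_sum)
  also have "\<dots> = (\<Sum>j\<in>UNIV. (\<integral>\<omega>. H \<omega> $ j * xi t i s \<omega> $ j \<partial>M))"
    by (rule Bochner_Integration.integral_sum) (rule noise_orth_real(1)[OF i s c])
  also have "\<dots> = 0"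
    by (rule sum.neutral) (use noise_orth_real(2)[OF i s c] in auto)
  finally show ?thesis .
qed

lemma cross_step:
  assumes i: "i < N" and i': "i' < N" and k: "k < k'" and k': "k' < \<tau>"
  shows "(\<integral>\<omega>. xi t i k \<omega> \<bullet> xi t i' k' \<omega> \<partial>M) = 0"
  by (rule noise_orth_vec[OF i' k' xi_meas_Fpast2[OF i k] sqi_xi[OF i]]) (use k k' in auto)

lemma rce_ind_bounds:
  assumes B: "B \<in> sets borel" and X: "X \<in> borel_measurable M"
  shows "AE \<omega> in M. 0 \<le> real_cond_exp M (Fpast t s) (\<lambda>\<omega>. indicator B (X \<omega>)) \<omega> \<and>
                     real_cond_exp M (Fpast t s) (\<lambda>\<omega>. indicator B (X \<omega>)) \<omega> \<le> 1"
proof -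
  interpret sigma_finite_subalgebra M "Fpast t s" by (rule sfs_Fpast)
  have im: "(\<lambda>\<omega>. indicator B (X \<omega>) :: real) \<in> borel_measurable M" using B X by measurable
  have ii: "integrable M (\<lambda>\<omega>. indicator B (X \<omega>) :: real)"
    by (rule integrable_const_bound[of _ 1]) (use im in auto)
  have "AE \<omega> in M. 0 \<le> real_cond_exp M (Fpast t s) (\<lambda>\<omega>. indicator B (X \<omega>)) \<omega>"
    by (rule real_cond_exp_ge_c[OF ii]) auto
  moreover have "AE \<omega> in M. real_cond_exp M (Fpast t s) (\<lambda>\<omega>. indicator B (X \<omega>)) \<omega> \<le> 1"
    by (rule real_cond_exp_le_c[OF ii]) (auto simp: indicator_def)
  ultimately show ?thesis by eventually_elim auto
qed

end


context fed
begin

lemma cross_client: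
  assumes i: "i < N" and i': "i' < N" and ne: "i \<noteq> i'" and s: "s < \<tau>"
  shows "(\<integral>\<omega>. xi t i s \<omega> \<bullet> xi t i' s \<omega> \<partial>M) = 0"
proof -
  interpret sigma_finite_subalgebra M "Fpast t s" by (rule sfs_Fpast)
  define X where "X = g t i s"
  define Y where "Y = g t i' s"
  have Xm[measurable]: "X \<in> borel_measurable M" unfolding X_def by (rule g_measM)
  have Ym[measurable]: "Y \<in> borel_measurable M" unfolding Y_def by (rule g_measM)
  define pB where "pB B = real_cond_exp M (Fpast t s) (\<lambda>\<omega>. indicator B (X \<omega>))" for B
  have pBm: "pB B \<in> borel_measurable (Fpast t s)" "pB B \<in> borel_measurable M" for B
    unfolding pB_def by auto
  have ind_int: "integrable M (\<lambda>\<omega>. indicator B (Z \<omega>) :: real)" if "B \<in> sets borel" "Z \<in> borel_measurable M" for B Z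
    by (rule integrable_const_bound[of _ 1]) (use that in auto)
  have pBi: "integrable M (pB B)" if "B \<in> sets borel" for B
    unfolding pB_def by (rule real_cond_exp_int(1)[OF ind_int[OF that Xm]])
  have pBb: "AE \<omega> in M. 0 \<le> pB B \<omega> \<and> pB B \<omega> \<le> 1" if "B \<in> sets borel" for B
    unfolding pB_def by (rule rce_ind_bounds[OF that Xm])
  have s1: "(\<integral>\<omega>. indicator C (Y \<omega>) * (indicator B (X \<omega>) - pB B \<omega>) \<partial>M) = 0"
    if B: "B \<in> sets borel" and C: "C \<in> sets borel" for B C
  proof -
    define BB where "BB l = (if l = i then B else if l = i' then C else UNIV)" for l
    have BBb: "\<forall>l\<in>{..<N}. BB l \<in> sets borel" using B C unfolding BB_def by auto
    have ci: "cond_indep_vars M (Fpast t s) (\<lambda>l. g t l s) {..<N}" using g_cindep s by auto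
    have sp: "space M \<in> sets (Fpast t s)" by (metis sets.top space_Fpast)
    have E: "(\<integral>\<omega>. (indicator (space M) \<omega> :: real) * (\<Prod>l\<in>{..<N}. indicator (BB l) (g t l s \<omega>)) \<partial>M) =
             (\<integral>\<omega>. indicator (space M) \<omega> * (\<Prod>l\<in>{..<N}. real_cond_exp M (Fpast t s) (\<lambda>\<omega>'. indicator (BB l) (g t l s \<omega>')) \<omega>) \<partial>M)"
      using ci sp BBb unfolding cond_indep_vars_def by blast
    have L: "(\<integral>\<omega>. (indicator (space M) \<omega> :: real) * (\<Prod>l\<in>{..<N}. indicator (BB l) (g t l s \<omega>)) \<partial>M) =
             (\<integral>\<omega>. (indicator B (X \<omega>) :: real) * indicator C (Y \<omega>) \<partial>M)"
    proof (rule Bochner_Integration.integral_cong[OF refl])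
      fix \<omega> assume "\<omega> \<in> space M"
      have "(\<Prod>l\<in>{..<N}. indicator (BB l) (g t l s \<omega>) :: real)
          = indicator (BB i) (g t i s \<omega>) * indicator (BB i') (g t i' s \<omega>) *
            (\<Prod>l\<in>{..<N} - {i, i'}. indicator (BB l) (g t l s \<omega>))"
        by (rule prod_two) (use i i' ne in auto)
      also have "(\<Prod>l\<in>{..<N} - {i, i'}. indicator (BB l) (g t l s \<omega>) :: real) = 1"
        by (rule prod.neutral) (auto simp: BB_def)
      finally show "(indicator (space M) \<omega> :: real) * (\<Prod>l\<in>{..<N}. indicator (BB l) (g t l s \<omega>)) =
             indicator B (X \<omega>) * indicator C (Y \<omega>)"
        using \<open>\<omega> \<in> space M\<close> ne by (simp add: BB_def X_def Y_def)
    qed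
    define qC where "qC = real_cond_exp M (Fpast t s) (\<lambda>\<omega>. indicator C (Y \<omega>))"
    have R: "(\<integral>\<omega>. indicator (space M) \<omega> * (\<Prod>l\<in>{..<N}. real_cond_exp M (Fpast t s) (\<lambda>\<omega>'. indicator (BB l) (g t l s \<omega>')) \<omega>) \<partial>M) =
             (\<integral>\<omega>. pB B \<omega> * qC \<omega> \<partial>M)"
    proof (rule integral_cong_AE)
      show "(\<lambda>\<omega>. indicator (space M) \<omega> * (\<Prod>l\<in>{..<N}. real_cond_exp M (Fpast t s) (\<lambda>\<omega>'. indicator (BB l) (g t l s \<omega>')) \<omega>)) \<in> borel_measurable M"
        by measurable
      show "(\<lambda>\<omega>. pB B \<omega> * qC \<omega>) \<in> borel_measurable M" unfolding qC_def using pBm by measurable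
      have one: "AE \<omega> in M. real_cond_exp M (Fpast t s) (\<lambda>\<omega>'. indicator (BB l) (g t l s \<omega>')) \<omega> = 1"
        if "l \<in> {..<N} - {i, i'}" for l
      proof -
        have "(\<lambda>\<omega>'. indicator (BB l) (g t l s \<omega>') :: real) = (\<lambda>_. 1)"
          using that by (auto simp: BB_def)
        moreover have "AE \<omega> in M. real_cond_exp M (Fpast t s) (\<lambda>_. 1) \<omega> = 1"
          by (rule real_cond_exp_F_meas) auto
        ultimately show ?thesis by simp
      qed
      have "AE \<omega> in M. \<forall>l\<in>{..<N} - {i, i'}. real_cond_exp M (Fpast t s) (\<lambda>\<omega>'. indicator (BB l) (g t l s \<omega>')) \<omega> = 1"
        by (rule AE_finite_allI) (use one in auto)
      then show "AE \<omega> in M. indicator (space M) \<omega> * (\<Prod>l\<in>{..<N}. real_cond_exp M (Fpast t s) (\<lambda>\<omega>'. indicator (BB l) (g t l s \<omega>')) \<omega>) = pB B \<omega> * qC \<omega>"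
      proof (rule AE_mp[OF _ AE_I2], intro impI)
        fix \<omega> assume \<omega>: "\<omega> \<in> space M" and
          h1: "\<forall>l\<in>{..<N} - {i, i'}. real_cond_exp M (Fpast t s) (\<lambda>\<omega>'. indicator (BB l) (g t l s \<omega>')) \<omega> = 1"
        have "(\<Prod>l\<in>{..<N}. real_cond_exp M (Fpast t s) (\<lambda>\<omega>'. indicator (BB l) (g t l s \<omega>')) \<omega>)
          = real_cond_exp M (Fpast t s) (\<lambda>\<omega>'. indicator (BB i) (g t i s \<omega>')) \<omega> *
            real_cond_exp M (Fpast t s) (\<lambda>\<omega>'. indicator (BB i') (g t i' s \<omega>')) \<omega> *
            (\<Prod>l\<in>{..<N} - {i, i'}. real_cond_exp M (Fpast t s) (\<lambda>\<omega>'. indicator (BB l) (g t l s \<omega>')) \<omega>)"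
          by (rule prod_two) (use i i' ne in auto)
        also have "(\<Prod>l\<in>{..<N} - {i, i'}. real_cond_exp M (Fpast t s) (\<lambda>\<omega>'. indicator (BB l) (g t l s \<omega>')) \<omega>) = 1"
          by (rule prod.neutral) (use h1 in auto)
        finally show "indicator (space M) \<omega> * (\<Prod>l\<in>{..<N}. real_cond_exp M (Fpast t s) (\<lambda>\<omega>'. indicator (BB l) (g t l s \<omega>')) \<omega>) = pB B \<omega> * qC \<omega>"
          using \<omega> ne by (simp add: BB_def pB_def qC_def X_def Y_def)
      qed
    qed
    have pq: "(\<integral>\<omega>. pB B \<omega> * qC \<omega> \<partial>M) = (\<integral>\<omega>. pB B \<omega> * indicator C (Y \<omega>) \<partial>M)"
      unfolding qC_def
    proof (rule real_cond_exp_intg(2))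
      show "integrable M (\<lambda>\<omega>. pB B \<omega> * indicator C (Y \<omega>))"
      proof (rule Bochner_Integration.integrable_bound[OF pBi[OF B]])
        show "(\<lambda>\<omega>. pB B \<omega> * indicator C (Y \<omega>)) \<in> borel_measurable M" using pBm C by measurable
        show "AE \<omega> in M. norm (pB B \<omega> * indicator C (Y \<omega>)) \<le> norm (pB B \<omega>)"
          by (intro AE_I2) (auto simp: indicator_def)
      qed
    qed (use pBm C in auto)
    have i1: "integrable M (\<lambda>\<omega>. indicator C (Y \<omega>) * indicator B (X \<omega>) :: real)"
      by (rule integrable_const_bound[of _ 1]) (use B C in \<open>auto simp: indicator_def\<close>)
    have i2: "integrable M (\<lambda>\<omega>. indicator C (Y \<omega>) * pB B \<omega>)"
    proof (rule Bochner_Integration.integrable_bound[OF pBi[OF B]])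
      show "(\<lambda>\<omega>. indicator C (Y \<omega>) * pB B \<omega>) \<in> borel_measurable M" using pBm C by measurable
      show "AE \<omega> in M. norm (indicator C (Y \<omega>) * pB B \<omega>) \<le> norm (pB B \<omega>)"
        by (intro AE_I2) (auto simp: indicator_def)
    qed
    have "(\<integral>\<omega>. indicator C (Y \<omega>) * indicator B (X \<omega>) \<partial>M) = (\<integral>\<omega>. indicator C (Y \<omega>) * pB B \<omega> \<partial>M)"
      using E L R pq by (simp add: mult.commute)
    then show ?thesis
      using i1 i2 by (simp add: right_diff_distrib Bochner_Integration.integral_diff)
  qed
  have sxi: "sqi (xi t i s)" "sqi (xi t i' s)" using sqi_xi i i' s by auto
  have s3: "(\<integral>\<omega>. indicator B (X \<omega>) * (xi t i' s \<omega> $ j') \<partial>M) = 0" if B: "B \<in> sets borel" for B j'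
  proof -
    have Yj: "sqr (\<lambda>\<omega>. Y \<omega> $ j')" unfolding Y_def by (rule sqi_comp[OF sqi_g[OF i' s]])
    have Yji: "integrable M (\<lambda>\<omega>. Y \<omega> $ j')" by (rule sqr_integrable[OF Yj])
    have [measurable]: "pB B \<in> borel_measurable M" "(\<lambda>\<omega>. Y \<omega> $ j') \<in> borel_measurable M" "B \<in> sets borel"
      using pBm Yj B unfolding sqr_def by auto
    define nj where "nj \<omega> = gradF i' (\<theta>loc t i' s \<omega>) $ j'" for \<omega>
    have njF: "nj \<in> borel_measurable (Fpast t s)" unfolding nj_def
      by (intro vec_measD xi_meas_Fpast i') auto
    have nj: "sqr nj" unfolding nj_def[abs_def] using s by (intro sqi_comp sqi_gradF sqi_\<theta>loc i') auto
    have nji: "integrable M nj" by (rule sqr_integrable[OF nj])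
    have [measurable]: "nj \<in> borel_measurable M" using nj unfolding sqr_def by auto
    have Wi: "integrable M (\<lambda>\<omega>. indicator B (X \<omega>) - pB B \<omega>)"
      using ind_int[OF B Xm] pBi[OF B] by auto
    have z2: "(\<integral>\<omega>. Y \<omega> $ j' * (indicator B (X \<omega>) - pB B \<omega>) \<partial>M) = 0"
    proof (rule ext_indicator_zero[OF Ym Wi s1[OF B]])
      show "(\<lambda>y::real^'d. y $ j') \<in> borel_measurable borel" by simp
      show "integrable M (\<lambda>\<omega>. Y \<omega> $ j' * (indicator B (X \<omega>) - pB B \<omega>))"
      proof (rule Bochner_Integration.integrable_bound)
        show "integrable M (\<lambda>\<omega>. 2 * Y \<omega> $ j')" using Yji by auto
        show "(\<lambda>\<omega>. Y \<omega> $ j' * (indicator B (X \<omega>) - pB B \<omega>)) \<in> borel_measurable M"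
          using pBm B Yj unfolding sqr_def by measurable
        show "AE \<omega> in M. norm (Y \<omega> $ j' * (indicator B (X \<omega>) - pB B \<omega>)) \<le> norm (2 * Y \<omega> $ j')"
          using pBb[OF B]
        proof eventually_elim
          case (elim \<omega>)
          have "\<bar>indicator B (X \<omega>) - pB B \<omega>\<bar> \<le> 2" using elim by (auto simp: indicator_def)
          then have "\<bar>Y \<omega> $ j'\<bar> * \<bar>indicator B (X \<omega>) - pB B \<omega>\<bar> \<le> \<bar>Y \<omega> $ j'\<bar> * 2"
            by (intro mult_left_mono) auto
          then show ?case by (simp add: abs_mult)
        qed
      qed
    qed (use B in auto)
    have iY1: "integrable M (\<lambda>\<omega>. Y \<omega> $ j' * indicator B (X \<omega>))"
    proof (rule Bochner_Integration.integrable_bound[OF Yji])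
      show "(\<lambda>\<omega>. Y \<omega> $ j' * indicator B (X \<omega>)) \<in> borel_measurable M" using B Yj unfolding sqr_def by measurable
      show "AE \<omega> in M. norm (Y \<omega> $ j' * indicator B (X \<omega>)) \<le> norm (Y \<omega> $ j')"
        by (intro AE_I2) (auto simp: indicator_def)
    qed
    have iY2: "integrable M (\<lambda>\<omega>. pB B \<omega> * Y \<omega> $ j')"
    proof (rule Bochner_Integration.integrable_bound[OF Yji])
      show "(\<lambda>\<omega>. pB B \<omega> * Y \<omega> $ j') \<in> borel_measurable M" using pBm Yj unfolding sqr_def by measurable
      show "AE \<omega> in M. norm (pB B \<omega> * Y \<omega> $ j') \<le> norm (Y \<omega> $ j')"
        using pBb[OF B] by eventually_elim (auto simp: abs_mult intro!: mult_left_le_one_le)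
    qed
    have e1: "(\<integral>\<omega>. Y \<omega> $ j' * indicator B (X \<omega>) \<partial>M) = (\<integral>\<omega>. pB B \<omega> * Y \<omega> $ j' \<partial>M)"
      using z2 iY1 iY2 by (simp add: right_diff_distrib Bochner_Integration.integral_diff mult.commute)
    have e2: "(\<integral>\<omega>. pB B \<omega> * Y \<omega> $ j' \<partial>M) = (\<integral>\<omega>. pB B \<omega> * real_cond_exp M (Fpast t s) (\<lambda>\<omega>. Y \<omega> $ j') \<omega> \<partial>M)"
      by (rule real_cond_exp_intg(2)[symmetric, OF iY2 pBm(1)]) (use Yj in \<open>auto simp: sqr_def\<close>)
    have e3: "(\<integral>\<omega>. pB B \<omega> * real_cond_exp M (Fpast t s) (\<lambda>\<omega>. Y \<omega> $ j') \<omega> \<partial>M) = (\<integral>\<omega>. nj \<omega> * pB B \<omega> \<partial>M)"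
    proof (rule integral_cong_AE)
      show "(\<lambda>\<omega>. pB B \<omega> * real_cond_exp M (Fpast t s) (\<lambda>\<omega>. Y \<omega> $ j') \<omega>) \<in> borel_measurable M"
        using pBm by measurable
      show "(\<lambda>\<omega>. nj \<omega> * pB B \<omega>) \<in> borel_measurable M" using pBm nj unfolding sqr_def by measurable
      have "AE \<omega> in M. \<forall>j. real_cond_exp M (Fpast t s) (\<lambda>\<omega>. g t i' s \<omega> $ j) \<omega> = gradF i' (\<theta>loc t i' s \<omega>) $ j"
        using g_unbiased i' s by auto
      then show "AE \<omega> in M. pB B \<omega> * real_cond_exp M (Fpast t s) (\<lambda>\<omega>. Y \<omega> $ j') \<omega> = nj \<omega> * pB B \<omega>"
        unfolding Y_def nj_def by eventually_elim auto
    qed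
    have in1: "integrable M (\<lambda>\<omega>. nj \<omega> * indicator B (X \<omega>))"
    proof (rule Bochner_Integration.integrable_bound[OF nji])
      show "(\<lambda>\<omega>. nj \<omega> * indicator B (X \<omega>)) \<in> borel_measurable M" using B nj unfolding sqr_def by measurable
      show "AE \<omega> in M. norm (nj \<omega> * indicator B (X \<omega>)) \<le> norm (nj \<omega>)"
        by (intro AE_I2) (auto simp: indicator_def)
    qed
    have e4: "(\<integral>\<omega>. nj \<omega> * pB B \<omega> \<partial>M) = (\<integral>\<omega>. nj \<omega> * indicator B (X \<omega>) \<partial>M)"
      unfolding pB_def by (rule real_cond_exp_intg(2)[OF in1 njF]) (use B in auto)
    have fin: "(\<integral>\<omega>. indicator B (X \<omega>) * Y \<omega> $ j' \<partial>M) = (\<integral>\<omega>. indicator B (X \<omega>) * nj \<omega> \<partial>M)"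
      using e1 e2 e3 e4 by (simp add: mult.commute)
    have xe: "indicator B (X \<omega>) * (xi t i' s \<omega> $ j') = indicator B (X \<omega>) * Y \<omega> $ j' - indicator B (X \<omega>) * nj \<omega>" for \<omega>
      unfolding xi_def Y_def nj_def by (simp add: right_diff_distrib)
    show ?thesis unfolding xe using fin iY1 in1
      by (simp add: Bochner_Integration.integral_diff mult.commute)
  qed
  have s5: "(\<integral>\<omega>. (xi t i s \<omega> $ j) * (xi t i' s \<omega> $ j) \<partial>M) = 0" for j
  proof -
    have Wi: "integrable M (\<lambda>\<omega>. xi t i' s \<omega> $ j)" by (rule sqr_integrable[OF sqi_comp[OF sxi(2)]])
    have Xj: "sqr (\<lambda>\<omega>. X \<omega> $ j)" unfolding X_def by (rule sqi_comp[OF sqi_g[OF i s]])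
    have z4: "(\<integral>\<omega>. X \<omega> $ j * xi t i' s \<omega> $ j \<partial>M) = 0"
    proof (rule ext_indicator_zero[OF Xm Wi])
      show "\<And>C. C \<in> sets borel \<Longrightarrow> (\<integral>\<omega>. indicator C (X \<omega>) * xi t i' s \<omega> $ j \<partial>M) = 0"
        by (rule s3)
      show "(\<lambda>y::real^'d. y $ j) \<in> borel_measurable borel" by simp
      show "integrable M (\<lambda>\<omega>. X \<omega> $ j * xi t i' s \<omega> $ j)"
        by (rule sqr_mult[OF Xj sqi_comp[OF sxi(2)]])
    qed
    define mj where "mj \<omega> = gradF i (\<theta>loc t i s \<omega>) $ j" for \<omega>
    have mjF: "mj \<in> borel_measurable (Fpast t s)" unfolding mj_def
      by (intro vec_measD xi_meas_Fpast i) auto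
    have mj: "sqr mj" unfolding mj_def[abs_def] using s by (intro sqi_comp sqi_gradF sqi_\<theta>loc i) auto
    have z5: "(\<integral>\<omega>. mj \<omega> * xi t i' s \<omega> $ j \<partial>M) = 0"
      by (rule noise_orth_real(2)[OF i' s mjF mj])
    have i5: "integrable M (\<lambda>\<omega>. mj \<omega> * xi t i' s \<omega> $ j)"
      by (rule noise_orth_real(1)[OF i' s mjF mj])
    have i4: "integrable M (\<lambda>\<omega>. X \<omega> $ j * xi t i' s \<omega> $ j)"
      by (rule sqr_mult[OF Xj sqi_comp[OF sxi(2)]])
    have xe: "(xi t i s \<omega> $ j) * (xi t i' s \<omega> $ j) = X \<omega> $ j * xi t i' s \<omega> $ j - mj \<omega> * xi t i' s \<omega> $ j" for \<omega>
      unfolding xi_def[of t i s] X_def mj_def by (simp add: left_diff_distrib)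
    show ?thesis unfolding xe using z4 z5 i4 i5 by (simp add: Bochner_Integration.integral_diff)
  qed
  have "(\<integral>\<omega>. xi t i s \<omega> \<bullet> xi t i' s \<omega> \<partial>M) = (\<integral>\<omega>. (\<Sum>j\<in>UNIV. xi t i s \<omega> $ j * xi t i' s \<omega> $ j) \<partial>M)"
    by (simp add: inner_vec_sum)
  also have "\<dots> = (\<Sum>j\<in>UNIV. (\<integral>\<omega>. xi t i s \<omega> $ j * xi t i' s \<omega> $ j \<partial>M))"
    by (rule Bochner_Integration.integral_sum) (rule sqr_mult[OF sqi_comp[OF sxi(1)] sqi_comp[OF sxi(2)]])
  also have "\<dots> = 0" using s5 by simp
  finally show ?thesis .
qed

end


definition sgnQ :: "'d \<Rightarrow> real^'d^'d" where
  "sgnQ a = (\<chi> i j. if i = j then (if i = a then -1 else 1) else 0)"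

definition sw :: "'d \<Rightarrow> 'd \<Rightarrow> 'd \<Rightarrow> 'd" where
  "sw a b i = (if i = a then b else if i = b then a else i)"

definition swQ :: "'d \<Rightarrow> 'd \<Rightarrow> real^'d^'d" where
  "swQ a b = (\<chi> i j. if j = sw a b i then 1 else 0)"

lemma sw_sw[simp]: "sw a b (sw a b i) = i"
  unfolding sw_def by auto

lemma sw_eq_iff: "sw a b k = i \<longleftrightarrow> k = sw a b i"
  using sw_sw by metis

lemma sgnQ_orth: "orthogonal_matrix (sgnQ a)"
  unfolding orthogonal_matrix
proof (rule vec_eq_iff[THEN iffD2], intro allI, rule vec_eq_iff[THEN iffD2], intro allI)
  fix i j
  have "(transpose (sgnQ a) ** sgnQ a) $ i $ j = (\<Sum>k\<in>UNIV. (sgnQ a) $ k $ i * (sgnQ a) $ k $ j)"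
    by (simp add: matrix_matrix_mult_def transpose_def)
  also have "\<dots> = (\<Sum>k\<in>UNIV. if k = i then (if i = j then 1 else 0) else 0)"
    by (intro sum.cong refl) (auto simp: sgnQ_def)
  also have "\<dots> = mat 1 $ i $ j" by (simp add: mat_def)
  finally show "(transpose (sgnQ a) ** sgnQ a) $ i $ j = mat 1 $ i $ j" .
qed

lemma swQ_orth: "orthogonal_matrix (swQ a b)"
  unfolding orthogonal_matrix
proof (rule vec_eq_iff[THEN iffD2], intro allI, rule vec_eq_iff[THEN iffD2], intro allI)
  fix i j
  have "(transpose (swQ a b) ** swQ a b) $ i $ j = (\<Sum>k\<in>UNIV. (swQ a b) $ k $ i * (swQ a b) $ k $ j)"
    by (simp add: matrix_matrix_mult_def transpose_def)
  also have "\<dots> = (\<Sum>k\<in>UNIV. if k = sw a b i then (if i = j then 1 else 0) else 0)"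
    by (intro sum.cong refl) (auto simp: swQ_def sw_eq_iff[symmetric])
  also have "\<dots> = mat 1 $ i $ j" by (simp add: mat_def)
  finally show "(transpose (swQ a b) ** swQ a b) $ i $ j = mat 1 $ i $ j" .
qed

lemma proj_entry: "proj_of (P::real^'r^'d) $ a $ b = (\<Sum>c\<in>UNIV. P $ a $ c * P $ b $ c)"
  by (simp add: proj_of_def matrix_matrix_mult_def transpose_def)

lemma sgnQ_mult: "(sgnQ a ** (P::real^'r^'d)) $ i $ c = (if i = a then -1 else 1) * P $ i $ c"
proof -
  have "(sgnQ a ** P) $ i $ c = (\<Sum>k\<in>UNIV. (sgnQ a) $ i $ k * P $ k $ c)"
    by (simp add: matrix_matrix_mult_def)
  also have "\<dots> = (\<Sum>k\<in>UNIV. if k = i then (if i = a then -1 else 1) * P $ i $ c else 0)"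
    by (intro sum.cong refl) (auto simp: sgnQ_def)
  finally show ?thesis by simp
qed

lemma swQ_mult: "(swQ a b ** (P::real^'r^'d)) $ i $ c = P $ (sw a b i) $ c"
proof -
  have "(swQ a b ** P) $ i $ c = (\<Sum>k\<in>UNIV. (swQ a b) $ i $ k * P $ k $ c)"
    by (simp add: matrix_matrix_mult_def)
  also have "\<dots> = (\<Sum>k\<in>UNIV. if k = sw a b i then P $ (sw a b i) $ c else 0)"
    by (intro sum.cong refl) (auto simp: swQ_def)
  finally show ?thesis by simp
qed

lemma stiefel_col: "P \<in> stiefel \<Longrightarrow> (\<Sum>a\<in>UNIV. (P $ a $ c)\<^sup>2) = 1"
proof -
  assume "P \<in> stiefel"
  then have "(transpose P ** P) $ c $ c = 1" unfolding stiefel_def by (simp add: mat_def)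
  then show ?thesis by (simp add: matrix_matrix_mult_def transpose_def power2_eq_square)
qed

lemma stiefel_entry_le: "P \<in> stiefel \<Longrightarrow> \<bar>P $ a $ c\<bar> \<le> 1"
proof -
  assume "P \<in> stiefel"
  then have s: "(\<Sum>a\<in>UNIV. (P $ a $ c)\<^sup>2) = 1" by (rule stiefel_col)
  have "(P $ a $ c)\<^sup>2 \<le> (\<Sum>a\<in>UNIV. (P $ a $ c)\<^sup>2)"
    by (rule member_le_sum) auto
  then have "(P $ a $ c)\<^sup>2 \<le> 1\<^sup>2" using s by simp
  then show ?thesis using abs_le_square_iff[of "P $ a $ c" 1] by simp
qed

lemma stiefel_trace: "P \<in> stiefel \<Longrightarrow> (\<Sum>a\<in>UNIV. proj_of (P::real^'r^'d) $ a $ a) = real CARD('r)"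
proof -
  assume P: "P \<in> stiefel"
  have "(\<Sum>a\<in>UNIV. proj_of P $ a $ a) = (\<Sum>a\<in>UNIV. \<Sum>c\<in>UNIV. (P $ a $ c)\<^sup>2)"
    by (simp add: proj_entry power2_eq_square)
  also have "\<dots> = (\<Sum>c\<in>(UNIV::'r set). \<Sum>a\<in>UNIV. (P $ a $ c)\<^sup>2)" by (rule sum.swap)
  also have "\<dots> = (\<Sum>c\<in>(UNIV::'r set). 1)" using stiefel_col[OF P] by simp
  finally show ?thesis by simp
qed

lemma proj_entry_bound: "P \<in> stiefel \<Longrightarrow> \<bar>proj_of (P::real^'r^'d) $ a $ b\<bar> \<le> real CARD('r)"
proof -
  assume P: "P \<in> stiefel"
  have "\<bar>proj_of P $ a $ b\<bar> \<le> (\<Sum>c\<in>(UNIV::'r set). \<bar>P $ a $ c * P $ b $ c\<bar>)"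
    unfolding proj_entry by (rule sum_abs)
  also have "\<dots> \<le> (\<Sum>c\<in>(UNIV::'r set). 1)"
    using stiefel_entry_le[OF P] by (intro sum_mono) (auto simp: abs_mult intro: mult_le_one)
  finally show ?thesis by simp
qed


context fed
begin

lemma haar_inv:
  fixes h :: "real^'r^'d \<Rightarrow> real"
  assumes Q: "orthogonal_matrix Q" and h: "h \<in> borel_measurable borel"
  shows "(\<integral>\<omega>. h (P t \<omega>) \<partial>M) = (\<integral>\<omega>. h (Q ** P t \<omega>) \<partial>M)"
proof -
  have H: "distr (distr M borel (P t)) borel (\<lambda>x. Q ** x) = distr M borel (P t)"
    using P_haar Q unfolding haar_stiefel_def by auto
  have Qm: "(\<lambda>x::real^'r^'d. Q ** x) \<in> borel_measurable borel" by (intro mm_meas) auto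
  have hQ: "(\<lambda>x. h (Q ** x)) \<in> borel_measurable borel" using measurable_compose[OF Qm h] .
  have "(\<integral>\<omega>. h (P t \<omega>) \<partial>M) = integral\<^sup>L (distr M borel (P t)) h"
    by (rule integral_distr[symmetric, OF P_measM h])
  also have "\<dots> = integral\<^sup>L (distr (distr M borel (P t)) borel (\<lambda>x. Q ** x)) h" by (simp only: H)
  also have "\<dots> = integral\<^sup>L (distr M borel (P t)) (\<lambda>x. h (Q ** x))"
    by (rule integral_distr) (use Qm h in auto)
  also have "\<dots> = (\<integral>\<omega>. h (Q ** P t \<omega>) \<partial>M)"
    by (rule integral_distr[OF P_measM hQ])
  finally show ?thesis .
qed

lemma entry_meas: "(\<lambda>x::real^'r^'d. proj_of x $ a $ b) \<in> borel_measurable borel"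
  by (intro mat_measD proj_meas) auto

lemma E_int: "integrable M (\<lambda>\<omega>. Pj t \<omega> $ a $ b)"
proof (rule integrable_const_bound[of _ "real CARD('r)"])
  show "AE \<omega> in M. norm (Pj t \<omega> $ a $ b) \<le> real CARD('r)"
    using AE_stiefel[of t] by eventually_elim (simp add: proj_entry_bound)
  show "(\<lambda>\<omega>. Pj t \<omega> $ a $ b) \<in> borel_measurable M"
    using measurable_compose[OF P_measM entry_meas] .
qed

lemma E_off:
  assumes ab: "a \<noteq> b"
  shows "(\<integral>\<omega>. Pj t \<omega> $ a $ b \<partial>M) = 0"
proof -
  have "(\<integral>\<omega>. Pj t \<omega> $ a $ b \<partial>M) = (\<integral>\<omega>. proj_of (sgnQ a ** P t \<omega>) $ a $ b \<partial>M)"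
    by (rule haar_inv[OF sgnQ_orth entry_meas])
  also have "\<dots> = (\<integral>\<omega>. - (Pj t \<omega> $ a $ b) \<partial>M)"
    by (rule Bochner_Integration.integral_cong[OF refl])
       (use ab in \<open>simp add: proj_entry sgnQ_mult sum_negf[symmetric]\<close>)
  also have "\<dots> = - (\<integral>\<omega>. Pj t \<omega> $ a $ b \<partial>M)" by simp
  finally show ?thesis by simp
qed

lemma E_diag_eq: "(\<integral>\<omega>. Pj t \<omega> $ a $ a \<partial>M) = (\<integral>\<omega>. Pj t \<omega> $ b $ b \<partial>M)"
proof -
  have "(\<integral>\<omega>. Pj t \<omega> $ a $ a \<partial>M) = (\<integral>\<omega>. proj_of (swQ a b ** P t \<omega>) $ a $ a \<partial>M)"
    by (rule haar_inv[OF swQ_orth entry_meas])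
  also have "\<dots> = (\<integral>\<omega>. Pj t \<omega> $ b $ b \<partial>M)"
    by (rule Bochner_Integration.integral_cong[OF refl]) (simp add: proj_entry swQ_mult sw_def)
  finally show ?thesis .
qed

lemma E_diag: "(\<integral>\<omega>. Pj t \<omega> $ a $ a \<partial>M) = \<delta>"
proof -
  have "(\<Sum>b\<in>UNIV. (\<integral>\<omega>. Pj t \<omega> $ b $ b \<partial>M)) = (\<integral>\<omega>. (\<Sum>b\<in>UNIV. Pj t \<omega> $ b $ b) \<partial>M)"
    by (rule Bochner_Integration.integral_sum[symmetric]) (rule E_int)
  also have "\<dots> = (\<integral>\<omega>. real CARD('r) \<partial>M)"
  proof (rule integral_cong_AE)
    show "(\<lambda>\<omega>. \<Sum>b\<in>UNIV. Pj t \<omega> $ b $ b) \<in> borel_measurable M"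
      using E_int by (intro borel_measurable_sum) auto
    show "AE \<omega> in M. (\<Sum>b\<in>UNIV. Pj t \<omega> $ b $ b) = real CARD('r)"
      using AE_stiefel[of t] by eventually_elim (simp add: stiefel_trace)
  qed simp
  also have "\<dots> = real CARD('r)" by (simp add: prob_space)
  finally have tr: "(\<Sum>b\<in>UNIV. (\<integral>\<omega>. Pj t \<omega> $ b $ b \<partial>M)) = real CARD('r)" .
  have "(\<Sum>b\<in>UNIV. (\<integral>\<omega>. Pj t \<omega> $ b $ b \<partial>M)) = (\<Sum>b\<in>(UNIV::'d set). (\<integral>\<omega>. Pj t \<omega> $ a $ a \<partial>M))"
    by (rule sum.cong[OF refl]) (rule E_diag_eq)
  also have "\<dots> = real CARD('d) * (\<integral>\<omega>. Pj t \<omega> $ a $ a \<partial>M)" by simp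
  finally have "(\<Sum>b\<in>UNIV. (\<integral>\<omega>. Pj t \<omega> $ b $ b \<partial>M)) = real CARD('d) * (\<integral>\<omega>. Pj t \<omega> $ a $ a \<partial>M)" .
  then show ?thesis using tr unfolding \<delta>_def by (simp add: field_simps)
qed

lemma E_entry: "(\<integral>\<omega>. Pj t \<omega> $ a $ b \<partial>M) = (if a = b then \<delta> else 0)"
  using E_diag E_off by auto

end


lemma sum_delta_mult: "(\<Sum>b\<in>(UNIV::'a::finite set). f b * (if a = b then c else 0)) = f a * (c::real)"
proof -
  have "(\<Sum>b\<in>UNIV. f b * (if a = b then c else 0)) = (\<Sum>b\<in>UNIV. if a = b then f b * c else 0)"
    by (rule sum.cong) auto
  then show ?thesis by simp
qed

context fed
begin

lemma indep_pre:
  fixes X :: "'w \<Rightarrow> real" and \<phi> :: "real^'r^'d \<Rightarrow> real"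
  assumes X: "X \<in> borel_measurable (Pre t)" and \<phi>: "\<phi> \<in> borel_measurable borel"
  shows "indep_var borel X borel (\<lambda>\<omega>. \<phi> (P t \<omega>))"
proof -
  have XM: "X \<in> borel_measurable M" by (rule meas_M_Pre[OF X])
  have YM: "(\<lambda>\<omega>. \<phi> (P t \<omega>)) \<in> borel_measurable M" using measurable_compose[OF P_measM \<phi>] .
  define S1 where "S1 = sigma_sets (space M) {X -` A \<inter> space M | A. A \<in> sets borel}"
  define S2 where "S2 = sigma_sets (space M) {(\<lambda>\<omega>. \<phi> (P t \<omega>)) -` A \<inter> space M | A. A \<in> sets borel}"
  define V where "V = vimage_algebra (space M) (P t) borel"
  have S1sub: "S1 \<subseteq> sets (Pre t)"
  proof -
    have "{X -` A \<inter> space M | A. A \<in> sets borel} \<subseteq> sets (Pre t)"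
      using measurable_sets[OF X] by auto
    from sets.sigma_sets_subset[OF this] show ?thesis unfolding S1_def by simp
  qed
  have Vsets: "sets V = {P t -` B \<inter> space M | B. B \<in> sets borel}"
    unfolding V_def by (rule sets_vimage_algebra2) auto
  have S2sub: "S2 \<subseteq> sets V"
  proof -
    have "{(\<lambda>\<omega>. \<phi> (P t \<omega>)) -` A \<inter> space M | A. A \<in> sets borel} \<subseteq> sets V"
    proof
      fix a assume "a \<in> {(\<lambda>\<omega>. \<phi> (P t \<omega>)) -` A \<inter> space M | A. A \<in> sets borel}"
      then obtain A where A: "A \<in> sets borel" "a = (\<lambda>\<omega>. \<phi> (P t \<omega>)) -` A \<inter> space M" by auto
      have "\<phi> -` A \<inter> space borel \<in> sets borel" by (rule measurable_sets[OF \<phi> A(1)])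
      then have "\<phi> -` A \<in> sets borel" by simp
      moreover have "a = P t -` (\<phi> -` A) \<inter> space M" using A by auto
      ultimately show "a \<in> sets V" unfolding Vsets by auto
    qed
    from sets.sigma_sets_subset[OF this] show ?thesis unfolding S2_def V_def by simp
  qed
  have "indep_set S1 S2"
    unfolding indep_sets2_eq
  proof (intro conjI ballI)
    show "S1 \<subseteq> events" using S1sub subalg_Pre unfolding subalgebra_def by auto
    show "S2 \<subseteq> events"
    proof
      fix b assume "b \<in> S2"
      then have "b \<in> sets V" using S2sub by auto
      then obtain B where "B \<in> sets borel" "b = P t -` B \<inter> space M" unfolding Vsets by auto
      then show "b \<in> events" using P_measM by (auto intro: measurable_sets)
    qed
    fix a b assume a: "a \<in> S1" and b: "b \<in> S2"
    then have aP: "a \<in> sets (Pre t)" using S1sub by auto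
    from b have "b \<in> sets V" using S2sub by auto
    then obtain B where B: "B \<in> sets borel" "b = P t -` B \<inter> space M" unfolding Vsets by auto
    show "prob (a \<inter> b) = prob a * prob b"
      using P_indep aP B by auto
  qed
  then show ?thesis unfolding indep_var_eq S1_def S2_def using XM YM by auto
qed

lemma E_prod:
  fixes X :: "'w \<Rightarrow> real"
  assumes X: "X \<in> borel_measurable (Pre t)" and Xi: "integrable M X"
  shows "(\<integral>\<omega>. X \<omega> * Pj t \<omega> $ a $ b \<partial>M) = (\<integral>\<omega>. X \<omega> \<partial>M) * (if a = b then \<delta> else 0)"
    "integrable M (\<lambda>\<omega>. X \<omega> * Pj t \<omega> $ a $ b)"
proof -
  have ind: "indep_var borel X borel (\<lambda>\<omega>. proj_of (P t \<omega>) $ a $ b)"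
    by (rule indep_pre[OF X entry_meas])
  show "(\<integral>\<omega>. X \<omega> * Pj t \<omega> $ a $ b \<partial>M) = (\<integral>\<omega>. X \<omega> \<partial>M) * (if a = b then \<delta> else 0)"
    using indep_var_lebesgue_integral[OF ind Xi E_int] E_entry by simp
  show "integrable M (\<lambda>\<omega>. X \<omega> * Pj t \<omega> $ a $ b)"
    using indep_var_integrable[OF ind Xi E_int] .
qed

lemma E_quad:
  assumes uP: "u \<in> borel_measurable (Pre t)" and us: "sqi u"
  shows "(\<integral>\<omega>. u \<omega> \<bullet> (Pj t \<omega> *v u \<omega>) \<partial>M) = \<delta> * (\<integral>\<omega>. (norm (u \<omega>))\<^sup>2 \<partial>M)"
proof -
  have cP: "(\<lambda>\<omega>. u \<omega> $ a * u \<omega> $ b) \<in> borel_measurable (Pre t)" for a b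
    using vec_measD[OF uP] by (intro borel_measurable_times) auto
  have ci: "integrable M (\<lambda>\<omega>. u \<omega> $ a * u \<omega> $ b)" for a b
    by (rule sqr_mult[OF sqi_comp[OF us] sqi_comp[OF us]])
  have eq: "u \<omega> \<bullet> (Pj t \<omega> *v u \<omega>) = (\<Sum>a\<in>UNIV. \<Sum>b\<in>UNIV. (u \<omega> $ a * u \<omega> $ b) * Pj t \<omega> $ a $ b)" for \<omega>
    by (simp add: inner_vec_sum matrix_vector_mult_def sum_distrib_left mult.commute mult.left_commute)
  have "(\<integral>\<omega>. u \<omega> \<bullet> (Pj t \<omega> *v u \<omega>) \<partial>M)
      = (\<integral>\<omega>. (\<Sum>a\<in>UNIV. \<Sum>b\<in>UNIV. (u \<omega> $ a * u \<omega> $ b) * Pj t \<omega> $ a $ b) \<partial>M)"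
    by (simp only: eq)
  also have "\<dots> = (\<Sum>a\<in>UNIV. \<Sum>b\<in>UNIV. (\<integral>\<omega>. (u \<omega> $ a * u \<omega> $ b) * Pj t \<omega> $ a $ b \<partial>M))"
    using E_prod(2)[OF cP ci] by (simp add: Bochner_Integration.integral_sum integrable_sum)
  also have "\<dots> = (\<Sum>a\<in>UNIV. \<Sum>b\<in>UNIV. (\<integral>\<omega>. u \<omega> $ a * u \<omega> $ b \<partial>M) * (if a = b then \<delta> else 0))"
    using E_prod(1)[OF cP ci] by simp
  also have "\<dots> = (\<Sum>a\<in>UNIV. \<delta> * (\<integral>\<omega>. (u \<omega> $ a)\<^sup>2 \<partial>M))"
    by (simp only: sum_delta_mult) (simp add: power2_eq_square mult.commute)
  also have "\<dots> = \<delta> * (\<integral>\<omega>. (\<Sum>a\<in>UNIV. (u \<omega> $ a)\<^sup>2) \<partial>M)"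
    using ci by (simp add: sum_distrib_left Bochner_Integration.integral_sum power2_eq_square)
  also have "(\<lambda>\<omega>. (\<Sum>a\<in>UNIV. (u \<omega> $ a)\<^sup>2)) = (\<lambda>\<omega>. (norm (u \<omega>))\<^sup>2)"
  proof (rule ext)
    fix \<omega>
    have "(norm (u \<omega>))\<^sup>2 = u \<omega> \<bullet> u \<omega>" by (rule power2_norm_eq_inner)
    also have "\<dots> = (\<Sum>a\<in>UNIV. u \<omega> $ a * u \<omega> $ a)" by (rule inner_vec_sum)
    finally show "(\<Sum>a\<in>UNIV. (u \<omega> $ a)\<^sup>2) = (norm (u \<omega>))\<^sup>2" by (simp add: power2_eq_square)
  qed
  finally show ?thesis .
qed

end


lemma mv_sum: "(A::real^'n^'m) *v (\<Sum>k\<in>K. x k) = (\<Sum>k\<in>K. A *v x k)"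
  by (induction K rule: infinite_finite_induct) (auto simp: matrix_vector_right_distrib)

lemma amgm_S:
  fixes a b S :: real
  assumes "S > 0"
  shows "a * b \<le> S / 4 * a\<^sup>2 + b\<^sup>2 / S"
proof -
  have "0 \<le> (S / 2 * a - b)\<^sup>2 / S" using assms by simp
  also have "(S / 2 * a - b)\<^sup>2 / S = S / 4 * a\<^sup>2 - a * b + b\<^sup>2 / S"
    using assms by (simp add: power2_eq_square field_simps)
  finally show ?thesis by simp
qed

lemma descent_alg:
  fixes U V W :: "'a::real_inner"
  assumes S: "S > 0" and eta: "\<eta> > 0" and L: "L > 0" and x: "L * \<eta> * S \<le> 1"
  shows "- \<eta> * (S * (norm U)\<^sup>2 + U \<bullet> V + U \<bullet> W) + L / 2 * (\<eta>\<^sup>2 * (norm (S *\<^sub>R U + V + W))\<^sup>2)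
     \<le> - (\<eta> * S / 2) * (norm U)\<^sup>2 + (\<eta> / S) * (norm V)\<^sup>2 + L * \<eta>\<^sup>2 * (norm W)\<^sup>2
        - \<eta> * (1 - L * \<eta> * S) * (U \<bullet> W)"
proof -
  define a where "a = (norm U)\<^sup>2"
  define b where "b = U \<bullet> V"
  define c where "c = U \<bullet> W"
  define v where "v = (norm V)\<^sup>2"
  define w where "w = (norm W)\<^sup>2"
  define x where "x = L * \<eta> * S"
  have x01: "0 \<le> 1 - x" using assms unfolding x_def by simp
  have exp: "(norm (S *\<^sub>R U + V + W))\<^sup>2 = S\<^sup>2 * a + 2 * S * b + 2 * S * c + (norm (V + W))\<^sup>2"
  proof -
    have "(norm (S *\<^sub>R U + V + W))\<^sup>2 = (S *\<^sub>R U + V + W) \<bullet> (S *\<^sub>R U + V + W)"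
      by (rule power2_norm_eq_inner)
    also have "\<dots> = S\<^sup>2 * (U \<bullet> U) + 2 * S * (U \<bullet> V) + 2 * S * (U \<bullet> W) + (V + W) \<bullet> (V + W)"
      by (simp add: inner_add_left inner_add_right inner_commute power2_eq_square algebra_simps)
    finally show ?thesis unfolding a_def b_def c_def by (simp add: power2_norm_eq_inner)
  qed
  have vw: "(norm (V + W))\<^sup>2 \<le> 2 * v + 2 * w"
  proof -
    have "(norm (V + W))\<^sup>2 \<le> (norm V + norm W)\<^sup>2" by (intro power_mono norm_triangle_ineq) auto
    also have "\<dots> \<le> 2 * (norm V)\<^sup>2 + 2 * (norm W)\<^sup>2" by (rule sq_sum_le)
    finally show ?thesis unfolding v_def w_def .
  qed
  have bb: "- b \<le> S / 4 * a + v / S"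
  proof -
    have "- b \<le> norm U * norm V" unfolding b_def
      using Cauchy_Schwarz_ineq2[of U V] by (simp add: abs_le_iff)
    also have "\<dots> \<le> S / 4 * (norm U)\<^sup>2 + (norm V)\<^sup>2 / S" by (rule amgm_S[OF S])
    finally show ?thesis unfolding a_def v_def by simp
  qed
  have bb2: "\<eta> * (1 - x) * (- b) \<le> \<eta> * (1 - x) * (S / 4 * a + v / S)"
    using bb x01 eta by (intro mult_left_mono) auto
  have Lx: "L * \<eta>\<^sup>2 = \<eta> * x / S" using S unfolding x_def by (simp add: power2_eq_square field_simps)
  have a0: "0 \<le> a" unfolding a_def by simp
  have "- \<eta> * (S * a + b + c) + L / 2 * (\<eta>\<^sup>2 * (S\<^sup>2 * a + 2 * S * b + 2 * S * c + (norm (V + W))\<^sup>2))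
     \<le> - \<eta> * (S * a + b + c) + L / 2 * (\<eta>\<^sup>2 * (S\<^sup>2 * a + 2 * S * b + 2 * S * c + (2 * v + 2 * w)))"
    using vw L by (intro add_left_mono mult_left_mono) auto
  also have "\<dots> = - (\<eta> * S) * (1 - x / 2) * a + \<eta> * (1 - x) * (- b) - \<eta> * (1 - x) * c + L * \<eta>\<^sup>2 * v + L * \<eta>\<^sup>2 * w"
    unfolding x_def using S by (simp add: power2_eq_square field_simps)
  also have "\<dots> \<le> - (\<eta> * S) * (1 - x / 2) * a + \<eta> * (1 - x) * (S / 4 * a + v / S) - \<eta> * (1 - x) * c + L * \<eta>\<^sup>2 * v + L * \<eta>\<^sup>2 * w"
    using bb2 by linarith
  also have "\<dots> = - (\<eta> * S) * (3 / 4 - x / 4) * a + (\<eta> / S) * v - \<eta> * (1 - x) * c + L * \<eta>\<^sup>2 * w"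
    unfolding Lx using S by (simp add: field_simps)
  also have "\<dots> \<le> - (\<eta> * S / 2) * a + (\<eta> / S) * v - \<eta> * (1 - x) * c + L * \<eta>\<^sup>2 * w"
  proof -
    have "(\<eta> * S / 2) * a \<le> (\<eta> * S) * (3 / 4 - x / 4) * a"
      using x01 a0 S eta by (intro mult_right_mono) (auto simp: field_simps)
    then have "- (\<eta> * S) * (3 / 4 - x / 4) * a \<le> - (\<eta> * S / 2) * a"
      by (simp only: mult_minus_left neg_le_iff_le)
    then show ?thesis by linarith
  qed
  finally show ?thesis unfolding a_def b_def c_def v_def w_def x_def exp by simp
qed

context fed
begin

definition "al k = acoef \<mu> \<tau> k"

lemma mu_ne1: "\<mu> \<noteq> 1" using mu by simp

lemma S_eq: "S = (\<Sum>k<\<tau>. al k)"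
  unfolding S_def al_def by (rule S_tau_acoef[OF mu_ne1])

lemma al_nonneg: "0 \<le> al k" unfolding al_def using mu by (simp add: acoef_nonneg)

lemma S_ge: "real \<tau> \<le> S"
proof -
  have "(\<Sum>k<\<tau>. (1::real)) \<le> (\<Sum>k<\<tau>. al k)"
    by (rule sum_mono) (use mu in \<open>auto simp: al_def intro: acoef_ge1\<close>)
  then show ?thesis unfolding S_eq by simp
qed

lemma S_pos: "S > 0" using S_ge tau_pos by linarith

lemma S_le: "(1 - \<mu>) * S \<le> real \<tau>"
proof -
  have "S \<le> (\<Sum>k<\<tau>. 1 / (1 - \<mu>))"
    unfolding S_eq by (rule sum_mono) (use mu in \<open>auto simp: al_def intro: acoef_le\<close>)
  then have "S \<le> real \<tau> / (1 - \<mu>)" by simp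
  then show ?thesis using mu by (simp add: field_simps)
qed

lemma delta_pos: "0 < \<delta>" unfolding \<delta>_def by simp

lemma delta_le1: "\<delta> \<le> 1" unfolding \<delta>_def using r_le_d by simp

lemma eta_LS: "L * \<eta> * S \<le> 1"
proof -
  have "\<eta> \<le> 1 / (L * S)" using eta_le by simp
  then show ?thesis using L_pos S_pos eta_pos by (simp add: field_simps)
qed

lemma one_minus_mu2: "0 < 1 - \<mu>\<^sup>2"
proof -
  have "\<mu> * \<mu> \<le> \<mu>" using mu by (simp add: mult_left_le_one_le)
  then show ?thesis using mu by (simp add: power2_eq_square)
qed

lemma kappa_le: "\<eta>\<^sup>2 * L\<^sup>2 * real \<tau> ^ 3 / (1 - \<mu>\<^sup>2) \<le> \<delta> / 48"
proof -
  define q where "q = \<delta> * (1 - \<mu>) * (1 - \<mu>\<^sup>2) * S / (48 * L\<^sup>2 * real \<tau> ^ 4)"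
  have q0: "0 \<le> q" unfolding q_def using delta_pos mu S_pos one_minus_mu2 by simp
  have "\<eta> \<le> sqrt q" using eta_le unfolding q_def by simp
  then have "\<eta>\<^sup>2 \<le> (sqrt q)\<^sup>2" using eta_pos by (intro power_mono) auto
  then have "\<eta>\<^sup>2 \<le> q" using q0 by simp
  then have "\<eta>\<^sup>2 * L\<^sup>2 * real \<tau> ^ 3 / (1 - \<mu>\<^sup>2) \<le> q * L\<^sup>2 * real \<tau> ^ 3 / (1 - \<mu>\<^sup>2)"
    using one_minus_mu2 by (intro divide_right_mono mult_right_mono) auto
  also have "\<dots> = \<delta> * ((1 - \<mu>) * S) / (48 * real \<tau>)"
    unfolding q_def using L_pos tau_pos one_minus_mu2 by (simp add: field_simps power_eq_if)
  also have "\<dots> \<le> \<delta> * real \<tau> / (48 * real \<tau>)"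
    using S_le delta_pos tau_pos by (intro divide_right_mono mult_left_mono) auto
  also have "\<dots> = \<delta> / 48" using tau_pos by simp
  finally show ?thesis .
qed

lemma f_deriv: "(f has_derivative (\<lambda>h. gradf x \<bullet> h)) (at x)"
proof -
  have "((\<lambda>x. \<Sum>i<N. F i x) has_derivative (\<lambda>h. \<Sum>i<N. gradF i x \<bullet> h)) (at x)"
    by (rule has_derivative_sum) (use F_diff in auto)
  then have "((\<lambda>x. (1 / real N) * (\<Sum>i<N. F i x)) has_derivative (\<lambda>h. (1 / real N) * (\<Sum>i<N. gradF i x \<bullet> h))) (at x)"
    by (rule has_derivative_mult_right)
  moreover have "(\<lambda>h. (1 / real N) * (\<Sum>i<N. gradF i x \<bullet> h)) = (\<lambda>h. gradf x \<bullet> h)"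
    unfolding gradf_def by (rule ext) (simp add: inner_sum_left)
  ultimately show ?thesis unfolding f_def by simp
qed

lemma f_descent: "f y \<le> f x + gradf x \<bullet> (y - x) + L / 2 * (norm (y - x))\<^sup>2"
  by (rule descent_lemma[OF f_deriv]) (use f_smooth in auto)

lemma gradf_avg: "gradf x = (1 / real N) *\<^sub>R (\<Sum>i<N. gradF i x)"
  unfolding gradf_def by simp

lemma step_formula:
  "\<theta> (Suc t) \<omega> = \<theta> t \<omega> - \<eta> *\<^sub>R (Pj t \<omega> *v (\<Sum>k<\<tau>. al k *\<^sub>R ((1 / real N) *\<^sub>R (\<Sum>i<N. g t i k \<omega>))))"
proof -
  have "(\<Sum>i<N. \<theta>loc t i \<tau> \<omega> - \<theta> t \<omega>) = (\<Sum>i<N. - (\<eta> *\<^sub>R (\<Sum>k<\<tau>. al k *\<^sub>R (Pj t \<omega> *v g t i k \<omega>))))"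
    by (simp add: \<theta>loc_closed al_def)
  also have "\<dots> = - (\<eta> *\<^sub>R (\<Sum>k<\<tau>. al k *\<^sub>R (Pj t \<omega> *v (\<Sum>i<N. g t i k \<omega>))))"
    by (simp add: sum_negf scaleR_sum_right mv_sum sum.swap[of _ "{..<N}"])
  finally have e: "(\<Sum>i<N. \<theta>loc t i \<tau> \<omega> - \<theta> t \<omega>) = - (\<eta> *\<^sub>R (\<Sum>k<\<tau>. al k *\<^sub>R (Pj t \<omega> *v (\<Sum>i<N. g t i k \<omega>))))" .
  show ?thesis
    unfolding \<theta>_Suc' e
    by (simp add: mv_sum matrix_vector_mult_scaleR scaleR_sum_right)
qed

end


lemma avg_norm_sq_le:
  fixes v :: "nat \<Rightarrow> 'a::real_normed_vector"
  assumes N: "N \<ge> 1"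
  shows "(norm ((1 / real N) *\<^sub>R (\<Sum>i<N. v i)))\<^sup>2 \<le> (1 / real N) * (\<Sum>i<N. (norm (v i))\<^sup>2)"
proof -
  have "(norm ((1 / real N) *\<^sub>R (\<Sum>i<N. v i)))\<^sup>2 = (1 / real N)\<^sup>2 * (norm (\<Sum>i<N. v i))\<^sup>2"
    by (simp only: norm_scaleR power_mult_distrib) simp
  also have "\<dots> \<le> (1 / real N)\<^sup>2 * (real N * (\<Sum>i<N. (norm (v i))\<^sup>2))"
    using norm_sum_sq_card[of v "{..<N}"] by (intro mult_left_mono) auto
  also have "\<dots> = (1 / real N) * (\<Sum>i<N. (norm (v i))\<^sup>2)"
    using N by (simp add: power2_eq_square)
  finally show ?thesis .
qed

context fed
begin

definition "uu t \<omega> = gradf (\<theta> t \<omega>)"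
definition "Ee t \<omega> = (\<Sum>k<\<tau>. al k *\<^sub>R ((1 / real N) *\<^sub>R (\<Sum>i<N. gradF i (\<theta>loc t i k \<omega>) - gradF i (\<theta> t \<omega>))))"
definition "Zz t \<omega> = (\<Sum>k<\<tau>. al k *\<^sub>R ((1 / real N) *\<^sub>R (\<Sum>i<N. xi t i k \<omega>)))"
definition "DR t \<omega> = (\<Sum>k<\<tau>. al k * ((1 / real N) * (\<Sum>i<N. (norm (\<theta>loc t i k \<omega> - \<theta> t \<omega>))\<^sup>2)))"

lemma Y_decomp:
  "(\<Sum>k<\<tau>. al k *\<^sub>R ((1 / real N) *\<^sub>R (\<Sum>i<N. g t i k \<omega>))) = S *\<^sub>R uu t \<omega> + Ee t \<omega> + Zz t \<omega>"
proof -
  have inner: "(1 / real N) *\<^sub>R (\<Sum>i<N. g t i k \<omega>)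
      = (1 / real N) *\<^sub>R (\<Sum>i<N. gradF i (\<theta>loc t i k \<omega>) - gradF i (\<theta> t \<omega>)) + uu t \<omega> + (1 / real N) *\<^sub>R (\<Sum>i<N. xi t i k \<omega>)" for k
  proof -
    have "(\<Sum>i<N. g t i k \<omega>) = (\<Sum>i<N. gradF i (\<theta>loc t i k \<omega>) - gradF i (\<theta> t \<omega>)) + (\<Sum>i<N. gradF i (\<theta> t \<omega>)) + (\<Sum>i<N. xi t i k \<omega>)"
      by (simp add: g_split sum.distrib[symmetric] sum_subtractf[symmetric] algebra_simps)
    then show ?thesis by (simp add: uu_def gradf_avg scaleR_add_right)
  qed
  have "(\<Sum>k<\<tau>. al k *\<^sub>R ((1 / real N) *\<^sub>R (\<Sum>i<N. g t i k \<omega>)))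
      = (\<Sum>k<\<tau>. al k *\<^sub>R ((1 / real N) *\<^sub>R (\<Sum>i<N. gradF i (\<theta>loc t i k \<omega>) - gradF i (\<theta> t \<omega>))) + al k *\<^sub>R uu t \<omega> + al k *\<^sub>R ((1 / real N) *\<^sub>R (\<Sum>i<N. xi t i k \<omega>)))"
    by (simp only: inner scaleR_add_right)
  also have "\<dots> = Ee t \<omega> + S *\<^sub>R uu t \<omega> + Zz t \<omega>"
    by (simp add: sum.distrib Ee_def Zz_def S_eq scaleR_sum_left)
  finally show ?thesis by (simp add: algebra_simps)
qed

lemma Ee_bound: "(norm (Ee t \<omega>))\<^sup>2 \<le> S * (L\<^sup>2 * DR t \<omega>)"
proof -
  define e where "e k = (1 / real N) *\<^sub>R (\<Sum>i<N. gradF i (\<theta>loc t i k \<omega>) - gradF i (\<theta> t \<omega>))" for k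
  have ek: "(norm (e k))\<^sup>2 \<le> L\<^sup>2 * ((1 / real N) * (\<Sum>i<N. (norm (\<theta>loc t i k \<omega> - \<theta> t \<omega>))\<^sup>2))" for k
  proof -
    have "(norm (e k))\<^sup>2 \<le> (1 / real N) * (\<Sum>i<N. (norm (gradF i (\<theta>loc t i k \<omega>) - gradF i (\<theta> t \<omega>)))\<^sup>2)"
      unfolding e_def by (rule avg_norm_sq_le[OF N_pos])
    also have "\<dots> \<le> (1 / real N) * (\<Sum>i<N. L\<^sup>2 * (norm (\<theta>loc t i k \<omega> - \<theta> t \<omega>))\<^sup>2)"
    proof (intro mult_left_mono sum_mono)
      fix i assume "i \<in> {..<N}"
      then have "norm (gradF i (\<theta>loc t i k \<omega>) - gradF i (\<theta> t \<omega>)) \<le> L * norm (\<theta>loc t i k \<omega> - \<theta> t \<omega>)"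
        using F_smooth by auto
      then have "(norm (gradF i (\<theta>loc t i k \<omega>) - gradF i (\<theta> t \<omega>)))\<^sup>2 \<le> (L * norm (\<theta>loc t i k \<omega> - \<theta> t \<omega>))\<^sup>2"
        by (intro power_mono) auto
      then show "(norm (gradF i (\<theta>loc t i k \<omega>) - gradF i (\<theta> t \<omega>)))\<^sup>2 \<le> L\<^sup>2 * (norm (\<theta>loc t i k \<omega> - \<theta> t \<omega>))\<^sup>2"
        by (simp add: power_mult_distrib)
    qed simp
    also have "\<dots> = L\<^sup>2 * ((1 / real N) * (\<Sum>i<N. (norm (\<theta>loc t i k \<omega> - \<theta> t \<omega>))\<^sup>2))"
      by (simp add: sum_distrib_left)
    finally show ?thesis .
  qed
  have "(norm (Ee t \<omega>))\<^sup>2 \<le> (\<Sum>k<\<tau>. al k) * (\<Sum>k<\<tau>. al k * (norm (e k))\<^sup>2)"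
    unfolding Ee_def e_def[symmetric] by (rule norm_sum_sq_weighted) (rule al_nonneg)
  also have "\<dots> \<le> S * (\<Sum>k<\<tau>. al k * (L\<^sup>2 * ((1 / real N) * (\<Sum>i<N. (norm (\<theta>loc t i k \<omega> - \<theta> t \<omega>))\<^sup>2))))"
    unfolding S_eq[symmetric] using S_pos al_nonneg ek
    by (intro mult_left_mono sum_mono) auto
  also have "\<dots> = S * (L\<^sup>2 * DR t \<omega>)"
    unfolding DR_def by (simp add: sum_distrib_left mult.left_commute)
  finally show ?thesis .
qed

lemma pathwise_descent:
  assumes st: "P t \<omega> \<in> stiefel"
  shows "f (\<theta> (Suc t) \<omega>) \<le> f (\<theta> t \<omega>) - (\<eta> * S / 2) * (norm (Pj t \<omega> *v uu t \<omega>))\<^sup>2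
     + \<eta> * L\<^sup>2 * DR t \<omega> + L * \<eta>\<^sup>2 * (norm (Zz t \<omega>))\<^sup>2
     - \<eta> * (1 - L * \<eta> * S) * ((Pj t \<omega> *v uu t \<omega>) \<bullet> Zz t \<omega>)"
proof -
  define Pr where "Pr = Pj t \<omega>"
  define th where "th = \<theta> t \<omega>"
  define u where "u = uu t \<omega>"
  define E where "E = Ee t \<omega>"
  define Z where "Z = Zz t \<omega>"
  define U where "U = Pr *v u"
  define V where "V = Pr *v E"
  define W where "W = Pr *v Z"
  have new: "\<theta> (Suc t) \<omega> - th = - (\<eta> *\<^sub>R (S *\<^sub>R U + V + W))"
    unfolding th_def step_formula Y_decomp U_def V_def W_def Pr_def u_def E_def Z_def
    by (simp add: matrix_vector_right_distrib matrix_vector_mult_scaleR)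
  have gu: "gradf th = u" unfolding u_def uu_def th_def ..
  have i1: "u \<bullet> (S *\<^sub>R U + V + W) = S * (norm U)\<^sup>2 + U \<bullet> V + U \<bullet> W"
  proof -
    have "u \<bullet> (S *\<^sub>R U + V + W) = u \<bullet> (Pr *v (S *\<^sub>R u + E + Z))"
      unfolding U_def V_def W_def by (simp add: matrix_vector_right_distrib matrix_vector_mult_scaleR)
    also have "\<dots> = U \<bullet> (Pr *v (S *\<^sub>R u + E + Z))"
      unfolding U_def Pr_def by (rule proj_inner[OF st, symmetric])
    also have "\<dots> = U \<bullet> (S *\<^sub>R U + V + W)"
      unfolding U_def V_def W_def by (simp add: matrix_vector_right_distrib matrix_vector_mult_scaleR)
    finally show ?thesis by (simp add: inner_add_right power2_norm_eq_inner)
  qed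
  have "f (\<theta> (Suc t) \<omega>) \<le> f th + gradf th \<bullet> (\<theta> (Suc t) \<omega> - th) + L / 2 * (norm (\<theta> (Suc t) \<omega> - th))\<^sup>2"
    by (rule f_descent)
  also have "\<dots> = f th + (- \<eta> * (S * (norm U)\<^sup>2 + U \<bullet> V + U \<bullet> W) + L / 2 * (\<eta>\<^sup>2 * (norm (S *\<^sub>R U + V + W))\<^sup>2))"
    unfolding new gu using eta_pos by (simp add: i1 power_mult_distrib)
  also have "\<dots> \<le> f th + (- (\<eta> * S / 2) * (norm U)\<^sup>2 + (\<eta> / S) * (norm V)\<^sup>2 + L * \<eta>\<^sup>2 * (norm W)\<^sup>2
        - \<eta> * (1 - L * \<eta> * S) * (U \<bullet> W))"
    by (intro add_left_mono descent_alg S_pos eta_pos L_pos eta_LS)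
  also have "\<dots> \<le> f th + (- (\<eta> * S / 2) * (norm U)\<^sup>2 + \<eta> * L\<^sup>2 * DR t \<omega> + L * \<eta>\<^sup>2 * (norm Z)\<^sup>2
        - \<eta> * (1 - L * \<eta> * S) * (U \<bullet> Z))"
  proof -
    have "(norm V)\<^sup>2 \<le> (norm E)\<^sup>2" unfolding V_def Pr_def
      by (intro power_mono proj_norm_le[OF st]) auto
    also have "\<dots> \<le> S * (L\<^sup>2 * DR t \<omega>)" unfolding E_def by (rule Ee_bound)
    finally have "(\<eta> / S) * (norm V)\<^sup>2 \<le> (\<eta> / S) * (S * (L\<^sup>2 * DR t \<omega>))"
      using eta_pos S_pos by (intro mult_left_mono) auto
    also have "\<dots> = \<eta> * L\<^sup>2 * DR t \<omega>" using S_pos by simp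
    finally have 1: "(\<eta> / S) * (norm V)\<^sup>2 \<le> \<eta> * L\<^sup>2 * DR t \<omega>" .
    have "(norm W)\<^sup>2 \<le> (norm Z)\<^sup>2" unfolding W_def Pr_def
      by (intro power_mono proj_norm_le[OF st]) auto
    then have 2: "L * \<eta>\<^sup>2 * (norm W)\<^sup>2 \<le> L * \<eta>\<^sup>2 * (norm Z)\<^sup>2"
      using L_pos by (intro mult_left_mono) auto
    have 3: "U \<bullet> W = U \<bullet> Z" unfolding U_def W_def Pr_def by (rule proj_inner'[OF st])
    show ?thesis using 1 2 unfolding 3 by linarith
  qed
  finally show ?thesis unfolding U_def Pr_def th_def u_def Z_def by (simp add: algebra_simps)
qed

end


lemma sum_sq_le_sq_sum:
  fixes a :: "'i \<Rightarrow> real"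
  assumes "finite I" "\<And>i. i \<in> I \<Longrightarrow> 0 \<le> a i"
  shows "(\<Sum>i\<in>I. (a i)\<^sup>2) \<le> (\<Sum>i\<in>I. a i)\<^sup>2"
proof -
  have "(\<Sum>i\<in>I. (a i)\<^sup>2) = (\<Sum>i\<in>I. a i * a i)" by (simp add: power2_eq_square)
  also have "\<dots> \<le> (\<Sum>i\<in>I. a i * (\<Sum>j\<in>I. a j))"
    using assms by (intro sum_mono mult_left_mono member_le_sum) auto
  also have "\<dots> = (\<Sum>i\<in>I. a i)\<^sup>2" by (simp add: power2_eq_square sum_distrib_right)
  finally show ?thesis .
qed

context fed
begin

lemma orth_sum_sq:
  fixes X :: "'i \<Rightarrow> 'w \<Rightarrow> real^'d"
  assumes fin: "finite I" and sq: "\<And>m. m \<in> I \<Longrightarrow> sqi (X m)"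
    and orth: "\<And>m m'. m \<in> I \<Longrightarrow> m' \<in> I \<Longrightarrow> m \<noteq> m' \<Longrightarrow> (\<integral>\<omega>. X m \<omega> \<bullet> X m' \<omega> \<partial>M) = 0"
  shows "(\<integral>\<omega>. (norm (\<Sum>m\<in>I. c m *\<^sub>R X m \<omega>))\<^sup>2 \<partial>M) = (\<Sum>m\<in>I. (c m)\<^sup>2 * (\<integral>\<omega>. (norm (X m \<omega>))\<^sup>2 \<partial>M))"
proof -
  have ii: "integrable M (\<lambda>\<omega>. c m * c m' * (X m \<omega> \<bullet> X m' \<omega>))" if "m \<in> I" "m' \<in> I" for m m'
    using sqi_inner[OF sq[OF that(1)] sq[OF that(2)]] by auto
  have "(\<lambda>\<omega>. (norm (\<Sum>m\<in>I. c m *\<^sub>R X m \<omega>))\<^sup>2) = (\<lambda>\<omega>. \<Sum>m\<in>I. \<Sum>m'\<in>I. c m * c m' * (X m \<omega> \<bullet> X m' \<omega>))"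
  proof (rule ext)
    fix \<omega>
    have "(norm (\<Sum>m\<in>I. c m *\<^sub>R X m \<omega>))\<^sup>2 = (\<Sum>m\<in>I. c m *\<^sub>R X m \<omega>) \<bullet> (\<Sum>m'\<in>I. c m' *\<^sub>R X m' \<omega>)"
      by (rule power2_norm_eq_inner)
    also have "\<dots> = (\<Sum>m\<in>I. \<Sum>m'\<in>I. (c m *\<^sub>R X m \<omega>) \<bullet> (c m' *\<^sub>R X m' \<omega>))"
      by (simp only: inner_sum_left inner_sum_right) (rule sum.swap)
    finally show "(norm (\<Sum>m\<in>I. c m *\<^sub>R X m \<omega>))\<^sup>2 = (\<Sum>m\<in>I. \<Sum>m'\<in>I. c m * c m' * (X m \<omega> \<bullet> X m' \<omega>))"
      by (simp add: ac_simps)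
  qed
  then have "(\<integral>\<omega>. (norm (\<Sum>m\<in>I. c m *\<^sub>R X m \<omega>))\<^sup>2 \<partial>M)
      = (\<Sum>m\<in>I. \<Sum>m'\<in>I. (\<integral>\<omega>. c m * c m' * (X m \<omega> \<bullet> X m' \<omega>) \<partial>M))"
    using ii by (simp add: Bochner_Integration.integral_sum integrable_sum)
  also have "\<dots> = (\<Sum>m\<in>I. \<Sum>m'\<in>I. if m' = m then (c m)\<^sup>2 * (\<integral>\<omega>. (norm (X m \<omega>))\<^sup>2 \<partial>M) else 0)"
  proof (intro sum.cong refl)
    fix m m' assume mm: "m \<in> I" "m' \<in> I"
    show "(\<integral>\<omega>. c m * c m' * (X m \<omega> \<bullet> X m' \<omega>) \<partial>M) = (if m' = m then (c m)\<^sup>2 * (\<integral>\<omega>. (norm (X m \<omega>))\<^sup>2 \<partial>M) else 0)"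
      using orth[OF mm] by (auto simp: power2_eq_square power2_norm_eq_inner[symmetric])
  qed
  also have "\<dots> = (\<Sum>m\<in>I. (c m)\<^sup>2 * (\<integral>\<omega>. (norm (X m \<omega>))\<^sup>2 \<partial>M))"
    using fin by simp
  finally show ?thesis .
qed

lemma Zz_eq: "Zz t \<omega> = (\<Sum>m\<in>{..<\<tau>} \<times> {..<N}. (al (fst m) / real N) *\<^sub>R xi t (snd m) (fst m) \<omega>)"
  unfolding Zz_def by (simp add: scaleR_sum_right sum.cartesian_product case_prod_beta)

lemma xi_orth_pairs:
  assumes m: "m \<in> {..<\<tau>} \<times> {..<N}" and m': "m' \<in> {..<\<tau>} \<times> {..<N}" and ne: "m \<noteq> m'"
  shows "(\<integral>\<omega>. xi t (snd m) (fst m) \<omega> \<bullet> xi t (snd m') (fst m') \<omega> \<partial>M) = 0"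
proof -
  obtain k i k' i' where e: "m = (k, i)" "m' = (k', i')" by (cases m, cases m')
  have b: "k < \<tau>" "i < N" "k' < \<tau>" "i' < N" using m m' e by auto
  consider "k < k'" | "k' < k" | "k = k'" by linarith
  then show ?thesis
  proof cases
    case 1 then show ?thesis using cross_step[OF b(2) b(4) 1 b(3)] e by simp
  next
    case 2
    have "(\<integral>\<omega>. xi t i' k' \<omega> \<bullet> xi t i k \<omega> \<partial>M) = 0" by (rule cross_step[OF b(4) b(2) 2 b(1)])
    then show ?thesis using e by (simp add: inner_commute)
  next
    case 3
    then have "i \<noteq> i'" using ne e by auto
    then show ?thesis using cross_client[OF b(2) b(4) _ b(1)] e 3 by simp
  qed
qed

lemma sqi_Zz: "sqi (Zz t)"
  unfolding Zz_def[abs_def] by (intro sqi_sum sqi_scaleR sqi_xi) auto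

lemma Zz_sq: "(\<integral>\<omega>. (norm (Zz t \<omega>))\<^sup>2 \<partial>M) \<le> \<sigma>L\<^sup>2 * S\<^sup>2 / real N"
proof -
  have "(\<integral>\<omega>. (norm (Zz t \<omega>))\<^sup>2 \<partial>M)
     = (\<Sum>m\<in>{..<\<tau>} \<times> {..<N}. (al (fst m) / real N)\<^sup>2 * (\<integral>\<omega>. (norm (xi t (snd m) (fst m) \<omega>))\<^sup>2 \<partial>M))"
    unfolding Zz_eq
    by (rule orth_sum_sq[where X="\<lambda>m. xi t (snd m) (fst m)"]) (auto intro!: sqi_xi xi_orth_pairs)
  also have "\<dots> \<le> (\<Sum>m\<in>{..<\<tau>} \<times> {..<N}. (al (fst m) / real N)\<^sup>2 * \<sigma>L\<^sup>2)"
    by (intro sum_mono mult_left_mono xi_sq(2)) auto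
  also have "\<dots> = (\<Sum>k<\<tau>. \<Sum>i<N. (al k / real N)\<^sup>2 * \<sigma>L\<^sup>2)"
  proof -
    have "(\<Sum>k<\<tau>. \<Sum>i<N. (al k / real N)\<^sup>2 * \<sigma>L\<^sup>2) = (\<Sum>m\<in>{..<\<tau>} \<times> {..<N}. (al (fst m) / real N)\<^sup>2 * \<sigma>L\<^sup>2)"
      by (subst sum.cartesian_product) (simp add: case_prod_beta)
    then show ?thesis by simp
  qed
  also have "\<dots> = (\<Sum>k<\<tau>. (al k)\<^sup>2) * \<sigma>L\<^sup>2 / real N"
    using N_pos by (simp add: sum_distrib_right power_divide power2_eq_square sum_divide_distrib)
  also have "\<dots> \<le> S\<^sup>2 * \<sigma>L\<^sup>2 / real N"
  proof -
    have "(\<Sum>k<\<tau>. (al k)\<^sup>2) \<le> S\<^sup>2" unfolding S_eq by (rule sum_sq_le_sq_sum) (auto intro: al_nonneg)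
    then show ?thesis using N_pos by (intro divide_right_mono mult_right_mono) auto
  qed
  finally show ?thesis by (simp add: mult.commute)
qed

lemma uu_meas_Pre: "uu t \<in> borel_measurable (Pre t)"
  unfolding uu_def[abs_def] using measurable_compose[OF \<theta>_meas_Pre gradf_meas] .

lemma sqi_uu: "sqi (uu t)"
  unfolding uu_def[abs_def] by (rule sqi_gradf[OF sqi_\<theta>])

lemma Pu_meas_Fpast: "(\<lambda>\<omega>. Pj t \<omega> *v uu t \<omega>) \<in> borel_measurable (Fpast t s)"
proof (rule mv_meas)
  show "(\<lambda>\<omega>. Pj t \<omega>) \<in> borel_measurable (Fpast t s)" by (intro proj_meas P_meas_Fpast) simp
  show "uu t \<in> borel_measurable (Fpast t s)"
    by (rule meas_mono_sets[OF _ Pre_sub_Fpast uu_meas_Pre]) simp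
qed

lemma sqi_Pu: "sqi (\<lambda>\<omega>. Pj t \<omega> *v uu t \<omega>)"
  by (rule sqi_proj[OF sqi_uu])

lemma PuZ_zero: "(\<integral>\<omega>. (Pj t \<omega> *v uu t \<omega>) \<bullet> Zz t \<omega> \<partial>M) = 0"
proof -
  have ii: "integrable M (\<lambda>\<omega>. (al (fst m) / real N) * ((Pj t \<omega> *v uu t \<omega>) \<bullet> xi t (snd m) (fst m) \<omega>))"
    if "m \<in> {..<\<tau>} \<times> {..<N}" for m
    using sqi_inner[OF sqi_Pu sqi_xi] that by auto
  have "(\<integral>\<omega>. (Pj t \<omega> *v uu t \<omega>) \<bullet> Zz t \<omega> \<partial>M)
      = (\<integral>\<omega>. (\<Sum>m\<in>{..<\<tau>} \<times> {..<N}. (al (fst m) / real N) * ((Pj t \<omega> *v uu t \<omega>) \<bullet> xi t (snd m) (fst m) \<omega>)) \<partial>M)"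
    unfolding Zz_eq by (simp add: inner_sum_right)
  also have "\<dots> = (\<Sum>m\<in>{..<\<tau>} \<times> {..<N}. (\<integral>\<omega>. (al (fst m) / real N) * ((Pj t \<omega> *v uu t \<omega>) \<bullet> xi t (snd m) (fst m) \<omega>) \<partial>M))"
    by (rule Bochner_Integration.integral_sum) (rule ii)
  also have "\<dots> = 0"
  proof (rule sum.neutral, intro ballI)
    fix m assume m: "m \<in> {..<\<tau>} \<times> {..<N}"
    have "(\<integral>\<omega>. (Pj t \<omega> *v uu t \<omega>) \<bullet> xi t (snd m) (fst m) \<omega> \<partial>M) = 0"
      by (rule noise_orth_vec[OF _ _ Pu_meas_Fpast sqi_Pu]) (use m in auto)
    then show "(\<integral>\<omega>. (al (fst m) / real N) * ((Pj t \<omega> *v uu t \<omega>) \<bullet> xi t (snd m) (fst m) \<omega>) \<partial>M) = 0"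
      by simp
  qed
  finally show ?thesis .
qed

lemma Pu_sq: "(\<integral>\<omega>. (norm (Pj t \<omega> *v uu t \<omega>))\<^sup>2 \<partial>M) = \<delta> * (\<integral>\<omega>. (norm (uu t \<omega>))\<^sup>2 \<partial>M)"
proof -
  have "(\<integral>\<omega>. (norm (Pj t \<omega> *v uu t \<omega>))\<^sup>2 \<partial>M) = (\<integral>\<omega>. uu t \<omega> \<bullet> (Pj t \<omega> *v uu t \<omega>) \<partial>M)"
  proof (rule integral_cong_AE)
    show "(\<lambda>\<omega>. (norm (Pj t \<omega> *v uu t \<omega>))\<^sup>2) \<in> borel_measurable M"
      using sqiD(1)[OF sqi_Pu] by measurable
    show "(\<lambda>\<omega>. uu t \<omega> \<bullet> (Pj t \<omega> *v uu t \<omega>)) \<in> borel_measurable M"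
      using sqiD(1)[OF sqi_Pu] sqiD(1)[OF sqi_uu] by (intro borel_measurable_inner)
    show "AE \<omega> in M. (norm (Pj t \<omega> *v uu t \<omega>))\<^sup>2 = uu t \<omega> \<bullet> (Pj t \<omega> *v uu t \<omega>)"
      using AE_stiefel[of t] by eventually_elim (rule proj_norm_sq)
  qed
  also have "\<dots> = \<delta> * (\<integral>\<omega>. (norm (uu t \<omega>))\<^sup>2 \<partial>M)"
    by (rule E_quad[OF uu_meas_Pre sqi_uu])
  finally show ?thesis .
qed

end


context fed
begin

definition "\<beta> = \<eta>\<^sup>2 * (real \<tau>)\<^sup>2 / (1 - \<mu>\<^sup>2)"

lemma beta_nonneg: "0 \<le> \<beta>" unfolding \<beta>_def using one_minus_mu2 by simp

lemma g_norm_bound: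
  assumes i: "i < N"
  shows "(norm (g t i j \<omega>))\<^sup>2 \<le> 2 * (norm (xi t i j \<omega>))\<^sup>2 + 4 * L\<^sup>2 * (norm (\<theta>loc t i j \<omega> - \<theta> t \<omega>))\<^sup>2
           + 4 * (norm (gradF i (\<theta> t \<omega>)))\<^sup>2"
proof -
  have a: "norm (gradF i (\<theta>loc t i j \<omega>)) \<le> L * norm (\<theta>loc t i j \<omega> - \<theta> t \<omega>) + norm (gradF i (\<theta> t \<omega>))"
  proof -
    have "norm (gradF i (\<theta>loc t i j \<omega>)) \<le> norm (gradF i (\<theta>loc t i j \<omega>) - gradF i (\<theta> t \<omega>)) + norm (gradF i (\<theta> t \<omega>))"
      using norm_triangle_sub[of "gradF i (\<theta>loc t i j \<omega>)" "gradF i (\<theta> t \<omega>)"] by linarith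
    also have "\<dots> \<le> L * norm (\<theta>loc t i j \<omega> - \<theta> t \<omega>) + norm (gradF i (\<theta> t \<omega>))"
      using F_smooth i by (intro add_right_mono) auto
    finally show ?thesis .
  qed
  have b: "(norm (gradF i (\<theta>loc t i j \<omega>)))\<^sup>2 \<le> 2 * L\<^sup>2 * (norm (\<theta>loc t i j \<omega> - \<theta> t \<omega>))\<^sup>2 + 2 * (norm (gradF i (\<theta> t \<omega>)))\<^sup>2"
  proof -
    have "(norm (gradF i (\<theta>loc t i j \<omega>)))\<^sup>2 \<le> (L * norm (\<theta>loc t i j \<omega> - \<theta> t \<omega>) + norm (gradF i (\<theta> t \<omega>)))\<^sup>2"
      using a by (intro power_mono) auto
    also have "\<dots> \<le> 2 * (L * norm (\<theta>loc t i j \<omega> - \<theta> t \<omega>))\<^sup>2 + 2 * (norm (gradF i (\<theta> t \<omega>)))\<^sup>2"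
      by (rule sq_sum_le)
    finally show ?thesis by (simp add: power_mult_distrib)
  qed
  have "(norm (g t i j \<omega>))\<^sup>2 \<le> (norm (xi t i j \<omega>) + norm (gradF i (\<theta>loc t i j \<omega>)))\<^sup>2"
    unfolding g_split[of t i j \<omega>] by (intro power_mono) (auto simp: norm_triangle_ineq add.commute)
  also have "\<dots> \<le> 2 * (norm (xi t i j \<omega>))\<^sup>2 + 2 * (norm (gradF i (\<theta>loc t i j \<omega>)))\<^sup>2"
    by (rule sq_sum_le)
  finally show ?thesis using b by linarith
qed

lemma drift_path:
  assumes st: "P t \<omega> \<in> stiefel" and k: "k \<le> \<tau>" and i: "i < N"
  shows "(norm (\<theta>loc t i k \<omega> - \<theta> t \<omega>))\<^sup>2 \<le> \<beta> * (\<Sum>j<k. 2 * (norm (xi t i j \<omega>))\<^sup>2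
      + 4 * L\<^sup>2 * (norm (\<theta>loc t i j \<omega> - \<theta> t \<omega>))\<^sup>2 + 4 * (norm (gradF i (\<theta> t \<omega>)))\<^sup>2)"
proof -
  define Q where "Q j = 2 * (norm (xi t i j \<omega>))\<^sup>2 + 4 * L\<^sup>2 * (norm (\<theta>loc t i j \<omega> - \<theta> t \<omega>))\<^sup>2
      + 4 * (norm (gradF i (\<theta> t \<omega>)))\<^sup>2" for j
  have Q0: "0 \<le> Q j" for j unfolding Q_def by simp
  have c: "real \<tau> / (1 - \<mu>\<^sup>2) \<ge> 0" using one_minus_mu2 by simp
  have trm: "(norm (acoef \<mu> k j *\<^sub>R (Pj t \<omega> *v g t i j \<omega>)))\<^sup>2 \<le> real \<tau> / (1 - \<mu>\<^sup>2) * Q j" if j: "j < k" for j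
  proof -
    have "(norm (acoef \<mu> k j *\<^sub>R (Pj t \<omega> *v g t i j \<omega>)))\<^sup>2 = (acoef \<mu> k j)\<^sup>2 * (norm (Pj t \<omega> *v g t i j \<omega>))\<^sup>2"
      by (simp add: power_mult_distrib)
    also have "\<dots> \<le> (real \<tau> / (1 - \<mu>\<^sup>2)) * (norm (g t i j \<omega>))\<^sup>2"
    proof (rule mult_mono)
      have "(acoef \<mu> k j)\<^sup>2 \<le> real (k - j) / (1 - \<mu>\<^sup>2)" using mu by (rule acoef_sq_le)
      also have "\<dots> \<le> real \<tau> / (1 - \<mu>\<^sup>2)" using one_minus_mu2 k by (intro divide_right_mono) auto
      finally show "(acoef \<mu> k j)\<^sup>2 \<le> real \<tau> / (1 - \<mu>\<^sup>2)" .
      show "(norm (Pj t \<omega> *v g t i j \<omega>))\<^sup>2 \<le> (norm (g t i j \<omega>))\<^sup>2"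
        by (intro power_mono proj_norm_le[OF st]) auto
    qed (use c in auto)
    also have "\<dots> \<le> real \<tau> / (1 - \<mu>\<^sup>2) * Q j"
      unfolding Q_def using g_norm_bound[OF i] c by (intro mult_left_mono) auto
    finally show ?thesis .
  qed
  have "(norm (\<theta>loc t i k \<omega> - \<theta> t \<omega>))\<^sup>2 = \<eta>\<^sup>2 * (norm (\<Sum>j<k. acoef \<mu> k j *\<^sub>R (Pj t \<omega> *v g t i j \<omega>)))\<^sup>2"
    unfolding \<theta>loc_closed using eta_pos by (simp add: power_mult_distrib)
  also have "\<dots> \<le> \<eta>\<^sup>2 * (real k * (\<Sum>j<k. (norm (acoef \<mu> k j *\<^sub>R (Pj t \<omega> *v g t i j \<omega>)))\<^sup>2))"
  proof -
    have "(norm (\<Sum>j<k. acoef \<mu> k j *\<^sub>R (Pj t \<omega> *v g t i j \<omega>)))\<^sup>2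
        \<le> real k * (\<Sum>j<k. (norm (acoef \<mu> k j *\<^sub>R (Pj t \<omega> *v g t i j \<omega>)))\<^sup>2)"
      using norm_sum_sq_card[of "\<lambda>j. acoef \<mu> k j *\<^sub>R (Pj t \<omega> *v g t i j \<omega>)" "{..<k}"]
      by (simp only: card_lessThan)
    then show ?thesis by (intro mult_left_mono) auto
  qed
  also have "\<dots> \<le> \<eta>\<^sup>2 * (real \<tau> * (\<Sum>j<k. real \<tau> / (1 - \<mu>\<^sup>2) * Q j))"
  proof -
    have s1: "(\<Sum>j<k. (norm (acoef \<mu> k j *\<^sub>R (Pj t \<omega> *v g t i j \<omega>)))\<^sup>2) \<le> (\<Sum>j<k. real \<tau> / (1 - \<mu>\<^sup>2) * Q j)"
      by (rule sum_mono) (rule trm, simp)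
    have s0: "0 \<le> (\<Sum>j<k. real \<tau> / (1 - \<mu>\<^sup>2) * Q j)"
      using c Q0 by (intro sum_nonneg mult_nonneg_nonneg) auto
    have "real k * (\<Sum>j<k. (norm (acoef \<mu> k j *\<^sub>R (Pj t \<omega> *v g t i j \<omega>)))\<^sup>2) \<le> real \<tau> * (\<Sum>j<k. real \<tau> / (1 - \<mu>\<^sup>2) * Q j)"
      using s1 s0 k by (intro mult_mono sum_nonneg) auto
    then show ?thesis by (intro mult_left_mono) auto
  qed
  also have "\<dots> = \<beta> * (\<Sum>j<k. Q j)"
    unfolding \<beta>_def by (simp add: sum_distrib_left power2_eq_square field_simps sum_divide_distrib)
  finally show ?thesis unfolding Q_def .
qed

lemma sqi_D: "i < N \<Longrightarrow> k \<le> \<tau> \<Longrightarrow> sqi (\<lambda>\<omega>. \<theta>loc t i k \<omega> - \<theta> t \<omega>)"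
  by (intro sqi_diff sqi_\<theta>loc sqi_\<theta>)

lemma sqi_gradF\<theta>: "i < N \<Longrightarrow> sqi (\<lambda>\<omega>. gradF i (\<theta> t \<omega>))"
  by (intro sqi_gradF sqi_\<theta>)

lemma drift_exp:
  assumes k: "k \<le> \<tau>" and i: "i < N"
  shows "(\<integral>\<omega>. (norm (\<theta>loc t i k \<omega> - \<theta> t \<omega>))\<^sup>2 \<partial>M) \<le> \<beta> * (\<Sum>j<k. 2 * \<sigma>L\<^sup>2
      + 4 * L\<^sup>2 * (\<integral>\<omega>. (norm (\<theta>loc t i j \<omega> - \<theta> t \<omega>))\<^sup>2 \<partial>M) + 4 * (\<integral>\<omega>. (norm (gradF i (\<theta> t \<omega>)))\<^sup>2 \<partial>M))"
proof -
  have ij: "j < k \<Longrightarrow> j < \<tau>" for j using k by simp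
  have iQ: "integrable M (\<lambda>\<omega>. 2 * (norm (xi t i j \<omega>))\<^sup>2 + 4 * L\<^sup>2 * (norm (\<theta>loc t i j \<omega> - \<theta> t \<omega>))\<^sup>2
      + 4 * (norm (gradF i (\<theta> t \<omega>)))\<^sup>2)" if "j < k" for j
    using sqi_norm_sq[OF sqi_xi[OF i ij[OF that]]] sqi_norm_sq[OF sqi_D[OF i, of j]] sqi_norm_sq[OF sqi_gradF\<theta>[OF i]] that k
    by auto
  have "(\<integral>\<omega>. (norm (\<theta>loc t i k \<omega> - \<theta> t \<omega>))\<^sup>2 \<partial>M) \<le> (\<integral>\<omega>. \<beta> * (\<Sum>j<k. 2 * (norm (xi t i j \<omega>))\<^sup>2
      + 4 * L\<^sup>2 * (norm (\<theta>loc t i j \<omega> - \<theta> t \<omega>))\<^sup>2 + 4 * (norm (gradF i (\<theta> t \<omega>)))\<^sup>2) \<partial>M)"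
  proof (rule integral_mono_AE)
    show "integrable M (\<lambda>\<omega>. (norm (\<theta>loc t i k \<omega> - \<theta> t \<omega>))\<^sup>2)" by (rule sqi_norm_sq[OF sqi_D[OF i k]])
    show "integrable M (\<lambda>\<omega>. \<beta> * (\<Sum>j<k. 2 * (norm (xi t i j \<omega>))\<^sup>2
      + 4 * L\<^sup>2 * (norm (\<theta>loc t i j \<omega> - \<theta> t \<omega>))\<^sup>2 + 4 * (norm (gradF i (\<theta> t \<omega>)))\<^sup>2))"
      using iQ by auto
    show "AE \<omega> in M. (norm (\<theta>loc t i k \<omega> - \<theta> t \<omega>))\<^sup>2 \<le> \<beta> * (\<Sum>j<k. 2 * (norm (xi t i j \<omega>))\<^sup>2
      + 4 * L\<^sup>2 * (norm (\<theta>loc t i j \<omega> - \<theta> t \<omega>))\<^sup>2 + 4 * (norm (gradF i (\<theta> t \<omega>)))\<^sup>2)"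
      using AE_stiefel[of t] by eventually_elim (rule drift_path[OF _ k i])
  qed
  also have "\<dots> = \<beta> * (\<Sum>j<k. 2 * (\<integral>\<omega>. (norm (xi t i j \<omega>))\<^sup>2 \<partial>M)
      + 4 * L\<^sup>2 * (\<integral>\<omega>. (norm (\<theta>loc t i j \<omega> - \<theta> t \<omega>))\<^sup>2 \<partial>M) + 4 * (\<integral>\<omega>. (norm (gradF i (\<theta> t \<omega>)))\<^sup>2 \<partial>M))"
  proof -
    have "(\<integral>\<omega>. (\<Sum>j<k. 2 * (norm (xi t i j \<omega>))\<^sup>2
      + 4 * L\<^sup>2 * (norm (\<theta>loc t i j \<omega> - \<theta> t \<omega>))\<^sup>2 + 4 * (norm (gradF i (\<theta> t \<omega>)))\<^sup>2) \<partial>M)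
      = (\<Sum>j<k. (\<integral>\<omega>. 2 * (norm (xi t i j \<omega>))\<^sup>2
      + 4 * L\<^sup>2 * (norm (\<theta>loc t i j \<omega> - \<theta> t \<omega>))\<^sup>2 + 4 * (norm (gradF i (\<theta> t \<omega>)))\<^sup>2 \<partial>M))"
      by (rule Bochner_Integration.integral_sum) (use iQ in auto)
    also have "\<dots> = (\<Sum>j<k. 2 * (\<integral>\<omega>. (norm (xi t i j \<omega>))\<^sup>2 \<partial>M)
      + 4 * L\<^sup>2 * (\<integral>\<omega>. (norm (\<theta>loc t i j \<omega> - \<theta> t \<omega>))\<^sup>2 \<partial>M) + 4 * (\<integral>\<omega>. (norm (gradF i (\<theta> t \<omega>)))\<^sup>2 \<partial>M))"
    proof (rule sum.cong[OF refl])
      fix j assume "j \<in> {..<k}"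
      then have j: "j < k" by simp
      have i1: "integrable M (\<lambda>\<omega>. (norm (xi t i j \<omega>))\<^sup>2)" by (rule sqi_norm_sq[OF sqi_xi[OF i ij[OF j]]])
      have i2: "integrable M (\<lambda>\<omega>. (norm (\<theta>loc t i j \<omega> - \<theta> t \<omega>))\<^sup>2)" using j k by (intro sqi_norm_sq sqi_D i) auto
      have i3: "integrable M (\<lambda>\<omega>. (norm (gradF i (\<theta> t \<omega>)))\<^sup>2)" by (rule sqi_norm_sq[OF sqi_gradF\<theta>[OF i]])
      show "(\<integral>\<omega>. 2 * (norm (xi t i j \<omega>))\<^sup>2 + 4 * L\<^sup>2 * (norm (\<theta>loc t i j \<omega> - \<theta> t \<omega>))\<^sup>2 + 4 * (norm (gradF i (\<theta> t \<omega>)))\<^sup>2 \<partial>M)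
        = 2 * (\<integral>\<omega>. (norm (xi t i j \<omega>))\<^sup>2 \<partial>M) + 4 * L\<^sup>2 * (\<integral>\<omega>. (norm (\<theta>loc t i j \<omega> - \<theta> t \<omega>))\<^sup>2 \<partial>M) + 4 * (\<integral>\<omega>. (norm (gradF i (\<theta> t \<omega>)))\<^sup>2 \<partial>M)"
        using i1 i2 i3 by (simp add: Bochner_Integration.integral_add)
    qed
    finally show ?thesis by simp
  qed
  also have "\<dots> \<le> \<beta> * (\<Sum>j<k. 2 * \<sigma>L\<^sup>2
      + 4 * L\<^sup>2 * (\<integral>\<omega>. (norm (\<theta>loc t i j \<omega> - \<theta> t \<omega>))\<^sup>2 \<partial>M) + 4 * (\<integral>\<omega>. (norm (gradF i (\<theta> t \<omega>)))\<^sup>2 \<partial>M))"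
    using beta_nonneg xi_sq(2)[OF i ij] by (intro mult_left_mono sum_mono add_right_mono) auto
  finally show ?thesis .
qed

definition "dd t k = (1 / real N) * (\<Sum>i<N. (\<integral>\<omega>. (norm (\<theta>loc t i k \<omega> - \<theta> t \<omega>))\<^sup>2 \<partial>M))"
definition "HH t = (1 / real N) * (\<Sum>i<N. (\<integral>\<omega>. (norm (gradF i (\<theta> t \<omega>)))\<^sup>2 \<partial>M))"

lemma dd_rec:
  assumes k: "k \<le> \<tau>"
  shows "dd t k \<le> \<beta> * (\<Sum>j<k. 2 * \<sigma>L\<^sup>2 + 4 * L\<^sup>2 * dd t j + 4 * HH t)"
proof -
  have "dd t k \<le> (1 / real N) * (\<Sum>i<N. \<beta> * (\<Sum>j<k. 2 * \<sigma>L\<^sup>2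
      + 4 * L\<^sup>2 * (\<integral>\<omega>. (norm (\<theta>loc t i j \<omega> - \<theta> t \<omega>))\<^sup>2 \<partial>M) + 4 * (\<integral>\<omega>. (norm (gradF i (\<theta> t \<omega>)))\<^sup>2 \<partial>M)))"
    unfolding dd_def by (intro mult_left_mono sum_mono drift_exp[OF k]) auto
  also have "\<dots> = \<beta> * (\<Sum>j<k. 2 * \<sigma>L\<^sup>2 + 4 * L\<^sup>2 * dd t j + 4 * HH t)"
    unfolding dd_def HH_def using N_pos
    by (simp add: sum.distrib sum_distrib_left sum_distrib_right sum.swap[of _ "{..<N}"] field_simps sum_divide_distrib)
  finally show ?thesis .
qed

lemma kappa_small: "4 * \<beta> * real \<tau> * L\<^sup>2 \<le> 1 / 2"
proof -
  have "\<beta> * real \<tau> * L\<^sup>2 = \<eta>\<^sup>2 * L\<^sup>2 * real \<tau> ^ 3 / (1 - \<mu>\<^sup>2)"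
    unfolding \<beta>_def by (simp add: power2_eq_square power3_eq_cube)
  also have "\<dots> \<le> \<delta> / 48" by (rule kappa_le)
  also have "\<dots> \<le> 1 / 48" using delta_le1 by simp
  finally show ?thesis by simp
qed

lemma dd_bound: "k \<le> \<tau> \<Longrightarrow> dd t k \<le> 2 * \<beta> * real \<tau> * (2 * \<sigma>L\<^sup>2 + 4 * HH t)"
proof (induction k rule: less_induct)
  case (less k)
  define B where "B = 2 * \<beta> * real \<tau> * (2 * \<sigma>L\<^sup>2 + 4 * HH t)"
  have HH0: "0 \<le> HH t" unfolding HH_def by (intro mult_nonneg_nonneg sum_nonneg integral_nonneg_AE) auto
  have B0: "0 \<le> B" unfolding B_def using beta_nonneg HH0 by simp
  have IH: "dd t j \<le> B" if "j < k" for j using less.IH[of j] less.prems that unfolding B_def by simp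
  have "dd t k \<le> \<beta> * (\<Sum>j<k. 2 * \<sigma>L\<^sup>2 + 4 * L\<^sup>2 * dd t j + 4 * HH t)" by (rule dd_rec[OF less.prems])
  also have "\<dots> \<le> \<beta> * (\<Sum>j<k. 2 * \<sigma>L\<^sup>2 + 4 * L\<^sup>2 * B + 4 * HH t)"
    using beta_nonneg IH by (intro mult_left_mono sum_mono add_right_mono add_left_mono) auto
  also have "\<dots> = \<beta> * real k * (2 * \<sigma>L\<^sup>2 + 4 * HH t) + (4 * \<beta> * real k * L\<^sup>2) * B"
    by (simp add: algebra_simps)
  also have "\<dots> \<le> \<beta> * real \<tau> * (2 * \<sigma>L\<^sup>2 + 4 * HH t) + (4 * \<beta> * real \<tau> * L\<^sup>2) * B"
    using less.prems beta_nonneg HH0 B0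
    by (intro add_mono mult_right_mono mult_left_mono) auto
  also have "\<dots> \<le> \<beta> * real \<tau> * (2 * \<sigma>L\<^sup>2 + 4 * HH t) + (1 / 2) * B"
    using kappa_small B0 by (intro add_left_mono mult_right_mono) auto
  also have "\<dots> = B" unfolding B_def by simp
  finally show ?case unfolding B_def .
qed

lemma HH_bound: "HH t \<le> (\<integral>\<omega>. (norm (uu t \<omega>))\<^sup>2 \<partial>M) + \<sigma>G\<^sup>2"
proof -
  have ii: "integrable M (\<lambda>\<omega>. (norm (gradF i (\<theta> t \<omega>)))\<^sup>2)" if "i < N" for i
    by (rule sqi_norm_sq[OF sqi_gradF\<theta>[OF that]])
  have "HH t = (\<integral>\<omega>. (1 / real N) * (\<Sum>i<N. (norm (gradF i (\<theta> t \<omega>)))\<^sup>2) \<partial>M)"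
  proof -
    have "(\<integral>\<omega>. (\<Sum>i<N. (norm (gradF i (\<theta> t \<omega>)))\<^sup>2) \<partial>M) = (\<Sum>i<N. (\<integral>\<omega>. (norm (gradF i (\<theta> t \<omega>)))\<^sup>2 \<partial>M))"
      by (rule Bochner_Integration.integral_sum) (use ii in auto)
    then show ?thesis unfolding HH_def by (simp only: integral_mult_right_zero)
  qed
  also have "\<dots> \<le> (\<integral>\<omega>. (norm (uu t \<omega>))\<^sup>2 + \<sigma>G\<^sup>2 \<partial>M)"
  proof (rule integral_mono)
    show "integrable M (\<lambda>\<omega>. (1 / real N) * (\<Sum>i<N. (norm (gradF i (\<theta> t \<omega>)))\<^sup>2))"
      by (intro Bochner_Integration.integrable_mult_right Bochner_Integration.integrable_sum ii) simp
    show "integrable M (\<lambda>\<omega>. (norm (uu t \<omega>))\<^sup>2 + \<sigma>G\<^sup>2)" using sqi_norm_sq[OF sqi_uu] by auto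
    fix \<omega>
    have "(1 / real N) * (\<Sum>i<N. (norm (gradF i (\<theta> t \<omega>)))\<^sup>2)
        = (norm (uu t \<omega>))\<^sup>2 + (1 / real N) * (\<Sum>i<N. (norm (gradF i (\<theta> t \<omega>) - uu t \<omega>))\<^sup>2)"
      unfolding uu_def gradf_avg by (rule avg_sq_decomp[OF N_pos])
    also have "\<dots> \<le> (norm (uu t \<omega>))\<^sup>2 + (1 / real N) * (\<Sum>i<N. \<sigma>G\<^sup>2)"
      using hetero unfolding uu_def by (intro add_left_mono mult_left_mono sum_mono) auto
    also have "\<dots> = (norm (uu t \<omega>))\<^sup>2 + \<sigma>G\<^sup>2" using N_pos by simp
    finally show "(1 / real N) * (\<Sum>i<N. (norm (gradF i (\<theta> t \<omega>)))\<^sup>2) \<le> (norm (uu t \<omega>))\<^sup>2 + \<sigma>G\<^sup>2" .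
  qed
  also have "\<dots> = (\<integral>\<omega>. (norm (uu t \<omega>))\<^sup>2 \<partial>M) + \<sigma>G\<^sup>2"
    using sqi_norm_sq[OF sqi_uu] by (simp add: prob_space)
  finally show ?thesis .
qed

lemma D_int: "i < N \<Longrightarrow> k \<le> \<tau> \<Longrightarrow> integrable M (\<lambda>\<omega>. (norm (\<theta>loc t i k \<omega> - \<theta> t \<omega>))\<^sup>2)"
  by (rule sqi_norm_sq[OF sqi_D])

lemma DR_int: "integrable M (DR t)"
  unfolding DR_def[abs_def]
  by (intro Bochner_Integration.integrable_sum Bochner_Integration.integrable_mult_right D_int) auto

lemma DR_exp: "(\<integral>\<omega>. DR t \<omega> \<partial>M) \<le> S * (2 * \<beta> * real \<tau> * (2 * \<sigma>L\<^sup>2 + 4 * HH t))"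
proof -
  have "(\<integral>\<omega>. DR t \<omega> \<partial>M) = (\<Sum>k<\<tau>. (\<integral>\<omega>. al k * ((1 / real N) * (\<Sum>i<N. (norm (\<theta>loc t i k \<omega> - \<theta> t \<omega>))\<^sup>2)) \<partial>M))"
    unfolding DR_def
    by (rule Bochner_Integration.integral_sum) (intro Bochner_Integration.integrable_sum Bochner_Integration.integrable_mult_right D_int; simp)
  also have "\<dots> = (\<Sum>k<\<tau>. al k * dd t k)"
  proof (rule sum.cong[OF refl])
    fix k assume "k \<in> {..<\<tau>}"
    then have k: "k \<le> \<tau>" by simp
    have "(\<integral>\<omega>. (\<Sum>i<N. (norm (\<theta>loc t i k \<omega> - \<theta> t \<omega>))\<^sup>2) \<partial>M) = (\<Sum>i<N. (\<integral>\<omega>. (norm (\<theta>loc t i k \<omega> - \<theta> t \<omega>))\<^sup>2 \<partial>M))"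
      by (rule Bochner_Integration.integral_sum) (use D_int k in auto)
    then show "(\<integral>\<omega>. al k * ((1 / real N) * (\<Sum>i<N. (norm (\<theta>loc t i k \<omega> - \<theta> t \<omega>))\<^sup>2)) \<partial>M) = al k * dd t k"
      unfolding dd_def by (simp only: integral_mult_right_zero)
  qed
  finally have "(\<integral>\<omega>. DR t \<omega> \<partial>M) = (\<Sum>k<\<tau>. al k * dd t k)" .
  also have "\<dots> \<le> (\<Sum>k<\<tau>. al k * (2 * \<beta> * real \<tau> * (2 * \<sigma>L\<^sup>2 + 4 * HH t)))"
    using al_nonneg by (intro sum_mono mult_left_mono dd_bound) auto
  also have "\<dots> = S * (2 * \<beta> * real \<tau> * (2 * \<sigma>L\<^sup>2 + 4 * HH t))"
    unfolding S_eq by (simp add: sum_distrib_right)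
  finally show ?thesis .
qed

end


context fed
begin

lemma f_meas: "f \<in> borel_measurable borel"
proof (rule borel_measurable_continuous_onI)
  show "continuous_on UNIV f"
    by (intro continuous_at_imp_continuous_on ballI has_derivative_continuous[OF f_deriv])
qed

lemma f_int:
  assumes X: "sqi X"
  shows "integrable M (\<lambda>\<omega>. f (X \<omega>))"
proof -
  define A where "A = \<bar>fstar\<bar> + \<bar>f 0\<bar> + norm (gradf 0)"
  define B where "B = norm (gradf 0) + L / 2"
  have bnd: "\<bar>f x\<bar> \<le> A + B * (norm x)\<^sup>2" for x
  proof -
    have up: "f x \<le> f 0 + gradf 0 \<bullet> x + L / 2 * (norm x)\<^sup>2" using f_descent[of x 0] by simp
    have "gradf 0 \<bullet> x \<le> norm (gradf 0) * norm x" by (rule norm_cauchy_schwarz)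
    also have "\<dots> \<le> norm (gradf 0) * (1 + (norm x)\<^sup>2)"
    proof (rule mult_left_mono)
      show "norm x \<le> 1 + (norm x)\<^sup>2"
      proof (cases "norm x \<le> 1")
        case True then show ?thesis by (simp add: add_increasing2)
      next
        case False
        then have "norm x * 1 \<le> norm x * norm x" by (intro mult_left_mono) auto
        then show ?thesis by (simp add: power2_eq_square)
      qed
    qed simp
    finally have g: "gradf 0 \<bullet> x \<le> norm (gradf 0) * (1 + (norm x)\<^sup>2)" .
    have lo: "fstar \<le> f x" using f_lower by auto
    have "f x \<le> A + B * (norm x)\<^sup>2" using up g unfolding A_def B_def by (simp add: algebra_simps)
    moreover have "- f x \<le> A + B * (norm x)\<^sup>2"
    proof -
      have "0 \<le> B * (norm x)\<^sup>2" unfolding B_def using L_pos by simp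
      moreover have "- fstar \<le> \<bar>fstar\<bar>" "0 \<le> \<bar>f 0\<bar>" "0 \<le> norm (gradf 0)" by auto
      ultimately show ?thesis using lo unfolding A_def by linarith
    qed
    ultimately show ?thesis by linarith
  qed
  show ?thesis
  proof (rule Bochner_Integration.integrable_bound)
    show "integrable M (\<lambda>\<omega>. A + B * (norm (X \<omega>))\<^sup>2)" using sqi_norm_sq[OF X] by auto
    show "(\<lambda>\<omega>. f (X \<omega>)) \<in> borel_measurable M" using measurable_compose[OF sqiD(1)[OF X] f_meas] .
    show "AE \<omega> in M. norm (f (X \<omega>)) \<le> norm (A + B * (norm (X \<omega>))\<^sup>2)"
      using bnd by (intro AE_I2) (auto intro: order_trans[OF _ abs_ge_self])
  qed
qed

definition "U2 t = (\<integral>\<omega>. (norm (uu t \<omega>))\<^sup>2 \<partial>M)"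
definition "kap = \<beta> * real \<tau> * L\<^sup>2"
definition "Cst = \<eta> * S * (2 * kap * (2 * \<sigma>L\<^sup>2 + 4 * \<sigma>G\<^sup>2)) + L * \<eta>\<^sup>2 * (\<sigma>L\<^sup>2 * S\<^sup>2 / real N)"

lemma kap_eq: "kap = \<eta>\<^sup>2 * L\<^sup>2 * real \<tau> ^ 3 / (1 - \<mu>\<^sup>2)"
  unfolding kap_def \<beta>_def by (simp add: power2_eq_square power3_eq_cube)

lemma kap_le: "kap \<le> \<delta> / 48" unfolding kap_eq by (rule kappa_le)

lemma kap_nonneg: "0 \<le> kap" unfolding kap_def using beta_nonneg by simp

lemma U2_nonneg: "0 \<le> U2 t" unfolding U2_def by (intro integral_nonneg_AE) auto

lemma round_ineq:
  "(\<integral>\<omega>. f (\<theta> (Suc t) \<omega>) \<partial>M) \<le> (\<integral>\<omega>. f (\<theta> t \<omega>) \<partial>M) - (\<eta> * S * \<delta> / 3) * U2 t + Cst"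
proof -
  define x where "x = L * \<eta> * S"
  have i1: "integrable M (\<lambda>\<omega>. f (\<theta> t \<omega>))" by (rule f_int[OF sqi_\<theta>])
  have i2: "integrable M (\<lambda>\<omega>. (norm (Pj t \<omega> *v uu t \<omega>))\<^sup>2)" by (rule sqi_norm_sq[OF sqi_Pu])
  have i3: "integrable M (DR t)" by (rule DR_int)
  have i4: "integrable M (\<lambda>\<omega>. (norm (Zz t \<omega>))\<^sup>2)" by (rule sqi_norm_sq[OF sqi_Zz])
  have i5: "integrable M (\<lambda>\<omega>. (Pj t \<omega> *v uu t \<omega>) \<bullet> Zz t \<omega>)" by (rule sqi_inner[OF sqi_Pu sqi_Zz])
  have "(\<integral>\<omega>. f (\<theta> (Suc t) \<omega>) \<partial>M) \<le> (\<integral>\<omega>. f (\<theta> t \<omega>) - (\<eta> * S / 2) * (norm (Pj t \<omega> *v uu t \<omega>))\<^sup>2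
     + \<eta> * L\<^sup>2 * DR t \<omega> + L * \<eta>\<^sup>2 * (norm (Zz t \<omega>))\<^sup>2
     - \<eta> * (1 - x) * ((Pj t \<omega> *v uu t \<omega>) \<bullet> Zz t \<omega>) \<partial>M)"
  proof (rule integral_mono_AE)
    show "integrable M (\<lambda>\<omega>. f (\<theta> (Suc t) \<omega>))" by (rule f_int[OF sqi_\<theta>])
    show "integrable M (\<lambda>\<omega>. f (\<theta> t \<omega>) - (\<eta> * S / 2) * (norm (Pj t \<omega> *v uu t \<omega>))\<^sup>2
     + \<eta> * L\<^sup>2 * DR t \<omega> + L * \<eta>\<^sup>2 * (norm (Zz t \<omega>))\<^sup>2
     - \<eta> * (1 - x) * ((Pj t \<omega> *v uu t \<omega>) \<bullet> Zz t \<omega>))"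
      using i1 i2 i3 i4 i5 by auto
    show "AE \<omega> in M. f (\<theta> (Suc t) \<omega>) \<le> f (\<theta> t \<omega>) - (\<eta> * S / 2) * (norm (Pj t \<omega> *v uu t \<omega>))\<^sup>2
     + \<eta> * L\<^sup>2 * DR t \<omega> + L * \<eta>\<^sup>2 * (norm (Zz t \<omega>))\<^sup>2
     - \<eta> * (1 - x) * ((Pj t \<omega> *v uu t \<omega>) \<bullet> Zz t \<omega>)"
      using AE_stiefel[of t] unfolding x_def by eventually_elim (rule pathwise_descent)
  qed
  also have "\<dots> = (\<integral>\<omega>. f (\<theta> t \<omega>) \<partial>M) - (\<eta> * S / 2) * (\<integral>\<omega>. (norm (Pj t \<omega> *v uu t \<omega>))\<^sup>2 \<partial>M)
     + \<eta> * L\<^sup>2 * (\<integral>\<omega>. DR t \<omega> \<partial>M) + L * \<eta>\<^sup>2 * (\<integral>\<omega>. (norm (Zz t \<omega>))\<^sup>2 \<partial>M)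
     - \<eta> * (1 - x) * (\<integral>\<omega>. (Pj t \<omega> *v uu t \<omega>) \<bullet> Zz t \<omega> \<partial>M)"
    using i1 i2 i3 i4 i5 by (simp add: Bochner_Integration.integral_add Bochner_Integration.integral_diff)
  also have "\<dots> = (\<integral>\<omega>. f (\<theta> t \<omega>) \<partial>M) - (\<eta> * S / 2) * (\<delta> * U2 t)
     + \<eta> * L\<^sup>2 * (\<integral>\<omega>. DR t \<omega> \<partial>M) + L * \<eta>\<^sup>2 * (\<integral>\<omega>. (norm (Zz t \<omega>))\<^sup>2 \<partial>M)"
    unfolding Pu_sq PuZ_zero U2_def by simp
  also have "\<dots> \<le> (\<integral>\<omega>. f (\<theta> t \<omega>) \<partial>M) - (\<eta> * S / 2) * (\<delta> * U2 t)
     + \<eta> * L\<^sup>2 * (S * (2 * \<beta> * real \<tau> * (2 * \<sigma>L\<^sup>2 + 4 * (U2 t + \<sigma>G\<^sup>2)))) + L * \<eta>\<^sup>2 * (\<sigma>L\<^sup>2 * S\<^sup>2 / real N)"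
  proof -
    have "(\<integral>\<omega>. DR t \<omega> \<partial>M) \<le> S * (2 * \<beta> * real \<tau> * (2 * \<sigma>L\<^sup>2 + 4 * HH t))" by (rule DR_exp)
    also have "\<dots> \<le> S * (2 * \<beta> * real \<tau> * (2 * \<sigma>L\<^sup>2 + 4 * (U2 t + \<sigma>G\<^sup>2)))"
      using HH_bound[of t] S_pos beta_nonneg unfolding U2_def
      by (intro mult_left_mono add_left_mono) auto
    finally have 1: "\<eta> * L\<^sup>2 * (\<integral>\<omega>. DR t \<omega> \<partial>M) \<le> \<eta> * L\<^sup>2 * (S * (2 * \<beta> * real \<tau> * (2 * \<sigma>L\<^sup>2 + 4 * (U2 t + \<sigma>G\<^sup>2))))"
      using eta_pos by (intro mult_left_mono) auto
    have 2: "L * \<eta>\<^sup>2 * (\<integral>\<omega>. (norm (Zz t \<omega>))\<^sup>2 \<partial>M) \<le> L * \<eta>\<^sup>2 * (\<sigma>L\<^sup>2 * S\<^sup>2 / real N)"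
      using Zz_sq[of t] L_pos by (intro mult_left_mono) (auto simp: mult.commute)
    show ?thesis using 1 2 by linarith
  qed
  also have "\<dots> = (\<integral>\<omega>. f (\<theta> t \<omega>) \<partial>M) - (\<eta> * S * \<delta> / 2) * U2 t + 8 * (\<eta> * S) * kap * U2 t + Cst"
    unfolding Cst_def kap_def by (simp add: algebra_simps)
  also have "\<dots> \<le> (\<integral>\<omega>. f (\<theta> t \<omega>) \<partial>M) - (\<eta> * S * \<delta> / 3) * U2 t + Cst"
  proof -
    have "8 * (\<eta> * S) * kap * U2 t \<le> 8 * (\<eta> * S) * (\<delta> / 48) * U2 t"
      using kap_le eta_pos S_pos U2_nonneg by (intro mult_right_mono mult_left_mono) auto
    then show ?thesis by (simp add: field_simps)
  qed
  finally show ?thesis .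
qed

lemma telescope:
  "(\<integral>\<omega>. f (\<theta> T \<omega>) \<partial>M) \<le> f th0 - (\<eta> * S * \<delta> / 3) * (\<Sum>t<T. U2 t) + real T * Cst"
proof (induction T)
  case 0
  then show ?case by (simp add: \<theta>_0 prob_space)
next
  case (Suc T)
  then show ?case using round_ineq[of T] by (simp add: algebra_simps)
qed

lemma main_real:
  assumes T: "T \<ge> 1"
  shows "(1 / real T) * (\<Sum>t<T. U2 t)
     \<le> 4 * (f th0 - fstar) / (\<delta> * \<eta> * S * real T)
       + 4 * \<eta> * S * L * \<sigma>L\<^sup>2 / (\<delta> * real N)
       + 48 * \<eta>\<^sup>2 * real \<tau> ^ 4 * L\<^sup>2 / (\<delta>\<^sup>2 * (1 - \<mu>) * (1 - \<mu>\<^sup>2) * S) * (\<sigma>L\<^sup>2 + \<sigma>G\<^sup>2)"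
proof -
  define c where "c = \<eta> * S * \<delta> / 3"
  have c0: "0 < c" unfolding c_def using eta_pos S_pos delta_pos by simp
  have T0: "0 < real T" using T by simp
  have lowT: "fstar \<le> (\<integral>\<omega>. f (\<theta> T \<omega>) \<partial>M)"
  proof -
    have "(\<integral>\<omega>. fstar \<partial>M) \<le> (\<integral>\<omega>. f (\<theta> T \<omega>) \<partial>M)"
      using f_lower f_int[OF sqi_\<theta>] by (intro integral_mono) auto
    then show ?thesis by (simp add: prob_space)
  qed
  have f0: "fstar \<le> f th0" using f_lower by auto
  have "c * (\<Sum>t<T. U2 t) \<le> f th0 - fstar + real T * Cst"
    using telescope[of T] lowT unfolding c_def by linarith
  then have h: "(\<Sum>t<T. U2 t) \<le> (f th0 - fstar + real T * Cst) / c"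
    using c0 by (simp add: pos_le_divide_eq mult.commute)
  have A: "(1 / real T) * (\<Sum>t<T. U2 t) \<le> (f th0 - fstar) / (c * real T) + Cst / c"
  proof -
    have "(1 / real T) * (\<Sum>t<T. U2 t) \<le> (1 / real T) * ((f th0 - fstar + real T * Cst) / c)"
      using h T0 by (intro mult_left_mono) auto
    also have "\<dots> = (f th0 - fstar) / (c * real T) + Cst / c"
      using T0 c0 by (simp add: field_simps)
    finally show ?thesis .
  qed
  have B1: "(f th0 - fstar) / (c * real T) \<le> 4 * (f th0 - fstar) / (\<delta> * \<eta> * S * real T)"
    unfolding c_def using f0 eta_pos S_pos delta_pos T0 by (simp add: field_simps)
  have Cc: "Cst / c = 6 * kap * (2 * \<sigma>L\<^sup>2 + 4 * \<sigma>G\<^sup>2) / \<delta> + 3 * L * \<eta> * S * \<sigma>L\<^sup>2 / (\<delta> * real N)"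
    unfolding Cst_def c_def using eta_pos S_pos delta_pos N_pos by (simp add: field_simps power2_eq_square)
  have B2: "3 * L * \<eta> * S * \<sigma>L\<^sup>2 / (\<delta> * real N) \<le> 4 * \<eta> * S * L * \<sigma>L\<^sup>2 / (\<delta> * real N)"
    using eta_pos S_pos delta_pos N_pos L_pos by (intro divide_right_mono) (auto simp: field_simps)
  have B3: "6 * kap * (2 * \<sigma>L\<^sup>2 + 4 * \<sigma>G\<^sup>2) / \<delta>
      \<le> 48 * \<eta>\<^sup>2 * real \<tau> ^ 4 * L\<^sup>2 / (\<delta>\<^sup>2 * (1 - \<mu>) * (1 - \<mu>\<^sup>2) * S) * (\<sigma>L\<^sup>2 + \<sigma>G\<^sup>2)"
  proof -
    define X where "X = \<sigma>L\<^sup>2 + \<sigma>G\<^sup>2"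
    have X0: "0 \<le> X" unfolding X_def by simp
    have m1: "0 < 1 - \<mu>" using mu by simp
    have a: "6 * kap * (2 * \<sigma>L\<^sup>2 + 4 * \<sigma>G\<^sup>2) / \<delta> \<le> 24 * kap * X / \<delta>"
      unfolding X_def using kap_nonneg delta_pos by (intro divide_right_mono) (auto simp: algebra_simps intro!: mult_left_mono)
    have fac: "1 \<le> 2 * real \<tau> / (\<delta> * ((1 - \<mu>) * S))"
    proof -
      have "\<delta> * ((1 - \<mu>) * S) \<le> 1 * real \<tau>"
        using delta_le1 S_le delta_pos m1 S_pos by (intro mult_mono) auto
      then have "\<delta> * ((1 - \<mu>) * S) \<le> 2 * real \<tau>" by simp
      moreover have "0 < \<delta> * ((1 - \<mu>) * S)" using delta_pos m1 S_pos by simp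
      ultimately show ?thesis by simp
    qed
    have "24 * kap * X / \<delta> \<le> 24 * kap * X / \<delta> * (2 * real \<tau> / (\<delta> * ((1 - \<mu>) * S)))"
    proof -
      have nn: "0 \<le> 24 * kap * X / \<delta>" using kap_nonneg X0 delta_pos by simp
      show ?thesis using mult_left_mono[OF fac nn] by simp
    qed
    also have "\<dots> = 48 * \<eta>\<^sup>2 * real \<tau> ^ 4 * L\<^sup>2 / (\<delta>\<^sup>2 * (1 - \<mu>) * (1 - \<mu>\<^sup>2) * S) * X"
      unfolding kap_eq using m1 one_minus_mu2 delta_pos S_pos by (simp add: field_simps power2_eq_square power3_eq_cube power4_eq_xxxx)
    finally show ?thesis using a unfolding X_def by linarith
  qed
  show ?thesis using A B1 B2 B3 Cc by linarith
qed

lemma main_ennreal: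
  assumes T: "T \<ge> 1"
  shows "ennreal (1 / real T) * (\<Sum>t<T. \<integral>\<^sup>+ \<omega>. ennreal ((norm (gradf (\<theta> t \<omega>)))\<^sup>2) \<partial>M)
       \<le> ennreal (4 * (f th0 - fstar) / (\<delta> * \<eta> * S * real T)
                 + 4 * \<eta> * S * L * \<sigma>L\<^sup>2 / (\<delta> * real N)
                 + 48 * \<eta>\<^sup>2 * real \<tau> ^ 4 * L\<^sup>2 / (\<delta>\<^sup>2 * (1 - \<mu>) * (1 - \<mu>\<^sup>2) * S)
                   * (\<sigma>L\<^sup>2 + \<sigma>G\<^sup>2))"
proof -
  have e: "(\<integral>\<^sup>+ \<omega>. ennreal ((norm (gradf (\<theta> t \<omega>)))\<^sup>2) \<partial>M) = ennreal (U2 t)" for t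
    unfolding U2_def uu_def by (rule nn_integral_eq_integral) (use sqi_norm_sq[OF sqi_uu[of t]] in \<open>auto simp: uu_def\<close>)
  have "ennreal (1 / real T) * (\<Sum>t<T. \<integral>\<^sup>+ \<omega>. ennreal ((norm (gradf (\<theta> t \<omega>)))\<^sup>2) \<partial>M)
      = ennreal (1 / real T) * ennreal (\<Sum>t<T. U2 t)"
    unfolding e using U2_nonneg by (simp add: sum_ennreal)
  also have "\<dots> = ennreal ((1 / real T) * (\<Sum>t<T. U2 t))"
    by (rule ennreal_mult''[symmetric]) (use U2_nonneg in \<open>auto intro: sum_nonneg\<close>)
  also have "\<dots> \<le> ennreal (4 * (f th0 - fstar) / (\<delta> * \<eta> * S * real T)
                 + 4 * \<eta> * S * L * \<sigma>L\<^sup>2 / (\<delta> * real N)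
                 + 48 * \<eta>\<^sup>2 * real \<tau> ^ 4 * L\<^sup>2 / (\<delta>\<^sup>2 * (1 - \<mu>) * (1 - \<mu>\<^sup>2) * S)
                   * (\<sigma>L\<^sup>2 + \<sigma>G\<^sup>2))"
    by (rule ennreal_leI[OF main_real[OF T]])
  finally show ?thesis .
qed

end


theorem theorem1:
  fixes M :: "'w measure"
    and P :: "nat \<Rightarrow> 'w \<Rightarrow> real^'r^'d"
    and g :: "nat \<Rightarrow> nat \<Rightarrow> nat \<Rightarrow> 'w \<Rightarrow> real^'d"
    and F :: "nat \<Rightarrow> real^'d \<Rightarrow> real"
    and gradF :: "nat \<Rightarrow> real^'d \<Rightarrow> real^'d"
    and th0 :: "real^'d"
    and \<mu> \<eta> L \<sigma>L \<sigma>G fstar :: real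
    and N \<tau> :: nat
  defines "f \<equiv> \<lambda>x. (1 / real N) * (\<Sum>i<N. F i x)"
    and "gradf \<equiv> \<lambda>x. (1 / real N) *\<^sub>R (\<Sum>i<N. gradF i x)"
    and "\<delta> \<equiv> real CARD('r) / real CARD('d)"
    and "S \<equiv> S_tau \<mu> \<tau>"
    and "\<theta> \<equiv> \<lambda>t \<omega>. server_iter \<mu> \<eta> N \<tau> th0 (\<lambda>t. P t \<omega>) (\<lambda>t i s. g t i s \<omega>) t"
    and "\<theta>loc \<equiv> \<lambda>t i s \<omega>. client_iter \<mu> \<eta> N \<tau> th0 (\<lambda>t. P t \<omega>) (\<lambda>t i s. g t i s \<omega>) t i s"
    and "Fpast \<equiv> \<lambda>t s. past_alg M N \<tau> P g t s"
  assumes N_pos: "N \<ge> 1" and tau_pos: "\<tau> \<ge> 1"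
    and r_le_d: "CARD('r) \<le> CARD('d)"
    and mu: "0 \<le> \<mu>" "\<mu> < 1" and eta_pos: "\<eta> > 0" and L_pos: "L > 0"
    \<comment> \<open>Assumption A1\<close>
    and F_diff: "\<forall>i<N. \<forall>x. (F i has_derivative (\<lambda>h. gradF i x \<bullet> h)) (at x)"
    and f_lower: "\<forall>x. fstar \<le> f x"
    and f_smooth: "\<forall>x y. norm (gradf x - gradf y) \<le> L * norm (x - y)"
    and F_smooth: "\<forall>i<N. \<forall>x y. norm (gradF i x - gradF i y) \<le> L * norm (x - y)"
    \<comment> \<open>Assumption A2: bounded heterogeneity\<close>
    and hetero: "\<forall>i<N. \<forall>x. (norm (gradF i x - gradf x))\<^sup>2 \<le> \<sigma>G\<^sup>2"
    \<comment> \<open>probability space carrying all randomness of the algorithm\<close>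
    and prob: "prob_space M"
    and P_meas: "\<forall>t. P t \<in> borel_measurable M"
    and g_meas: "\<forall>t i s. g t i s \<in> borel_measurable M"
    \<comment> \<open>P_t is Haar on St(d,r) and independent of all earlier randomness\<close>
    and P_haar: "\<forall>t. haar_stiefel (distr M borel (P t))"
    and P_indep: "\<forall>t. \<forall>A \<in> sets (pre_round_alg M N \<tau> P g t). \<forall>B \<in> sets borel.
         measure M (A \<inter> (P t -` B \<inter> space M)) = measure M A * measure M (P t -` B \<inter> space M)"
    \<comment> \<open>Assumption A2: conditionally unbiased stochastic gradients\<close>
    and g_unbiased: "\<forall>t. \<forall>i<N. \<forall>s<\<tau>. (\<forall>j. integrable M (\<lambda>\<omega>. g t i s \<omega> $ j)) \<and>
         (AE \<omega> in M. \<forall>j. real_cond_exp M (Fpast t s) (\<lambda>\<omega>. g t i s \<omega> $ j) \<omega> = gradF i (\<theta>loc t i s \<omega>) $ j)"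
    \<comment> \<open>Assumption A2: conditional variance bound\<close>
    and g_var: "\<forall>t. \<forall>i<N. \<forall>s<\<tau>. AE \<omega> in M.
         nn_cond_exp M (Fpast t s) (\<lambda>\<omega>. ennreal ((norm (g t i s \<omega> - gradF i (\<theta>loc t i s \<omega>)))\<^sup>2)) \<omega>
           \<le> ennreal (\<sigma>L\<^sup>2)"
    \<comment> \<open>Assumption A2: conditional independence across clients\<close>
    and g_cindep: "\<forall>t. \<forall>s<\<tau>. cond_indep_vars M (Fpast t s) (\<lambda>i. g t i s) {..<N}"
    \<comment> \<open>stepsize condition\<close>
    and eta_le: "\<eta> \<le> min (sqrt ((1 - \<mu>\<^sup>2) / (6 * L\<^sup>2 * real \<tau> ^ 3)))
                   (min (1 / (L * S))
                        (sqrt (\<delta> * (1 - \<mu>) * (1 - \<mu>\<^sup>2) * S / (48 * L\<^sup>2 * real \<tau> ^ 4))))"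
  shows "\<forall>T::nat. T \<ge> 1 \<longrightarrow>
     ennreal (1 / real T) * (\<Sum>t<T. \<integral>\<^sup>+ \<omega>. ennreal ((norm (gradf (\<theta> t \<omega>)))\<^sup>2) \<partial>M)
       \<le> ennreal (4 * (f th0 - fstar) / (\<delta> * \<eta> * S * real T)
                 + 4 * \<eta> * S * L * \<sigma>L\<^sup>2 / (\<delta> * real N)
                 + 48 * \<eta>\<^sup>2 * real \<tau> ^ 4 * L\<^sup>2 / (\<delta>\<^sup>2 * (1 - \<mu>) * (1 - \<mu>\<^sup>2) * S)
                   * (\<sigma>L\<^sup>2 + \<sigma>G\<^sup>2))"
  proof -
  interpret fed M P g F gradF th0 \<mu> \<eta> L \<sigma>L \<sigma>G fstar N \<tau> f gradf \<delta> S \<theta> \<theta>loc Fpast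
    by (rule fed.intro) (rule assms | simp only: f_def gradf_def \<delta>_def S_def \<theta>_def \<theta>loc_def Fpast_def)+
  show ?thesis using main_ennreal by blast
qed

end
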